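(* Every 10-dimensional filiform Lie algebra over $\mathbb{K}$ admits a basis $\{X_0,\dots,X_9\}$ in which the bracket is given by the family $F_{10}$ below, for some parameters $a_1,a_2,a_4,a_5,a_7,a_8,\dots,a_{15}\in\mathbb{K}$ satisfying $a_1(2a_2+7a_4+7a_7)=0$, $3a_4^2+3a_4a_7-2a_2a_7=0$, and $a_1(2a_9+5a_{11})-2a_2a_{10}+a_4(7a_8-2a_{10})+a_7(-3a_5+2a_8-7a_{10})=0$.
   Context: $\mathbb{K}$ is algebraically closed of characteristic $0$; filiform means nilpotent of nilindex $\dim-1$. The family $F_{10}$: $\mu(X_0,X_i)=X_{i+1}$ ($1\le i\le 8$), $\mu(X_2,X_7)=a_1X_9$, $\mu(X_1,X_7)=a_1X_8+a_2X_9$, $\mu(X_3,X_6)=-a_1X_9$, $\mu(X_2,X_6)=a_4X_9$, $\mu(X_1,X_6)=a_1X_7+(a_2+a_4)X_8+a_5X_9$, $\mu(X_4,X_5)=a_1X_9$, $\mu(X_3,X_5)=a_7X_9$, $\mu(X_2,X_5)=(a_4+a_7)X_8+a_8X_9$, $\mu(X_1,X_5)=a_1X_6+(a_2+2a_4+a_7)X_7+(a_5+a_8)X_8+a_9X_9$, $\mu(X_3,X_4)=a_7X_8+a_{10}X_9$, $\mu(X_2,X_4)=(a_4+2a_7)X_7+(a_8+a_{10})X_8+a_{11}X_9$, $\mu(X_1,X_4)=a_1X_5+(a_2+3a_4+3a_7)X_6+(a_5+2a_8+a_{10})X_7+(a_9+a_{11})X_8+a_{12}X_9$, $\mu(X_2,X_3)=(a_4+2a_7)X_6+(a_8+a_{10})X_7+a_{11}X_8+a_{13}X_9$,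 $\mu(X_1,X_3)=a_1X_4+(a_2+4a_4+5a_7)X_5+(a_5+3a_8+2a_{10})X_6+(a_9+2a_{11})X_7+(a_{12}+a_{13})X_8+a_{14}X_9$, $\mu(X_1,X_2)=a_1X_3+(a_2+4a_4+5a_7)X_4+(a_5+3a_8+2a_{10})X_5+(a_9+2a_{11})X_6+(a_{12}+a_{13})X_7+a_{14}X_8+a_{15}X_9$, all other brackets $\mu(X_i,X_j)$ ($i<j$) zero. *)

theory Defs
  imports Main "HOL-Computational_Algebra.Polynomial"
begin

definition alg_closed :: "'k::field itself \<Rightarrow> bool" where
  "alg_closed _ \<longleftrightarrow> (\<forall>p :: 'k poly. degree p > 0 \<longrightarrow> (\<exists>x. poly p x = 0))"

definition lie_algebra :: "('k::field \<Rightarrow> 'v::ab_group_add \<Rightarrow> 'v) \<Rightarrow> ('v \<Rightarrow> 'v \<Rightarrow> 'v) \<Rightarrow> bool" where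
  "lie_algebra scale br \<longleftrightarrow>
     vector_space scale \<and>
     (\<forall>x y z. br (x + y) z = br x z + br y z) \<and>
     (\<forall>x y z. br x (y + z) = br x y + br x z) \<and>
     (\<forall>c x y. br (scale c x) y = scale c (br x y)) \<and>
     (\<forall>c x y. br x (scale c y) = scale c (br x y)) \<and>
     (\<forall>x. br x x = 0) \<and>
     (\<forall>x y z. br x (br y z) + br y (br z x) + br z (br x y) = 0)"

text \<open>Lower central series: lcs 0 = C^1 = g, lcs (k+1) = C^(k+2) = [g, C^(k+1)].\<close>
fun lcs :: "('k::field \<Rightarrow> 'v::ab_group_add \<Rightarrow> 'v) \<Rightarrow> ('v \<Rightarrow> 'v \<Rightarrow> 'v) \<Rightarrow> nat \<Rightarrow> 'v set" where
  "lcs scale br 0 = UNIV"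
| "lcs scale br (Suc k) = module.span scale {br x y | x y. y \<in> lcs scale br k}"

text \<open>Nilpotent of nilindex p (p \<ge> 1): C^(p+1) = 0 but C^p \<noteq> 0.\<close>
definition nilpotent_nilindex :: "('k::field \<Rightarrow> 'v::ab_group_add \<Rightarrow> 'v) \<Rightarrow> ('v \<Rightarrow> 'v \<Rightarrow> 'v) \<Rightarrow> nat \<Rightarrow> bool" where
  "nilpotent_nilindex scale br p \<longleftrightarrow>
     1 \<le> p \<and> lcs scale br p = {0} \<and> lcs scale br (p - 1) \<noteq> {0}"

definition filiform :: "('k::field \<Rightarrow> 'v::ab_group_add \<Rightarrow> 'v) \<Rightarrow> ('v \<Rightarrow> 'v \<Rightarrow> 'v) \<Rightarrow> bool" where
  "filiform scale br \<longleftrightarrow>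
     lie_algebra scale br \<and> nilpotent_nilindex scale br (vector_space.dim scale (UNIV :: 'v set) - 1)"

text \<open>Coefficient list (w.r.t. X_0..X_9) placed at the top indices.\<close>
definition top10 :: "'k::zero list \<Rightarrow> 'k list" where
  "top10 cs = replicate (10 - length cs) 0 @ cs"

text \<open>The family F_10: coefficients of mu(X_i, X_j) (for i < j) in the basis X_0..X_9.
  The parameter function a is only used at indices 1,2,4,5,7,...,15.\<close>
definition F10 :: "(nat \<Rightarrow> 'k::field) \<Rightarrow> nat \<Rightarrow> nat \<Rightarrow> 'k list" where
  "F10 a i j =
    (if i = 0 \<and> 1 \<le> j \<and> j \<le> 8 then map (\<lambda>k. if k = Suc j then 1 else 0) [0..<10]
     else if (i, j) = (2, 7) then top10 [a 1]
     else if (i, j) = (1, 7) then top10 [a 1, a 2]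
     else if (i, j) = (3, 6) then top10 [- a 1]
     else if (i, j) = (2, 6) then top10 [a 4]
     else if (i, j) = (1, 6) then top10 [a 1, a 2 + a 4, a 5]
     else if (i, j) = (4, 5) then top10 [a 1]
     else if (i, j) = (3, 5) then top10 [a 7]
     else if (i, j) = (2, 5) then top10 [a 4 + a 7, a 8]
     else if (i, j) = (1, 5) then top10 [a 1, a 2 + 2 * a 4 + a 7, a 5 + a 8, a 9]
     else if (i, j) = (3, 4) then top10 [a 7, a 10]
     else if (i, j) = (2, 4) then top10 [a 4 + 2 * a 7, a 8 + a 10, a 11]
     else if (i, j) = (1, 4) then top10 [a 1, a 2 + 3 * a 4 + 3 * a 7, a 5 + 2 * a 8 + a 10,
                                         a 9 + a 11, a 12]
     else if (i, j) = (2, 3) then top10 [a 4 + 2 * a 7, a 8 + a 10, a 11, a 13]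
     else if (i, j) = (1, 3) then top10 [a 1, a 2 + 4 * a 4 + 5 * a 7, a 5 + 3 * a 8 + 2 * a 10,
                                         a 9 + 2 * a 11, a 12 + a 13, a 14]
     else if (i, j) = (1, 2) then top10 [a 1, a 2 + 4 * a 4 + 5 * a 7, a 5 + 3 * a 8 + 2 * a 10,
                                         a 9 + 2 * a 11, a 12 + a 13, a 14, a 15]
     else replicate 10 0)"

end

theory Submission
  imports Defs
begin
lemma sum10: "(\<Sum>m<(10::nat). f m) = f 0 + f 1 + f 2 + f 3 + f 4 + f 5 + f 6 + f 7 + f 8 + f 9"
  by (simp add: eval_nat_numeral)
lemma map10: "map f [0..<10] = [f 0, f 1, f 2, f 3, f 4, f 5, f 6, f 7, f 8, f 9]"
  by (simp add: eval_nat_numeral)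
lemma F10_0_1: "F10 a 0 1 = [0, 0, 1, 0, 0, 0, 0, 0, 0, 0]"
  by (simp add: F10_def top10_def eval_nat_numeral)
lemma F10_0_2: "F10 a 0 2 = [0, 0, 0, 1, 0, 0, 0, 0, 0, 0]"
  by (simp add: F10_def top10_def eval_nat_numeral)
lemma F10_0_3: "F10 a 0 3 = [0, 0, 0, 0, 1, 0, 0, 0, 0, 0]"
  by (simp add: F10_def top10_def eval_nat_numeral)
lemma F10_0_4: "F10 a 0 4 = [0, 0, 0, 0, 0, 1, 0, 0, 0, 0]"
  by (simp add: F10_def top10_def eval_nat_numeral)
lemma F10_0_5: "F10 a 0 5 = [0, 0, 0, 0, 0, 0, 1, 0, 0, 0]"
  by (simp add: F10_def top10_def eval_nat_numeral)
lemma F10_0_6: "F10 a 0 6 = [0, 0, 0, 0, 0, 0, 0, 1, 0, 0]"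
  by (simp add: F10_def top10_def eval_nat_numeral)
lemma F10_0_7: "F10 a 0 7 = [0, 0, 0, 0, 0, 0, 0, 0, 1, 0]"
  by (simp add: F10_def top10_def eval_nat_numeral)
lemma F10_0_8: "F10 a 0 8 = [0, 0, 0, 0, 0, 0, 0, 0, 0, 1]"
  by (simp add: F10_def top10_def eval_nat_numeral)
lemma F10_0_9: "F10 a 0 9 = [0, 0, 0, 0, 0, 0, 0, 0, 0, 0]"
  by (simp add: F10_def top10_def eval_nat_numeral)
lemma F10_1_2: "F10 a 1 2 = [0, 0, 0, a 1, a 2 + 4 * a 4 + 5 * a 7, a 5 + 3 * a 8 + 2 * a 10, a 9 + 2 * a 11, a 12 + a 13, a 14, a 15]"
  by (simp add: F10_def top10_def eval_nat_numeral)
lemma F10_1_3: "F10 a 1 3 = [0, 0, 0, 0, a 1, a 2 + 4 * a 4 + 5 * a 7, a 5 + 3 * a 8 + 2 * a 10, a 9 + 2 * a 11, a 12 + a 13, a 14]"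
  by (simp add: F10_def top10_def eval_nat_numeral)
lemma F10_1_4: "F10 a 1 4 = [0, 0, 0, 0, 0, a 1, a 2 + 3 * a 4 + 3 * a 7, a 5 + 2 * a 8 + a 10, a 9 + a 11, a 12]"
  by (simp add: F10_def top10_def eval_nat_numeral)
lemma F10_1_5: "F10 a 1 5 = [0, 0, 0, 0, 0, 0, a 1, a 2 + 2 * a 4 + a 7, a 5 + a 8, a 9]"
  by (simp add: F10_def top10_def eval_nat_numeral)
lemma F10_1_6: "F10 a 1 6 = [0, 0, 0, 0, 0, 0, 0, a 1, a 2 + a 4, a 5]"
  by (simp add: F10_def top10_def eval_nat_numeral)
lemma F10_1_7: "F10 a 1 7 = [0, 0, 0, 0, 0, 0, 0, 0, a 1, a 2]"
  by (simp add: F10_def top10_def eval_nat_numeral)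
lemma F10_1_8: "F10 a 1 8 = [0, 0, 0, 0, 0, 0, 0, 0, 0, 0]"
  by (simp add: F10_def top10_def eval_nat_numeral)
lemma F10_1_9: "F10 a 1 9 = [0, 0, 0, 0, 0, 0, 0, 0, 0, 0]"
  by (simp add: F10_def top10_def eval_nat_numeral)
lemma F10_2_3: "F10 a 2 3 = [0, 0, 0, 0, 0, 0, a 4 + 2 * a 7, a 8 + a 10, a 11, a 13]"
  by (simp add: F10_def top10_def eval_nat_numeral)
lemma F10_2_4: "F10 a 2 4 = [0, 0, 0, 0, 0, 0, 0, a 4 + 2 * a 7, a 8 + a 10, a 11]"
  by (simp add: F10_def top10_def eval_nat_numeral)
lemma F10_2_5: "F10 a 2 5 = [0, 0, 0, 0, 0, 0, 0, 0, a 4 + a 7, a 8]"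
  by (simp add: F10_def top10_def eval_nat_numeral)
lemma F10_2_6: "F10 a 2 6 = [0, 0, 0, 0, 0, 0, 0, 0, 0, a 4]"
  by (simp add: F10_def top10_def eval_nat_numeral)
lemma F10_2_7: "F10 a 2 7 = [0, 0, 0, 0, 0, 0, 0, 0, 0, a 1]"
  by (simp add: F10_def top10_def eval_nat_numeral)
lemma F10_2_8: "F10 a 2 8 = [0, 0, 0, 0, 0, 0, 0, 0, 0, 0]"
  by (simp add: F10_def top10_def eval_nat_numeral)
lemma F10_2_9: "F10 a 2 9 = [0, 0, 0, 0, 0, 0, 0, 0, 0, 0]"
  by (simp add: F10_def top10_def eval_nat_numeral)
lemma F10_3_4: "F10 a 3 4 = [0, 0, 0, 0, 0, 0, 0, 0, a 7, a 10]"
  by (simp add: F10_def top10_def eval_nat_numeral)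
lemma F10_3_5: "F10 a 3 5 = [0, 0, 0, 0, 0, 0, 0, 0, 0, a 7]"
  by (simp add: F10_def top10_def eval_nat_numeral)
lemma F10_3_6: "F10 a 3 6 = [0, 0, 0, 0, 0, 0, 0, 0, 0, - a 1]"
  by (simp add: F10_def top10_def eval_nat_numeral)
lemma F10_3_7: "F10 a 3 7 = [0, 0, 0, 0, 0, 0, 0, 0, 0, 0]"
  by (simp add: F10_def top10_def eval_nat_numeral)
lemma F10_3_8: "F10 a 3 8 = [0, 0, 0, 0, 0, 0, 0, 0, 0, 0]"
  by (simp add: F10_def top10_def eval_nat_numeral)
lemma F10_3_9: "F10 a 3 9 = [0, 0, 0, 0, 0, 0, 0, 0, 0, 0]"
  by (simp add: F10_def top10_def eval_nat_numeral)
lemma F10_4_5: "F10 a 4 5 = [0, 0, 0, 0, 0, 0, 0, 0, 0, a 1]"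
  by (simp add: F10_def top10_def eval_nat_numeral)
lemma F10_4_6: "F10 a 4 6 = [0, 0, 0, 0, 0, 0, 0, 0, 0, 0]"
  by (simp add: F10_def top10_def eval_nat_numeral)
lemma F10_4_7: "F10 a 4 7 = [0, 0, 0, 0, 0, 0, 0, 0, 0, 0]"
  by (simp add: F10_def top10_def eval_nat_numeral)
lemma F10_4_8: "F10 a 4 8 = [0, 0, 0, 0, 0, 0, 0, 0, 0, 0]"
  by (simp add: F10_def top10_def eval_nat_numeral)
lemma F10_4_9: "F10 a 4 9 = [0, 0, 0, 0, 0, 0, 0, 0, 0, 0]"
  by (simp add: F10_def top10_def eval_nat_numeral)
lemma F10_5_6: "F10 a 5 6 = [0, 0, 0, 0, 0, 0, 0, 0, 0, 0]"
  by (simp add: F10_def top10_def eval_nat_numeral)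
lemma F10_5_7: "F10 a 5 7 = [0, 0, 0, 0, 0, 0, 0, 0, 0, 0]"
  by (simp add: F10_def top10_def eval_nat_numeral)
lemma F10_5_8: "F10 a 5 8 = [0, 0, 0, 0, 0, 0, 0, 0, 0, 0]"
  by (simp add: F10_def top10_def eval_nat_numeral)
lemma F10_5_9: "F10 a 5 9 = [0, 0, 0, 0, 0, 0, 0, 0, 0, 0]"
  by (simp add: F10_def top10_def eval_nat_numeral)
lemma F10_6_7: "F10 a 6 7 = [0, 0, 0, 0, 0, 0, 0, 0, 0, 0]"
  by (simp add: F10_def top10_def eval_nat_numeral)
lemma F10_6_8: "F10 a 6 8 = [0, 0, 0, 0, 0, 0, 0, 0, 0, 0]"
  by (simp add: F10_def top10_def eval_nat_numeral)
lemma F10_6_9: "F10 a 6 9 = [0, 0, 0, 0, 0, 0, 0, 0, 0, 0]"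
  by (simp add: F10_def top10_def eval_nat_numeral)
lemma F10_7_8: "F10 a 7 8 = [0, 0, 0, 0, 0, 0, 0, 0, 0, 0]"
  by (simp add: F10_def top10_def eval_nat_numeral)
lemma F10_7_9: "F10 a 7 9 = [0, 0, 0, 0, 0, 0, 0, 0, 0, 0]"
  by (simp add: F10_def top10_def eval_nat_numeral)
lemma F10_8_9: "F10 a 8 9 = [0, 0, 0, 0, 0, 0, 0, 0, 0, 0]"
  by (simp add: F10_def top10_def eval_nat_numeral)

lemma scalar_part:
  fixes c :: "nat \<Rightarrow> nat \<Rightarrow> nat \<Rightarrow> 'k::field_char_0"
  assumes C0: "\<And>j k. j < 10 \<Longrightarrow> k < 10 \<Longrightarrow> c 0 j k = (if 1 \<le> j \<and> j \<le> 8 \<and> k = Suc j then 1 else 0)"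
    and CA: "\<And>i j k. c j i k = - c i j k"
    and Z: "\<And>i k. c i i k = 0"
    and R: "\<And>i j k. 1 \<le> i \<Longrightarrow> i \<le> 8 \<Longrightarrow> 1 \<le> j \<Longrightarrow> j \<le> 9 \<Longrightarrow> k < 10 \<Longrightarrow>
              c (i + 1) j k = (if 2 \<le> k then c i j (k - 1) else 0) - (if j \<le> 8 then c i (j + 1) k else 0)"
    and F: "\<And>j k. 2 \<le> j \<Longrightarrow> j \<le> 9 \<Longrightarrow> k \<le> j \<Longrightarrow> c 1 j k = 0"
    and B89: "c 1 8 9 = 0"
    and J: "\<And>t i j l. t < 10 \<Longrightarrow> (\<Sum>m<10. c j l m * c i m t) + (\<Sum>m<10. c l i m * c j m t) + (\<Sum>m<10. c i j m * c l m t) = 0"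
  shows "\<exists>a :: nat \<Rightarrow> 'k. (\<forall>i j. i < j \<and> j < 10 \<longrightarrow> F10 a i j = map (c i j) [0..<10]) \<and>
           a 1 * (2 * a 2 + 7 * a 4 + 7 * a 7) = 0 \<and>
           3 * a 4 ^ 2 + 3 * a 4 * a 7 - 2 * a 2 * a 7 = 0 \<and>
           a 1 * (2 * a 9 + 5 * a 11) - 2 * a 2 * a 10 + a 4 * (7 * a 8 - 2 * a 10)
             + a 7 * (- 3 * a 5 + 2 * a 8 - 7 * a 10) = 0"
proof -
  have c0_1_0: "c 0 1 0 = 0" using C0[of 1 0] by simp
  have c0_1_1: "c 0 1 1 = 0" using C0[of 1 1] by simp
  have c0_1_2: "c 0 1 2 = 1" using C0[of 1 2] by simp
  have c0_1_3: "c 0 1 3 = 0" using C0[of 1 3] by simp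
  have c0_1_4: "c 0 1 4 = 0" using C0[of 1 4] by simp
  have c0_1_5: "c 0 1 5 = 0" using C0[of 1 5] by simp
  have c0_1_6: "c 0 1 6 = 0" using C0[of 1 6] by simp
  have c0_1_7: "c 0 1 7 = 0" using C0[of 1 7] by simp
  have c0_1_8: "c 0 1 8 = 0" using C0[of 1 8] by simp
  have c0_1_9: "c 0 1 9 = 0" using C0[of 1 9] by simp
  have c0_2_0: "c 0 2 0 = 0" using C0[of 2 0] by simp
  have c0_2_1: "c 0 2 1 = 0" using C0[of 2 1] by simp
  have c0_2_2: "c 0 2 2 = 0" using C0[of 2 2] by simp
  have c0_2_3: "c 0 2 3 = 1" using C0[of 2 3] by simp
  have c0_2_4: "c 0 2 4 = 0" using C0[of 2 4] by simp
  have c0_2_5: "c 0 2 5 = 0" using C0[of 2 5] by simp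
  have c0_2_6: "c 0 2 6 = 0" using C0[of 2 6] by simp
  have c0_2_7: "c 0 2 7 = 0" using C0[of 2 7] by simp
  have c0_2_8: "c 0 2 8 = 0" using C0[of 2 8] by simp
  have c0_2_9: "c 0 2 9 = 0" using C0[of 2 9] by simp
  have c0_3_0: "c 0 3 0 = 0" using C0[of 3 0] by simp
  have c0_3_1: "c 0 3 1 = 0" using C0[of 3 1] by simp
  have c0_3_2: "c 0 3 2 = 0" using C0[of 3 2] by simp
  have c0_3_3: "c 0 3 3 = 0" using C0[of 3 3] by simp
  have c0_3_4: "c 0 3 4 = 1" using C0[of 3 4] by simp
  have c0_3_5: "c 0 3 5 = 0" using C0[of 3 5] by simp
  have c0_3_6: "c 0 3 6 = 0" using C0[of 3 6] by simp
  have c0_3_7: "c 0 3 7 = 0" using C0[of 3 7] by simp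
  have c0_3_8: "c 0 3 8 = 0" using C0[of 3 8] by simp
  have c0_3_9: "c 0 3 9 = 0" using C0[of 3 9] by simp
  have c0_4_0: "c 0 4 0 = 0" using C0[of 4 0] by simp
  have c0_4_1: "c 0 4 1 = 0" using C0[of 4 1] by simp
  have c0_4_2: "c 0 4 2 = 0" using C0[of 4 2] by simp
  have c0_4_3: "c 0 4 3 = 0" using C0[of 4 3] by simp
  have c0_4_4: "c 0 4 4 = 0" using C0[of 4 4] by simp
  have c0_4_5: "c 0 4 5 = 1" using C0[of 4 5] by simp
  have c0_4_6: "c 0 4 6 = 0" using C0[of 4 6] by simp
  have c0_4_7: "c 0 4 7 = 0" using C0[of 4 7] by simp
  have c0_4_8: "c 0 4 8 = 0" using C0[of 4 8] by simp
  have c0_4_9: "c 0 4 9 = 0" using C0[of 4 9] by simp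
  have c0_5_0: "c 0 5 0 = 0" using C0[of 5 0] by simp
  have c0_5_1: "c 0 5 1 = 0" using C0[of 5 1] by simp
  have c0_5_2: "c 0 5 2 = 0" using C0[of 5 2] by simp
  have c0_5_3: "c 0 5 3 = 0" using C0[of 5 3] by simp
  have c0_5_4: "c 0 5 4 = 0" using C0[of 5 4] by simp
  have c0_5_5: "c 0 5 5 = 0" using C0[of 5 5] by simp
  have c0_5_6: "c 0 5 6 = 1" using C0[of 5 6] by simp
  have c0_5_7: "c 0 5 7 = 0" using C0[of 5 7] by simp
  have c0_5_8: "c 0 5 8 = 0" using C0[of 5 8] by simp
  have c0_5_9: "c 0 5 9 = 0" using C0[of 5 9] by simp
  have c0_6_0: "c 0 6 0 = 0" using C0[of 6 0] by simp
  have c0_6_1: "c 0 6 1 = 0" using C0[of 6 1] by simp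
  have c0_6_2: "c 0 6 2 = 0" using C0[of 6 2] by simp
  have c0_6_3: "c 0 6 3 = 0" using C0[of 6 3] by simp
  have c0_6_4: "c 0 6 4 = 0" using C0[of 6 4] by simp
  have c0_6_5: "c 0 6 5 = 0" using C0[of 6 5] by simp
  have c0_6_6: "c 0 6 6 = 0" using C0[of 6 6] by simp
  have c0_6_7: "c 0 6 7 = 1" using C0[of 6 7] by simp
  have c0_6_8: "c 0 6 8 = 0" using C0[of 6 8] by simp
  have c0_6_9: "c 0 6 9 = 0" using C0[of 6 9] by simp
  have c0_7_0: "c 0 7 0 = 0" using C0[of 7 0] by simp
  have c0_7_1: "c 0 7 1 = 0" using C0[of 7 1] by simp
  have c0_7_2: "c 0 7 2 = 0" using C0[of 7 2] by simp
  have c0_7_3: "c 0 7 3 = 0" using C0[of 7 3] by simp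
  have c0_7_4: "c 0 7 4 = 0" using C0[of 7 4] by simp
  have c0_7_5: "c 0 7 5 = 0" using C0[of 7 5] by simp
  have c0_7_6: "c 0 7 6 = 0" using C0[of 7 6] by simp
  have c0_7_7: "c 0 7 7 = 0" using C0[of 7 7] by simp
  have c0_7_8: "c 0 7 8 = 1" using C0[of 7 8] by simp
  have c0_7_9: "c 0 7 9 = 0" using C0[of 7 9] by simp
  have c0_8_0: "c 0 8 0 = 0" using C0[of 8 0] by simp
  have c0_8_1: "c 0 8 1 = 0" using C0[of 8 1] by simp
  have c0_8_2: "c 0 8 2 = 0" using C0[of 8 2] by simp
  have c0_8_3: "c 0 8 3 = 0" using C0[of 8 3] by simp
  have c0_8_4: "c 0 8 4 = 0" using C0[of 8 4] by simp
  have c0_8_5: "c 0 8 5 = 0" using C0[of 8 5] by simp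
  have c0_8_6: "c 0 8 6 = 0" using C0[of 8 6] by simp
  have c0_8_7: "c 0 8 7 = 0" using C0[of 8 7] by simp
  have c0_8_8: "c 0 8 8 = 0" using C0[of 8 8] by simp
  have c0_8_9: "c 0 8 9 = 1" using C0[of 8 9] by simp
  have c0_9_0: "c 0 9 0 = 0" using C0[of 9 0] by simp
  have c0_9_1: "c 0 9 1 = 0" using C0[of 9 1] by simp
  have c0_9_2: "c 0 9 2 = 0" using C0[of 9 2] by simp
  have c0_9_3: "c 0 9 3 = 0" using C0[of 9 3] by simp
  have c0_9_4: "c 0 9 4 = 0" using C0[of 9 4] by simp
  have c0_9_5: "c 0 9 5 = 0" using C0[of 9 5] by simp
  have c0_9_6: "c 0 9 6 = 0" using C0[of 9 6] by simp
  have c0_9_7: "c 0 9 7 = 0" using C0[of 9 7] by simp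
  have c0_9_8: "c 0 9 8 = 0" using C0[of 9 8] by simp
  have c0_9_9: "c 0 9 9 = 0" using C0[of 9 9] by simp
  have z_2_0: "c 1 2 0 = 0" using F[of 2 0] by simp
  have z_2_1: "c 1 2 1 = 0" using F[of 2 1] by simp
  have z_2_2: "c 1 2 2 = 0" using F[of 2 2] by simp
  have z_3_0: "c 1 3 0 = 0" using F[of 3 0] by simp
  have z_3_1: "c 1 3 1 = 0" using F[of 3 1] by simp
  have z_3_2: "c 1 3 2 = 0" using F[of 3 2] by simp
  have z_3_3: "c 1 3 3 = 0" using F[of 3 3] by simp
  have z_4_0: "c 1 4 0 = 0" using F[of 4 0] by simp
  have z_4_1: "c 1 4 1 = 0" using F[of 4 1] by simp
  have z_4_2: "c 1 4 2 = 0" using F[of 4 2] by simp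
  have z_4_3: "c 1 4 3 = 0" using F[of 4 3] by simp
  have z_4_4: "c 1 4 4 = 0" using F[of 4 4] by simp
  have z_5_0: "c 1 5 0 = 0" using F[of 5 0] by simp
  have z_5_1: "c 1 5 1 = 0" using F[of 5 1] by simp
  have z_5_2: "c 1 5 2 = 0" using F[of 5 2] by simp
  have z_5_3: "c 1 5 3 = 0" using F[of 5 3] by simp
  have z_5_4: "c 1 5 4 = 0" using F[of 5 4] by simp
  have z_5_5: "c 1 5 5 = 0" using F[of 5 5] by simp
  have z_6_0: "c 1 6 0 = 0" using F[of 6 0] by simp
  have z_6_1: "c 1 6 1 = 0" using F[of 6 1] by simp
  have z_6_2: "c 1 6 2 = 0" using F[of 6 2] by simp
  have z_6_3: "c 1 6 3 = 0" using F[of 6 3] by simp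
  have z_6_4: "c 1 6 4 = 0" using F[of 6 4] by simp
  have z_6_5: "c 1 6 5 = 0" using F[of 6 5] by simp
  have z_6_6: "c 1 6 6 = 0" using F[of 6 6] by simp
  have z_7_0: "c 1 7 0 = 0" using F[of 7 0] by simp
  have z_7_1: "c 1 7 1 = 0" using F[of 7 1] by simp
  have z_7_2: "c 1 7 2 = 0" using F[of 7 2] by simp
  have z_7_3: "c 1 7 3 = 0" using F[of 7 3] by simp
  have z_7_4: "c 1 7 4 = 0" using F[of 7 4] by simp
  have z_7_5: "c 1 7 5 = 0" using F[of 7 5] by simp
  have z_7_6: "c 1 7 6 = 0" using F[of 7 6] by simp
  have z_7_7: "c 1 7 7 = 0" using F[of 7 7] by simp
  have z_8_0: "c 1 8 0 = 0" using F[of 8 0] by simp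
  have z_8_1: "c 1 8 1 = 0" using F[of 8 1] by simp
  have z_8_2: "c 1 8 2 = 0" using F[of 8 2] by simp
  have z_8_3: "c 1 8 3 = 0" using F[of 8 3] by simp
  have z_8_4: "c 1 8 4 = 0" using F[of 8 4] by simp
  have z_8_5: "c 1 8 5 = 0" using F[of 8 5] by simp
  have z_8_6: "c 1 8 6 = 0" using F[of 8 6] by simp
  have z_8_7: "c 1 8 7 = 0" using F[of 8 7] by simp
  have z_8_8: "c 1 8 8 = 0" using F[of 8 8] by simp
  have z_8_9: "c 1 8 9 = 0" by (rule B89)
  have z_9_0: "c 1 9 0 = 0" using F[of 9 0] by simp
  have z_9_1: "c 1 9 1 = 0" using F[of 9 1] by simp
  have z_9_2: "c 1 9 2 = 0" using F[of 9 2] by simp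
  have z_9_3: "c 1 9 3 = 0" using F[of 9 3] by simp
  have z_9_4: "c 1 9 4 = 0" using F[of 9 4] by simp
  have z_9_5: "c 1 9 5 = 0" using F[of 9 5] by simp
  have z_9_6: "c 1 9 6 = 0" using F[of 9 6] by simp
  have z_9_7: "c 1 9 7 = 0" using F[of 9 7] by simp
  have z_9_8: "c 1 9 8 = 0" using F[of 9 8] by simp
  have z_9_9: "c 1 9 9 = 0" using F[of 9 9] by simp
  have r_2_3_0: "c 2 3 0 = 0"
  proof -
    have h: "c 2 3 0 = 0 - c 1 4 0" using R[of 1 3 0] by (simp add: eval_nat_numeral)
    show ?thesis unfolding h unfolding z_4_0 by (simp add: algebra_simps)
  qed
  have r_2_3_1: "c 2 3 1 = 0"
  proof -
    have h: "c 2 3 1 = 0 - c 1 4 1" using R[of 1 3 1] by (simp add: eval_nat_numeral)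
    show ?thesis unfolding h unfolding z_4_1 by (simp add: algebra_simps)
  qed
  have r_2_3_2: "c 2 3 2 = 0"
  proof -
    have h: "c 2 3 2 = c 1 3 1 - c 1 4 2" using R[of 1 3 2] by (simp add: eval_nat_numeral)
    show ?thesis unfolding h unfolding z_3_1 z_4_2 by (simp add: algebra_simps)
  qed
  have r_2_3_3: "c 2 3 3 = 0"
  proof -
    have h: "c 2 3 3 = c 1 3 2 - c 1 4 3" using R[of 1 3 3] by (simp add: eval_nat_numeral)
    show ?thesis unfolding h unfolding z_3_2 z_4_3 by (simp add: algebra_simps)
  qed
  have r_2_3_4: "c 2 3 4 = 0"
  proof -
    have h: "c 2 3 4 = c 1 3 3 - c 1 4 4" using R[of 1 3 4] by (simp add: eval_nat_numeral)
    show ?thesis unfolding h unfolding z_3_3 z_4_4 by (simp add: algebra_simps)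
  qed
  have r_2_3_5: "c 2 3 5 = c 1 3 4 - c 1 4 5"
  proof -
    have h: "c 2 3 5 = c 1 3 4 - c 1 4 5" using R[of 1 3 5] by (simp add: eval_nat_numeral)
    show ?thesis unfolding h by (simp add: algebra_simps)
  qed
  have r_2_3_6: "c 2 3 6 = c 1 3 5 - c 1 4 6"
  proof -
    have h: "c 2 3 6 = c 1 3 5 - c 1 4 6" using R[of 1 3 6] by (simp add: eval_nat_numeral)
    show ?thesis unfolding h by (simp add: algebra_simps)
  qed
  have r_2_3_7: "c 2 3 7 = c 1 3 6 - c 1 4 7"
  proof -
    have h: "c 2 3 7 = c 1 3 6 - c 1 4 7" using R[of 1 3 7] by (simp add: eval_nat_numeral)
    show ?thesis unfolding h by (simp add: algebra_simps)
  qed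
  have r_2_3_8: "c 2 3 8 = c 1 3 7 - c 1 4 8"
  proof -
    have h: "c 2 3 8 = c 1 3 7 - c 1 4 8" using R[of 1 3 8] by (simp add: eval_nat_numeral)
    show ?thesis unfolding h by (simp add: algebra_simps)
  qed
  have r_2_3_9: "c 2 3 9 = c 1 3 8 - c 1 4 9"
  proof -
    have h: "c 2 3 9 = c 1 3 8 - c 1 4 9" using R[of 1 3 9] by (simp add: eval_nat_numeral)
    show ?thesis unfolding h by (simp add: algebra_simps)
  qed
  have r_2_4_0: "c 2 4 0 = 0"
  proof -
    have h: "c 2 4 0 = 0 - c 1 5 0" using R[of 1 4 0] by (simp add: eval_nat_numeral)
    show ?thesis unfolding h unfolding z_5_0 by (simp add: algebra_simps)
  qed
  have r_2_4_1: "c 2 4 1 = 0"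
  proof -
    have h: "c 2 4 1 = 0 - c 1 5 1" using R[of 1 4 1] by (simp add: eval_nat_numeral)
    show ?thesis unfolding h unfolding z_5_1 by (simp add: algebra_simps)
  qed
  have r_2_4_2: "c 2 4 2 = 0"
  proof -
    have h: "c 2 4 2 = c 1 4 1 - c 1 5 2" using R[of 1 4 2] by (simp add: eval_nat_numeral)
    show ?thesis unfolding h unfolding z_4_1 z_5_2 by (simp add: algebra_simps)
  qed
  have r_2_4_3: "c 2 4 3 = 0"
  proof -
    have h: "c 2 4 3 = c 1 4 2 - c 1 5 3" using R[of 1 4 3] by (simp add: eval_nat_numeral)
    show ?thesis unfolding h unfolding z_4_2 z_5_3 by (simp add: algebra_simps)
  qed
  have r_2_4_4: "c 2 4 4 = 0"
  proof -
    have h: "c 2 4 4 = c 1 4 3 - c 1 5 4" using R[of 1 4 4] by (simp add: eval_nat_numeral)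
    show ?thesis unfolding h unfolding z_4_3 z_5_4 by (simp add: algebra_simps)
  qed
  have r_2_4_5: "c 2 4 5 = 0"
  proof -
    have h: "c 2 4 5 = c 1 4 4 - c 1 5 5" using R[of 1 4 5] by (simp add: eval_nat_numeral)
    show ?thesis unfolding h unfolding z_4_4 z_5_5 by (simp add: algebra_simps)
  qed
  have r_2_4_6: "c 2 4 6 = c 1 4 5 - c 1 5 6"
  proof -
    have h: "c 2 4 6 = c 1 4 5 - c 1 5 6" using R[of 1 4 6] by (simp add: eval_nat_numeral)
    show ?thesis unfolding h by (simp add: algebra_simps)
  qed
  have r_2_4_7: "c 2 4 7 = c 1 4 6 - c 1 5 7"
  proof -
    have h: "c 2 4 7 = c 1 4 6 - c 1 5 7" using R[of 1 4 7] by (simp add: eval_nat_numeral)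
    show ?thesis unfolding h by (simp add: algebra_simps)
  qed
  have r_2_4_8: "c 2 4 8 = c 1 4 7 - c 1 5 8"
  proof -
    have h: "c 2 4 8 = c 1 4 7 - c 1 5 8" using R[of 1 4 8] by (simp add: eval_nat_numeral)
    show ?thesis unfolding h by (simp add: algebra_simps)
  qed
  have r_2_4_9: "c 2 4 9 = c 1 4 8 - c 1 5 9"
  proof -
    have h: "c 2 4 9 = c 1 4 8 - c 1 5 9" using R[of 1 4 9] by (simp add: eval_nat_numeral)
    show ?thesis unfolding h by (simp add: algebra_simps)
  qed
  have r_2_5_0: "c 2 5 0 = 0"
  proof -
    have h: "c 2 5 0 = 0 - c 1 6 0" using R[of 1 5 0] by (simp add: eval_nat_numeral)
    show ?thesis unfolding h unfolding z_6_0 by (simp add: algebra_simps)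
  qed
  have r_2_5_1: "c 2 5 1 = 0"
  proof -
    have h: "c 2 5 1 = 0 - c 1 6 1" using R[of 1 5 1] by (simp add: eval_nat_numeral)
    show ?thesis unfolding h unfolding z_6_1 by (simp add: algebra_simps)
  qed
  have r_2_5_2: "c 2 5 2 = 0"
  proof -
    have h: "c 2 5 2 = c 1 5 1 - c 1 6 2" using R[of 1 5 2] by (simp add: eval_nat_numeral)
    show ?thesis unfolding h unfolding z_5_1 z_6_2 by (simp add: algebra_simps)
  qed
  have r_2_5_3: "c 2 5 3 = 0"
  proof -
    have h: "c 2 5 3 = c 1 5 2 - c 1 6 3" using R[of 1 5 3] by (simp add: eval_nat_numeral)
    show ?thesis unfolding h unfolding z_5_2 z_6_3 by (simp add: algebra_simps)
  qed
  have r_2_5_4: "c 2 5 4 = 0"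
  proof -
    have h: "c 2 5 4 = c 1 5 3 - c 1 6 4" using R[of 1 5 4] by (simp add: eval_nat_numeral)
    show ?thesis unfolding h unfolding z_5_3 z_6_4 by (simp add: algebra_simps)
  qed
  have r_2_5_5: "c 2 5 5 = 0"
  proof -
    have h: "c 2 5 5 = c 1 5 4 - c 1 6 5" using R[of 1 5 5] by (simp add: eval_nat_numeral)
    show ?thesis unfolding h unfolding z_5_4 z_6_5 by (simp add: algebra_simps)
  qed
  have r_2_5_6: "c 2 5 6 = 0"
  proof -
    have h: "c 2 5 6 = c 1 5 5 - c 1 6 6" using R[of 1 5 6] by (simp add: eval_nat_numeral)
    show ?thesis unfolding h unfolding z_5_5 z_6_6 by (simp add: algebra_simps)
  qed
  have r_2_5_7: "c 2 5 7 = c 1 5 6 - c 1 6 7"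
  proof -
    have h: "c 2 5 7 = c 1 5 6 - c 1 6 7" using R[of 1 5 7] by (simp add: eval_nat_numeral)
    show ?thesis unfolding h by (simp add: algebra_simps)
  qed
  have r_2_5_8: "c 2 5 8 = c 1 5 7 - c 1 6 8"
  proof -
    have h: "c 2 5 8 = c 1 5 7 - c 1 6 8" using R[of 1 5 8] by (simp add: eval_nat_numeral)
    show ?thesis unfolding h by (simp add: algebra_simps)
  qed
  have r_2_5_9: "c 2 5 9 = c 1 5 8 - c 1 6 9"
  proof -
    have h: "c 2 5 9 = c 1 5 8 - c 1 6 9" using R[of 1 5 9] by (simp add: eval_nat_numeral)
    show ?thesis unfolding h by (simp add: algebra_simps)
  qed
  have r_2_6_0: "c 2 6 0 = 0"
  proof -
    have h: "c 2 6 0 = 0 - c 1 7 0" using R[of 1 6 0] by (simp add: eval_nat_numeral)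
    show ?thesis unfolding h unfolding z_7_0 by (simp add: algebra_simps)
  qed
  have r_2_6_1: "c 2 6 1 = 0"
  proof -
    have h: "c 2 6 1 = 0 - c 1 7 1" using R[of 1 6 1] by (simp add: eval_nat_numeral)
    show ?thesis unfolding h unfolding z_7_1 by (simp add: algebra_simps)
  qed
  have r_2_6_2: "c 2 6 2 = 0"
  proof -
    have h: "c 2 6 2 = c 1 6 1 - c 1 7 2" using R[of 1 6 2] by (simp add: eval_nat_numeral)
    show ?thesis unfolding h unfolding z_6_1 z_7_2 by (simp add: algebra_simps)
  qed
  have r_2_6_3: "c 2 6 3 = 0"
  proof -
    have h: "c 2 6 3 = c 1 6 2 - c 1 7 3" using R[of 1 6 3] by (simp add: eval_nat_numeral)
    show ?thesis unfolding h unfolding z_6_2 z_7_3 by (simp add: algebra_simps)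
  qed
  have r_2_6_4: "c 2 6 4 = 0"
  proof -
    have h: "c 2 6 4 = c 1 6 3 - c 1 7 4" using R[of 1 6 4] by (simp add: eval_nat_numeral)
    show ?thesis unfolding h unfolding z_6_3 z_7_4 by (simp add: algebra_simps)
  qed
  have r_2_6_5: "c 2 6 5 = 0"
  proof -
    have h: "c 2 6 5 = c 1 6 4 - c 1 7 5" using R[of 1 6 5] by (simp add: eval_nat_numeral)
    show ?thesis unfolding h unfolding z_6_4 z_7_5 by (simp add: algebra_simps)
  qed
  have r_2_6_6: "c 2 6 6 = 0"
  proof -
    have h: "c 2 6 6 = c 1 6 5 - c 1 7 6" using R[of 1 6 6] by (simp add: eval_nat_numeral)
    show ?thesis unfolding h unfolding z_6_5 z_7_6 by (simp add: algebra_simps)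
  qed
  have r_2_6_7: "c 2 6 7 = 0"
  proof -
    have h: "c 2 6 7 = c 1 6 6 - c 1 7 7" using R[of 1 6 7] by (simp add: eval_nat_numeral)
    show ?thesis unfolding h unfolding z_6_6 z_7_7 by (simp add: algebra_simps)
  qed
  have r_2_6_8: "c 2 6 8 = c 1 6 7 - c 1 7 8"
  proof -
    have h: "c 2 6 8 = c 1 6 7 - c 1 7 8" using R[of 1 6 8] by (simp add: eval_nat_numeral)
    show ?thesis unfolding h by (simp add: algebra_simps)
  qed
  have r_2_6_9: "c 2 6 9 = c 1 6 8 - c 1 7 9"
  proof -
    have h: "c 2 6 9 = c 1 6 8 - c 1 7 9" using R[of 1 6 9] by (simp add: eval_nat_numeral)
    show ?thesis unfolding h by (simp add: algebra_simps)
  qed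
  have r_2_7_0: "c 2 7 0 = 0"
  proof -
    have h: "c 2 7 0 = 0 - c 1 8 0" using R[of 1 7 0] by (simp add: eval_nat_numeral)
    show ?thesis unfolding h unfolding z_8_0 by (simp add: algebra_simps)
  qed
  have r_2_7_1: "c 2 7 1 = 0"
  proof -
    have h: "c 2 7 1 = 0 - c 1 8 1" using R[of 1 7 1] by (simp add: eval_nat_numeral)
    show ?thesis unfolding h unfolding z_8_1 by (simp add: algebra_simps)
  qed
  have r_2_7_2: "c 2 7 2 = 0"
  proof -
    have h: "c 2 7 2 = c 1 7 1 - c 1 8 2" using R[of 1 7 2] by (simp add: eval_nat_numeral)
    show ?thesis unfolding h unfolding z_7_1 z_8_2 by (simp add: algebra_simps)
  qed
  have r_2_7_3: "c 2 7 3 = 0"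
  proof -
    have h: "c 2 7 3 = c 1 7 2 - c 1 8 3" using R[of 1 7 3] by (simp add: eval_nat_numeral)
    show ?thesis unfolding h unfolding z_7_2 z_8_3 by (simp add: algebra_simps)
  qed
  have r_2_7_4: "c 2 7 4 = 0"
  proof -
    have h: "c 2 7 4 = c 1 7 3 - c 1 8 4" using R[of 1 7 4] by (simp add: eval_nat_numeral)
    show ?thesis unfolding h unfolding z_7_3 z_8_4 by (simp add: algebra_simps)
  qed
  have r_2_7_5: "c 2 7 5 = 0"
  proof -
    have h: "c 2 7 5 = c 1 7 4 - c 1 8 5" using R[of 1 7 5] by (simp add: eval_nat_numeral)
    show ?thesis unfolding h unfolding z_7_4 z_8_5 by (simp add: algebra_simps)
  qed
  have r_2_7_6: "c 2 7 6 = 0"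
  proof -
    have h: "c 2 7 6 = c 1 7 5 - c 1 8 6" using R[of 1 7 6] by (simp add: eval_nat_numeral)
    show ?thesis unfolding h unfolding z_7_5 z_8_6 by (simp add: algebra_simps)
  qed
  have r_2_7_7: "c 2 7 7 = 0"
  proof -
    have h: "c 2 7 7 = c 1 7 6 - c 1 8 7" using R[of 1 7 7] by (simp add: eval_nat_numeral)
    show ?thesis unfolding h unfolding z_7_6 z_8_7 by (simp add: algebra_simps)
  qed
  have r_2_7_8: "c 2 7 8 = 0"
  proof -
    have h: "c 2 7 8 = c 1 7 7 - c 1 8 8" using R[of 1 7 8] by (simp add: eval_nat_numeral)
    show ?thesis unfolding h unfolding z_7_7 z_8_8 by (simp add: algebra_simps)
  qed
  have r_2_7_9: "c 2 7 9 = c 1 7 8"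
  proof -
    have h: "c 2 7 9 = c 1 7 8 - c 1 8 9" using R[of 1 7 9] by (simp add: eval_nat_numeral)
    show ?thesis unfolding h unfolding z_8_9 by (simp add: algebra_simps)
  qed
  have r_2_8_0: "c 2 8 0 = 0"
  proof -
    have h: "c 2 8 0 = 0 - c 1 9 0" using R[of 1 8 0] by (simp add: eval_nat_numeral)
    show ?thesis unfolding h unfolding z_9_0 by (simp add: algebra_simps)
  qed
  have r_2_8_1: "c 2 8 1 = 0"
  proof -
    have h: "c 2 8 1 = 0 - c 1 9 1" using R[of 1 8 1] by (simp add: eval_nat_numeral)
    show ?thesis unfolding h unfolding z_9_1 by (simp add: algebra_simps)
  qed
  have r_2_8_2: "c 2 8 2 = 0"
  proof -
    have h: "c 2 8 2 = c 1 8 1 - c 1 9 2" using R[of 1 8 2] by (simp add: eval_nat_numeral)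
    show ?thesis unfolding h unfolding z_8_1 z_9_2 by (simp add: algebra_simps)
  qed
  have r_2_8_3: "c 2 8 3 = 0"
  proof -
    have h: "c 2 8 3 = c 1 8 2 - c 1 9 3" using R[of 1 8 3] by (simp add: eval_nat_numeral)
    show ?thesis unfolding h unfolding z_8_2 z_9_3 by (simp add: algebra_simps)
  qed
  have r_2_8_4: "c 2 8 4 = 0"
  proof -
    have h: "c 2 8 4 = c 1 8 3 - c 1 9 4" using R[of 1 8 4] by (simp add: eval_nat_numeral)
    show ?thesis unfolding h unfolding z_8_3 z_9_4 by (simp add: algebra_simps)
  qed
  have r_2_8_5: "c 2 8 5 = 0"
  proof -
    have h: "c 2 8 5 = c 1 8 4 - c 1 9 5" using R[of 1 8 5] by (simp add: eval_nat_numeral)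
    show ?thesis unfolding h unfolding z_8_4 z_9_5 by (simp add: algebra_simps)
  qed
  have r_2_8_6: "c 2 8 6 = 0"
  proof -
    have h: "c 2 8 6 = c 1 8 5 - c 1 9 6" using R[of 1 8 6] by (simp add: eval_nat_numeral)
    show ?thesis unfolding h unfolding z_8_5 z_9_6 by (simp add: algebra_simps)
  qed
  have r_2_8_7: "c 2 8 7 = 0"
  proof -
    have h: "c 2 8 7 = c 1 8 6 - c 1 9 7" using R[of 1 8 7] by (simp add: eval_nat_numeral)
    show ?thesis unfolding h unfolding z_8_6 z_9_7 by (simp add: algebra_simps)
  qed
  have r_2_8_8: "c 2 8 8 = 0"
  proof -
    have h: "c 2 8 8 = c 1 8 7 - c 1 9 8" using R[of 1 8 8] by (simp add: eval_nat_numeral)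
    show ?thesis unfolding h unfolding z_8_7 z_9_8 by (simp add: algebra_simps)
  qed
  have r_2_8_9: "c 2 8 9 = 0"
  proof -
    have h: "c 2 8 9 = c 1 8 8 - c 1 9 9" using R[of 1 8 9] by (simp add: eval_nat_numeral)
    show ?thesis unfolding h unfolding z_8_8 z_9_9 by (simp add: algebra_simps)
  qed
  have r_2_9_0: "c 2 9 0 = 0"
  proof -
    have h: "c 2 9 0 = 0 - 0" using R[of 1 9 0] by (simp add: eval_nat_numeral)
    show ?thesis unfolding h by (simp add: algebra_simps)
  qed
  have r_2_9_1: "c 2 9 1 = 0"
  proof -
    have h: "c 2 9 1 = 0 - 0" using R[of 1 9 1] by (simp add: eval_nat_numeral)
    show ?thesis unfolding h by (simp add: algebra_simps)
  qed
  have r_2_9_2: "c 2 9 2 = 0"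
  proof -
    have h: "c 2 9 2 = c 1 9 1 - 0" using R[of 1 9 2] by (simp add: eval_nat_numeral)
    show ?thesis unfolding h unfolding z_9_1 by (simp add: algebra_simps)
  qed
  have r_2_9_3: "c 2 9 3 = 0"
  proof -
    have h: "c 2 9 3 = c 1 9 2 - 0" using R[of 1 9 3] by (simp add: eval_nat_numeral)
    show ?thesis unfolding h unfolding z_9_2 by (simp add: algebra_simps)
  qed
  have r_2_9_4: "c 2 9 4 = 0"
  proof -
    have h: "c 2 9 4 = c 1 9 3 - 0" using R[of 1 9 4] by (simp add: eval_nat_numeral)
    show ?thesis unfolding h unfolding z_9_3 by (simp add: algebra_simps)
  qed
  have r_2_9_5: "c 2 9 5 = 0"
  proof -
    have h: "c 2 9 5 = c 1 9 4 - 0" using R[of 1 9 5] by (simp add: eval_nat_numeral)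
    show ?thesis unfolding h unfolding z_9_4 by (simp add: algebra_simps)
  qed
  have r_2_9_6: "c 2 9 6 = 0"
  proof -
    have h: "c 2 9 6 = c 1 9 5 - 0" using R[of 1 9 6] by (simp add: eval_nat_numeral)
    show ?thesis unfolding h unfolding z_9_5 by (simp add: algebra_simps)
  qed
  have r_2_9_7: "c 2 9 7 = 0"
  proof -
    have h: "c 2 9 7 = c 1 9 6 - 0" using R[of 1 9 7] by (simp add: eval_nat_numeral)
    show ?thesis unfolding h unfolding z_9_6 by (simp add: algebra_simps)
  qed
  have r_2_9_8: "c 2 9 8 = 0"
  proof -
    have h: "c 2 9 8 = c 1 9 7 - 0" using R[of 1 9 8] by (simp add: eval_nat_numeral)
    show ?thesis unfolding h unfolding z_9_7 by (simp add: algebra_simps)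
  qed
  have r_2_9_9: "c 2 9 9 = 0"
  proof -
    have h: "c 2 9 9 = c 1 9 8 - 0" using R[of 1 9 9] by (simp add: eval_nat_numeral)
    show ?thesis unfolding h unfolding z_9_8 by (simp add: algebra_simps)
  qed
  have r_3_4_0: "c 3 4 0 = 0"
  proof -
    have h: "c 3 4 0 = 0 - c 2 5 0" using R[of 2 4 0] by (simp add: eval_nat_numeral)
    show ?thesis unfolding h unfolding r_2_5_0 by (simp add: algebra_simps)
  qed
  have r_3_4_1: "c 3 4 1 = 0"
  proof -
    have h: "c 3 4 1 = 0 - c 2 5 1" using R[of 2 4 1] by (simp add: eval_nat_numeral)
    show ?thesis unfolding h unfolding r_2_5_1 by (simp add: algebra_simps)
  qed
  have r_3_4_2: "c 3 4 2 = 0"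
  proof -
    have h: "c 3 4 2 = c 2 4 1 - c 2 5 2" using R[of 2 4 2] by (simp add: eval_nat_numeral)
    show ?thesis unfolding h unfolding r_2_4_1 r_2_5_2 by (simp add: algebra_simps)
  qed
  have r_3_4_3: "c 3 4 3 = 0"
  proof -
    have h: "c 3 4 3 = c 2 4 2 - c 2 5 3" using R[of 2 4 3] by (simp add: eval_nat_numeral)
    show ?thesis unfolding h unfolding r_2_4_2 r_2_5_3 by (simp add: algebra_simps)
  qed
  have r_3_4_4: "c 3 4 4 = 0"
  proof -
    have h: "c 3 4 4 = c 2 4 3 - c 2 5 4" using R[of 2 4 4] by (simp add: eval_nat_numeral)
    show ?thesis unfolding h unfolding r_2_4_3 r_2_5_4 by (simp add: algebra_simps)
  qed
  have r_3_4_5: "c 3 4 5 = 0"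
  proof -
    have h: "c 3 4 5 = c 2 4 4 - c 2 5 5" using R[of 2 4 5] by (simp add: eval_nat_numeral)
    show ?thesis unfolding h unfolding r_2_4_4 r_2_5_5 by (simp add: algebra_simps)
  qed
  have r_3_4_6: "c 3 4 6 = 0"
  proof -
    have h: "c 3 4 6 = c 2 4 5 - c 2 5 6" using R[of 2 4 6] by (simp add: eval_nat_numeral)
    show ?thesis unfolding h unfolding r_2_4_5 r_2_5_6 by (simp add: algebra_simps)
  qed
  have r_3_4_7: "c 3 4 7 = c 1 4 5 - 2 * c 1 5 6 + c 1 6 7"
  proof -
    have h: "c 3 4 7 = c 2 4 6 - c 2 5 7" using R[of 2 4 7] by (simp add: eval_nat_numeral)
    show ?thesis unfolding h unfolding r_2_4_6 r_2_5_7 by (simp add: algebra_simps)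
  qed
  have r_3_4_8: "c 3 4 8 = c 1 4 6 - 2 * c 1 5 7 + c 1 6 8"
  proof -
    have h: "c 3 4 8 = c 2 4 7 - c 2 5 8" using R[of 2 4 8] by (simp add: eval_nat_numeral)
    show ?thesis unfolding h unfolding r_2_4_7 r_2_5_8 by (simp add: algebra_simps)
  qed
  have r_3_4_9: "c 3 4 9 = c 1 4 7 - 2 * c 1 5 8 + c 1 6 9"
  proof -
    have h: "c 3 4 9 = c 2 4 8 - c 2 5 9" using R[of 2 4 9] by (simp add: eval_nat_numeral)
    show ?thesis unfolding h unfolding r_2_4_8 r_2_5_9 by (simp add: algebra_simps)
  qed
  have r_3_5_0: "c 3 5 0 = 0"
  proof -
    have h: "c 3 5 0 = 0 - c 2 6 0" using R[of 2 5 0] by (simp add: eval_nat_numeral)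
    show ?thesis unfolding h unfolding r_2_6_0 by (simp add: algebra_simps)
  qed
  have r_3_5_1: "c 3 5 1 = 0"
  proof -
    have h: "c 3 5 1 = 0 - c 2 6 1" using R[of 2 5 1] by (simp add: eval_nat_numeral)
    show ?thesis unfolding h unfolding r_2_6_1 by (simp add: algebra_simps)
  qed
  have r_3_5_2: "c 3 5 2 = 0"
  proof -
    have h: "c 3 5 2 = c 2 5 1 - c 2 6 2" using R[of 2 5 2] by (simp add: eval_nat_numeral)
    show ?thesis unfolding h unfolding r_2_5_1 r_2_6_2 by (simp add: algebra_simps)
  qed
  have r_3_5_3: "c 3 5 3 = 0"
  proof -
    have h: "c 3 5 3 = c 2 5 2 - c 2 6 3" using R[of 2 5 3] by (simp add: eval_nat_numeral)
    show ?thesis unfolding h unfolding r_2_5_2 r_2_6_3 by (simp add: algebra_simps)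
  qed
  have r_3_5_4: "c 3 5 4 = 0"
  proof -
    have h: "c 3 5 4 = c 2 5 3 - c 2 6 4" using R[of 2 5 4] by (simp add: eval_nat_numeral)
    show ?thesis unfolding h unfolding r_2_5_3 r_2_6_4 by (simp add: algebra_simps)
  qed
  have r_3_5_5: "c 3 5 5 = 0"
  proof -
    have h: "c 3 5 5 = c 2 5 4 - c 2 6 5" using R[of 2 5 5] by (simp add: eval_nat_numeral)
    show ?thesis unfolding h unfolding r_2_5_4 r_2_6_5 by (simp add: algebra_simps)
  qed
  have r_3_5_6: "c 3 5 6 = 0"
  proof -
    have h: "c 3 5 6 = c 2 5 5 - c 2 6 6" using R[of 2 5 6] by (simp add: eval_nat_numeral)
    show ?thesis unfolding h unfolding r_2_5_5 r_2_6_6 by (simp add: algebra_simps)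
  qed
  have r_3_5_7: "c 3 5 7 = 0"
  proof -
    have h: "c 3 5 7 = c 2 5 6 - c 2 6 7" using R[of 2 5 7] by (simp add: eval_nat_numeral)
    show ?thesis unfolding h unfolding r_2_5_6 r_2_6_7 by (simp add: algebra_simps)
  qed
  have r_3_5_8: "c 3 5 8 = c 1 5 6 - 2 * c 1 6 7 + c 1 7 8"
  proof -
    have h: "c 3 5 8 = c 2 5 7 - c 2 6 8" using R[of 2 5 8] by (simp add: eval_nat_numeral)
    show ?thesis unfolding h unfolding r_2_5_7 r_2_6_8 by (simp add: algebra_simps)
  qed
  have r_3_5_9: "c 3 5 9 = c 1 5 7 - 2 * c 1 6 8 + c 1 7 9"
  proof -
    have h: "c 3 5 9 = c 2 5 8 - c 2 6 9" using R[of 2 5 9] by (simp add: eval_nat_numeral)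
    show ?thesis unfolding h unfolding r_2_5_8 r_2_6_9 by (simp add: algebra_simps)
  qed
  have r_3_6_0: "c 3 6 0 = 0"
  proof -
    have h: "c 3 6 0 = 0 - c 2 7 0" using R[of 2 6 0] by (simp add: eval_nat_numeral)
    show ?thesis unfolding h unfolding r_2_7_0 by (simp add: algebra_simps)
  qed
  have r_3_6_1: "c 3 6 1 = 0"
  proof -
    have h: "c 3 6 1 = 0 - c 2 7 1" using R[of 2 6 1] by (simp add: eval_nat_numeral)
    show ?thesis unfolding h unfolding r_2_7_1 by (simp add: algebra_simps)
  qed
  have r_3_6_2: "c 3 6 2 = 0"
  proof -
    have h: "c 3 6 2 = c 2 6 1 - c 2 7 2" using R[of 2 6 2] by (simp add: eval_nat_numeral)
    show ?thesis unfolding h unfolding r_2_6_1 r_2_7_2 by (simp add: algebra_simps)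
  qed
  have r_3_6_3: "c 3 6 3 = 0"
  proof -
    have h: "c 3 6 3 = c 2 6 2 - c 2 7 3" using R[of 2 6 3] by (simp add: eval_nat_numeral)
    show ?thesis unfolding h unfolding r_2_6_2 r_2_7_3 by (simp add: algebra_simps)
  qed
  have r_3_6_4: "c 3 6 4 = 0"
  proof -
    have h: "c 3 6 4 = c 2 6 3 - c 2 7 4" using R[of 2 6 4] by (simp add: eval_nat_numeral)
    show ?thesis unfolding h unfolding r_2_6_3 r_2_7_4 by (simp add: algebra_simps)
  qed
  have r_3_6_5: "c 3 6 5 = 0"
  proof -
    have h: "c 3 6 5 = c 2 6 4 - c 2 7 5" using R[of 2 6 5] by (simp add: eval_nat_numeral)
    show ?thesis unfolding h unfolding r_2_6_4 r_2_7_5 by (simp add: algebra_simps)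
  qed
  have r_3_6_6: "c 3 6 6 = 0"
  proof -
    have h: "c 3 6 6 = c 2 6 5 - c 2 7 6" using R[of 2 6 6] by (simp add: eval_nat_numeral)
    show ?thesis unfolding h unfolding r_2_6_5 r_2_7_6 by (simp add: algebra_simps)
  qed
  have r_3_6_7: "c 3 6 7 = 0"
  proof -
    have h: "c 3 6 7 = c 2 6 6 - c 2 7 7" using R[of 2 6 7] by (simp add: eval_nat_numeral)
    show ?thesis unfolding h unfolding r_2_6_6 r_2_7_7 by (simp add: algebra_simps)
  qed
  have r_3_6_8: "c 3 6 8 = 0"
  proof -
    have h: "c 3 6 8 = c 2 6 7 - c 2 7 8" using R[of 2 6 8] by (simp add: eval_nat_numeral)
    show ?thesis unfolding h unfolding r_2_6_7 r_2_7_8 by (simp add: algebra_simps)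
  qed
  have r_3_6_9: "c 3 6 9 = c 1 6 7 - 2 * c 1 7 8"
  proof -
    have h: "c 3 6 9 = c 2 6 8 - c 2 7 9" using R[of 2 6 9] by (simp add: eval_nat_numeral)
    show ?thesis unfolding h unfolding r_2_6_8 r_2_7_9 by (simp add: algebra_simps)
  qed
  have r_3_7_0: "c 3 7 0 = 0"
  proof -
    have h: "c 3 7 0 = 0 - c 2 8 0" using R[of 2 7 0] by (simp add: eval_nat_numeral)
    show ?thesis unfolding h unfolding r_2_8_0 by (simp add: algebra_simps)
  qed
  have r_3_7_1: "c 3 7 1 = 0"
  proof -
    have h: "c 3 7 1 = 0 - c 2 8 1" using R[of 2 7 1] by (simp add: eval_nat_numeral)
    show ?thesis unfolding h unfolding r_2_8_1 by (simp add: algebra_simps)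
  qed
  have r_3_7_2: "c 3 7 2 = 0"
  proof -
    have h: "c 3 7 2 = c 2 7 1 - c 2 8 2" using R[of 2 7 2] by (simp add: eval_nat_numeral)
    show ?thesis unfolding h unfolding r_2_7_1 r_2_8_2 by (simp add: algebra_simps)
  qed
  have r_3_7_3: "c 3 7 3 = 0"
  proof -
    have h: "c 3 7 3 = c 2 7 2 - c 2 8 3" using R[of 2 7 3] by (simp add: eval_nat_numeral)
    show ?thesis unfolding h unfolding r_2_7_2 r_2_8_3 by (simp add: algebra_simps)
  qed
  have r_3_7_4: "c 3 7 4 = 0"
  proof -
    have h: "c 3 7 4 = c 2 7 3 - c 2 8 4" using R[of 2 7 4] by (simp add: eval_nat_numeral)
    show ?thesis unfolding h unfolding r_2_7_3 r_2_8_4 by (simp add: algebra_simps)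
  qed
  have r_3_7_5: "c 3 7 5 = 0"
  proof -
    have h: "c 3 7 5 = c 2 7 4 - c 2 8 5" using R[of 2 7 5] by (simp add: eval_nat_numeral)
    show ?thesis unfolding h unfolding r_2_7_4 r_2_8_5 by (simp add: algebra_simps)
  qed
  have r_3_7_6: "c 3 7 6 = 0"
  proof -
    have h: "c 3 7 6 = c 2 7 5 - c 2 8 6" using R[of 2 7 6] by (simp add: eval_nat_numeral)
    show ?thesis unfolding h unfolding r_2_7_5 r_2_8_6 by (simp add: algebra_simps)
  qed
  have r_3_7_7: "c 3 7 7 = 0"
  proof -
    have h: "c 3 7 7 = c 2 7 6 - c 2 8 7" using R[of 2 7 7] by (simp add: eval_nat_numeral)
    show ?thesis unfolding h unfolding r_2_7_6 r_2_8_7 by (simp add: algebra_simps)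
  qed
  have r_3_7_8: "c 3 7 8 = 0"
  proof -
    have h: "c 3 7 8 = c 2 7 7 - c 2 8 8" using R[of 2 7 8] by (simp add: eval_nat_numeral)
    show ?thesis unfolding h unfolding r_2_7_7 r_2_8_8 by (simp add: algebra_simps)
  qed
  have r_3_7_9: "c 3 7 9 = 0"
  proof -
    have h: "c 3 7 9 = c 2 7 8 - c 2 8 9" using R[of 2 7 9] by (simp add: eval_nat_numeral)
    show ?thesis unfolding h unfolding r_2_7_8 r_2_8_9 by (simp add: algebra_simps)
  qed
  have r_3_8_0: "c 3 8 0 = 0"
  proof -
    have h: "c 3 8 0 = 0 - c 2 9 0" using R[of 2 8 0] by (simp add: eval_nat_numeral)
    show ?thesis unfolding h unfolding r_2_9_0 by (simp add: algebra_simps)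
  qed
  have r_3_8_1: "c 3 8 1 = 0"
  proof -
    have h: "c 3 8 1 = 0 - c 2 9 1" using R[of 2 8 1] by (simp add: eval_nat_numeral)
    show ?thesis unfolding h unfolding r_2_9_1 by (simp add: algebra_simps)
  qed
  have r_3_8_2: "c 3 8 2 = 0"
  proof -
    have h: "c 3 8 2 = c 2 8 1 - c 2 9 2" using R[of 2 8 2] by (simp add: eval_nat_numeral)
    show ?thesis unfolding h unfolding r_2_8_1 r_2_9_2 by (simp add: algebra_simps)
  qed
  have r_3_8_3: "c 3 8 3 = 0"
  proof -
    have h: "c 3 8 3 = c 2 8 2 - c 2 9 3" using R[of 2 8 3] by (simp add: eval_nat_numeral)
    show ?thesis unfolding h unfolding r_2_8_2 r_2_9_3 by (simp add: algebra_simps)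
  qed
  have r_3_8_4: "c 3 8 4 = 0"
  proof -
    have h: "c 3 8 4 = c 2 8 3 - c 2 9 4" using R[of 2 8 4] by (simp add: eval_nat_numeral)
    show ?thesis unfolding h unfolding r_2_8_3 r_2_9_4 by (simp add: algebra_simps)
  qed
  have r_3_8_5: "c 3 8 5 = 0"
  proof -
    have h: "c 3 8 5 = c 2 8 4 - c 2 9 5" using R[of 2 8 5] by (simp add: eval_nat_numeral)
    show ?thesis unfolding h unfolding r_2_8_4 r_2_9_5 by (simp add: algebra_simps)
  qed
  have r_3_8_6: "c 3 8 6 = 0"
  proof -
    have h: "c 3 8 6 = c 2 8 5 - c 2 9 6" using R[of 2 8 6] by (simp add: eval_nat_numeral)
    show ?thesis unfolding h unfolding r_2_8_5 r_2_9_6 by (simp add: algebra_simps)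
  qed
  have r_3_8_7: "c 3 8 7 = 0"
  proof -
    have h: "c 3 8 7 = c 2 8 6 - c 2 9 7" using R[of 2 8 7] by (simp add: eval_nat_numeral)
    show ?thesis unfolding h unfolding r_2_8_6 r_2_9_7 by (simp add: algebra_simps)
  qed
  have r_3_8_8: "c 3 8 8 = 0"
  proof -
    have h: "c 3 8 8 = c 2 8 7 - c 2 9 8" using R[of 2 8 8] by (simp add: eval_nat_numeral)
    show ?thesis unfolding h unfolding r_2_8_7 r_2_9_8 by (simp add: algebra_simps)
  qed
  have r_3_8_9: "c 3 8 9 = 0"
  proof -
    have h: "c 3 8 9 = c 2 8 8 - c 2 9 9" using R[of 2 8 9] by (simp add: eval_nat_numeral)
    show ?thesis unfolding h unfolding r_2_8_8 r_2_9_9 by (simp add: algebra_simps)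
  qed
  have r_3_9_0: "c 3 9 0 = 0"
  proof -
    have h: "c 3 9 0 = 0 - 0" using R[of 2 9 0] by (simp add: eval_nat_numeral)
    show ?thesis unfolding h by (simp add: algebra_simps)
  qed
  have r_3_9_1: "c 3 9 1 = 0"
  proof -
    have h: "c 3 9 1 = 0 - 0" using R[of 2 9 1] by (simp add: eval_nat_numeral)
    show ?thesis unfolding h by (simp add: algebra_simps)
  qed
  have r_3_9_2: "c 3 9 2 = 0"
  proof -
    have h: "c 3 9 2 = c 2 9 1 - 0" using R[of 2 9 2] by (simp add: eval_nat_numeral)
    show ?thesis unfolding h unfolding r_2_9_1 by (simp add: algebra_simps)
  qed
  have r_3_9_3: "c 3 9 3 = 0"
  proof -
    have h: "c 3 9 3 = c 2 9 2 - 0" using R[of 2 9 3] by (simp add: eval_nat_numeral)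
    show ?thesis unfolding h unfolding r_2_9_2 by (simp add: algebra_simps)
  qed
  have r_3_9_4: "c 3 9 4 = 0"
  proof -
    have h: "c 3 9 4 = c 2 9 3 - 0" using R[of 2 9 4] by (simp add: eval_nat_numeral)
    show ?thesis unfolding h unfolding r_2_9_3 by (simp add: algebra_simps)
  qed
  have r_3_9_5: "c 3 9 5 = 0"
  proof -
    have h: "c 3 9 5 = c 2 9 4 - 0" using R[of 2 9 5] by (simp add: eval_nat_numeral)
    show ?thesis unfolding h unfolding r_2_9_4 by (simp add: algebra_simps)
  qed
  have r_3_9_6: "c 3 9 6 = 0"
  proof -
    have h: "c 3 9 6 = c 2 9 5 - 0" using R[of 2 9 6] by (simp add: eval_nat_numeral)
    show ?thesis unfolding h unfolding r_2_9_5 by (simp add: algebra_simps)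
  qed
  have r_3_9_7: "c 3 9 7 = 0"
  proof -
    have h: "c 3 9 7 = c 2 9 6 - 0" using R[of 2 9 7] by (simp add: eval_nat_numeral)
    show ?thesis unfolding h unfolding r_2_9_6 by (simp add: algebra_simps)
  qed
  have r_3_9_8: "c 3 9 8 = 0"
  proof -
    have h: "c 3 9 8 = c 2 9 7 - 0" using R[of 2 9 8] by (simp add: eval_nat_numeral)
    show ?thesis unfolding h unfolding r_2_9_7 by (simp add: algebra_simps)
  qed
  have r_3_9_9: "c 3 9 9 = 0"
  proof -
    have h: "c 3 9 9 = c 2 9 8 - 0" using R[of 2 9 9] by (simp add: eval_nat_numeral)
    show ?thesis unfolding h unfolding r_2_9_8 by (simp add: algebra_simps)
  qed
  have r_4_5_0: "c 4 5 0 = 0"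
  proof -
    have h: "c 4 5 0 = 0 - c 3 6 0" using R[of 3 5 0] by (simp add: eval_nat_numeral)
    show ?thesis unfolding h unfolding r_3_6_0 by (simp add: algebra_simps)
  qed
  have r_4_5_1: "c 4 5 1 = 0"
  proof -
    have h: "c 4 5 1 = 0 - c 3 6 1" using R[of 3 5 1] by (simp add: eval_nat_numeral)
    show ?thesis unfolding h unfolding r_3_6_1 by (simp add: algebra_simps)
  qed
  have r_4_5_2: "c 4 5 2 = 0"
  proof -
    have h: "c 4 5 2 = c 3 5 1 - c 3 6 2" using R[of 3 5 2] by (simp add: eval_nat_numeral)
    show ?thesis unfolding h unfolding r_3_5_1 r_3_6_2 by (simp add: algebra_simps)
  qed
  have r_4_5_3: "c 4 5 3 = 0"
  proof -
    have h: "c 4 5 3 = c 3 5 2 - c 3 6 3" using R[of 3 5 3] by (simp add: eval_nat_numeral)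
    show ?thesis unfolding h unfolding r_3_5_2 r_3_6_3 by (simp add: algebra_simps)
  qed
  have r_4_5_4: "c 4 5 4 = 0"
  proof -
    have h: "c 4 5 4 = c 3 5 3 - c 3 6 4" using R[of 3 5 4] by (simp add: eval_nat_numeral)
    show ?thesis unfolding h unfolding r_3_5_3 r_3_6_4 by (simp add: algebra_simps)
  qed
  have r_4_5_5: "c 4 5 5 = 0"
  proof -
    have h: "c 4 5 5 = c 3 5 4 - c 3 6 5" using R[of 3 5 5] by (simp add: eval_nat_numeral)
    show ?thesis unfolding h unfolding r_3_5_4 r_3_6_5 by (simp add: algebra_simps)
  qed
  have r_4_5_6: "c 4 5 6 = 0"
  proof -
    have h: "c 4 5 6 = c 3 5 5 - c 3 6 6" using R[of 3 5 6] by (simp add: eval_nat_numeral)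
    show ?thesis unfolding h unfolding r_3_5_5 r_3_6_6 by (simp add: algebra_simps)
  qed
  have r_4_5_7: "c 4 5 7 = 0"
  proof -
    have h: "c 4 5 7 = c 3 5 6 - c 3 6 7" using R[of 3 5 7] by (simp add: eval_nat_numeral)
    show ?thesis unfolding h unfolding r_3_5_6 r_3_6_7 by (simp add: algebra_simps)
  qed
  have r_4_5_8: "c 4 5 8 = 0"
  proof -
    have h: "c 4 5 8 = c 3 5 7 - c 3 6 8" using R[of 3 5 8] by (simp add: eval_nat_numeral)
    show ?thesis unfolding h unfolding r_3_5_7 r_3_6_8 by (simp add: algebra_simps)
  qed
  have r_4_5_9: "c 4 5 9 = c 1 5 6 - 3 * c 1 6 7 + 3 * c 1 7 8"
  proof -
    have h: "c 4 5 9 = c 3 5 8 - c 3 6 9" using R[of 3 5 9] by (simp add: eval_nat_numeral)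
    show ?thesis unfolding h unfolding r_3_5_8 r_3_6_9 by (simp add: algebra_simps)
  qed
  have r_4_6_0: "c 4 6 0 = 0"
  proof -
    have h: "c 4 6 0 = 0 - c 3 7 0" using R[of 3 6 0] by (simp add: eval_nat_numeral)
    show ?thesis unfolding h unfolding r_3_7_0 by (simp add: algebra_simps)
  qed
  have r_4_6_1: "c 4 6 1 = 0"
  proof -
    have h: "c 4 6 1 = 0 - c 3 7 1" using R[of 3 6 1] by (simp add: eval_nat_numeral)
    show ?thesis unfolding h unfolding r_3_7_1 by (simp add: algebra_simps)
  qed
  have r_4_6_2: "c 4 6 2 = 0"
  proof -
    have h: "c 4 6 2 = c 3 6 1 - c 3 7 2" using R[of 3 6 2] by (simp add: eval_nat_numeral)
    show ?thesis unfolding h unfolding r_3_6_1 r_3_7_2 by (simp add: algebra_simps)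
  qed
  have r_4_6_3: "c 4 6 3 = 0"
  proof -
    have h: "c 4 6 3 = c 3 6 2 - c 3 7 3" using R[of 3 6 3] by (simp add: eval_nat_numeral)
    show ?thesis unfolding h unfolding r_3_6_2 r_3_7_3 by (simp add: algebra_simps)
  qed
  have r_4_6_4: "c 4 6 4 = 0"
  proof -
    have h: "c 4 6 4 = c 3 6 3 - c 3 7 4" using R[of 3 6 4] by (simp add: eval_nat_numeral)
    show ?thesis unfolding h unfolding r_3_6_3 r_3_7_4 by (simp add: algebra_simps)
  qed
  have r_4_6_5: "c 4 6 5 = 0"
  proof -
    have h: "c 4 6 5 = c 3 6 4 - c 3 7 5" using R[of 3 6 5] by (simp add: eval_nat_numeral)
    show ?thesis unfolding h unfolding r_3_6_4 r_3_7_5 by (simp add: algebra_simps)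
  qed
  have r_4_6_6: "c 4 6 6 = 0"
  proof -
    have h: "c 4 6 6 = c 3 6 5 - c 3 7 6" using R[of 3 6 6] by (simp add: eval_nat_numeral)
    show ?thesis unfolding h unfolding r_3_6_5 r_3_7_6 by (simp add: algebra_simps)
  qed
  have r_4_6_7: "c 4 6 7 = 0"
  proof -
    have h: "c 4 6 7 = c 3 6 6 - c 3 7 7" using R[of 3 6 7] by (simp add: eval_nat_numeral)
    show ?thesis unfolding h unfolding r_3_6_6 r_3_7_7 by (simp add: algebra_simps)
  qed
  have r_4_6_8: "c 4 6 8 = 0"
  proof -
    have h: "c 4 6 8 = c 3 6 7 - c 3 7 8" using R[of 3 6 8] by (simp add: eval_nat_numeral)
    show ?thesis unfolding h unfolding r_3_6_7 r_3_7_8 by (simp add: algebra_simps)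
  qed
  have r_4_6_9: "c 4 6 9 = 0"
  proof -
    have h: "c 4 6 9 = c 3 6 8 - c 3 7 9" using R[of 3 6 9] by (simp add: eval_nat_numeral)
    show ?thesis unfolding h unfolding r_3_6_8 r_3_7_9 by (simp add: algebra_simps)
  qed
  have r_4_7_0: "c 4 7 0 = 0"
  proof -
    have h: "c 4 7 0 = 0 - c 3 8 0" using R[of 3 7 0] by (simp add: eval_nat_numeral)
    show ?thesis unfolding h unfolding r_3_8_0 by (simp add: algebra_simps)
  qed
  have r_4_7_1: "c 4 7 1 = 0"
  proof -
    have h: "c 4 7 1 = 0 - c 3 8 1" using R[of 3 7 1] by (simp add: eval_nat_numeral)
    show ?thesis unfolding h unfolding r_3_8_1 by (simp add: algebra_simps)
  qed
  have r_4_7_2: "c 4 7 2 = 0"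
  proof -
    have h: "c 4 7 2 = c 3 7 1 - c 3 8 2" using R[of 3 7 2] by (simp add: eval_nat_numeral)
    show ?thesis unfolding h unfolding r_3_7_1 r_3_8_2 by (simp add: algebra_simps)
  qed
  have r_4_7_3: "c 4 7 3 = 0"
  proof -
    have h: "c 4 7 3 = c 3 7 2 - c 3 8 3" using R[of 3 7 3] by (simp add: eval_nat_numeral)
    show ?thesis unfolding h unfolding r_3_7_2 r_3_8_3 by (simp add: algebra_simps)
  qed
  have r_4_7_4: "c 4 7 4 = 0"
  proof -
    have h: "c 4 7 4 = c 3 7 3 - c 3 8 4" using R[of 3 7 4] by (simp add: eval_nat_numeral)
    show ?thesis unfolding h unfolding r_3_7_3 r_3_8_4 by (simp add: algebra_simps)
  qed
  have r_4_7_5: "c 4 7 5 = 0"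
  proof -
    have h: "c 4 7 5 = c 3 7 4 - c 3 8 5" using R[of 3 7 5] by (simp add: eval_nat_numeral)
    show ?thesis unfolding h unfolding r_3_7_4 r_3_8_5 by (simp add: algebra_simps)
  qed
  have r_4_7_6: "c 4 7 6 = 0"
  proof -
    have h: "c 4 7 6 = c 3 7 5 - c 3 8 6" using R[of 3 7 6] by (simp add: eval_nat_numeral)
    show ?thesis unfolding h unfolding r_3_7_5 r_3_8_6 by (simp add: algebra_simps)
  qed
  have r_4_7_7: "c 4 7 7 = 0"
  proof -
    have h: "c 4 7 7 = c 3 7 6 - c 3 8 7" using R[of 3 7 7] by (simp add: eval_nat_numeral)
    show ?thesis unfolding h unfolding r_3_7_6 r_3_8_7 by (simp add: algebra_simps)
  qed
  have r_4_7_8: "c 4 7 8 = 0"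
  proof -
    have h: "c 4 7 8 = c 3 7 7 - c 3 8 8" using R[of 3 7 8] by (simp add: eval_nat_numeral)
    show ?thesis unfolding h unfolding r_3_7_7 r_3_8_8 by (simp add: algebra_simps)
  qed
  have r_4_7_9: "c 4 7 9 = 0"
  proof -
    have h: "c 4 7 9 = c 3 7 8 - c 3 8 9" using R[of 3 7 9] by (simp add: eval_nat_numeral)
    show ?thesis unfolding h unfolding r_3_7_8 r_3_8_9 by (simp add: algebra_simps)
  qed
  have r_4_8_0: "c 4 8 0 = 0"
  proof -
    have h: "c 4 8 0 = 0 - c 3 9 0" using R[of 3 8 0] by (simp add: eval_nat_numeral)
    show ?thesis unfolding h unfolding r_3_9_0 by (simp add: algebra_simps)
  qed
  have r_4_8_1: "c 4 8 1 = 0"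
  proof -
    have h: "c 4 8 1 = 0 - c 3 9 1" using R[of 3 8 1] by (simp add: eval_nat_numeral)
    show ?thesis unfolding h unfolding r_3_9_1 by (simp add: algebra_simps)
  qed
  have r_4_8_2: "c 4 8 2 = 0"
  proof -
    have h: "c 4 8 2 = c 3 8 1 - c 3 9 2" using R[of 3 8 2] by (simp add: eval_nat_numeral)
    show ?thesis unfolding h unfolding r_3_8_1 r_3_9_2 by (simp add: algebra_simps)
  qed
  have r_4_8_3: "c 4 8 3 = 0"
  proof -
    have h: "c 4 8 3 = c 3 8 2 - c 3 9 3" using R[of 3 8 3] by (simp add: eval_nat_numeral)
    show ?thesis unfolding h unfolding r_3_8_2 r_3_9_3 by (simp add: algebra_simps)
  qed
  have r_4_8_4: "c 4 8 4 = 0"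
  proof -
    have h: "c 4 8 4 = c 3 8 3 - c 3 9 4" using R[of 3 8 4] by (simp add: eval_nat_numeral)
    show ?thesis unfolding h unfolding r_3_8_3 r_3_9_4 by (simp add: algebra_simps)
  qed
  have r_4_8_5: "c 4 8 5 = 0"
  proof -
    have h: "c 4 8 5 = c 3 8 4 - c 3 9 5" using R[of 3 8 5] by (simp add: eval_nat_numeral)
    show ?thesis unfolding h unfolding r_3_8_4 r_3_9_5 by (simp add: algebra_simps)
  qed
  have r_4_8_6: "c 4 8 6 = 0"
  proof -
    have h: "c 4 8 6 = c 3 8 5 - c 3 9 6" using R[of 3 8 6] by (simp add: eval_nat_numeral)
    show ?thesis unfolding h unfolding r_3_8_5 r_3_9_6 by (simp add: algebra_simps)
  qed
  have r_4_8_7: "c 4 8 7 = 0"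
  proof -
    have h: "c 4 8 7 = c 3 8 6 - c 3 9 7" using R[of 3 8 7] by (simp add: eval_nat_numeral)
    show ?thesis unfolding h unfolding r_3_8_6 r_3_9_7 by (simp add: algebra_simps)
  qed
  have r_4_8_8: "c 4 8 8 = 0"
  proof -
    have h: "c 4 8 8 = c 3 8 7 - c 3 9 8" using R[of 3 8 8] by (simp add: eval_nat_numeral)
    show ?thesis unfolding h unfolding r_3_8_7 r_3_9_8 by (simp add: algebra_simps)
  qed
  have r_4_8_9: "c 4 8 9 = 0"
  proof -
    have h: "c 4 8 9 = c 3 8 8 - c 3 9 9" using R[of 3 8 9] by (simp add: eval_nat_numeral)
    show ?thesis unfolding h unfolding r_3_8_8 r_3_9_9 by (simp add: algebra_simps)
  qed
  have r_4_9_0: "c 4 9 0 = 0"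
  proof -
    have h: "c 4 9 0 = 0 - 0" using R[of 3 9 0] by (simp add: eval_nat_numeral)
    show ?thesis unfolding h by (simp add: algebra_simps)
  qed
  have r_4_9_1: "c 4 9 1 = 0"
  proof -
    have h: "c 4 9 1 = 0 - 0" using R[of 3 9 1] by (simp add: eval_nat_numeral)
    show ?thesis unfolding h by (simp add: algebra_simps)
  qed
  have r_4_9_2: "c 4 9 2 = 0"
  proof -
    have h: "c 4 9 2 = c 3 9 1 - 0" using R[of 3 9 2] by (simp add: eval_nat_numeral)
    show ?thesis unfolding h unfolding r_3_9_1 by (simp add: algebra_simps)
  qed
  have r_4_9_3: "c 4 9 3 = 0"
  proof -
    have h: "c 4 9 3 = c 3 9 2 - 0" using R[of 3 9 3] by (simp add: eval_nat_numeral)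
    show ?thesis unfolding h unfolding r_3_9_2 by (simp add: algebra_simps)
  qed
  have r_4_9_4: "c 4 9 4 = 0"
  proof -
    have h: "c 4 9 4 = c 3 9 3 - 0" using R[of 3 9 4] by (simp add: eval_nat_numeral)
    show ?thesis unfolding h unfolding r_3_9_3 by (simp add: algebra_simps)
  qed
  have r_4_9_5: "c 4 9 5 = 0"
  proof -
    have h: "c 4 9 5 = c 3 9 4 - 0" using R[of 3 9 5] by (simp add: eval_nat_numeral)
    show ?thesis unfolding h unfolding r_3_9_4 by (simp add: algebra_simps)
  qed
  have r_4_9_6: "c 4 9 6 = 0"
  proof -
    have h: "c 4 9 6 = c 3 9 5 - 0" using R[of 3 9 6] by (simp add: eval_nat_numeral)
    show ?thesis unfolding h unfolding r_3_9_5 by (simp add: algebra_simps)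
  qed
  have r_4_9_7: "c 4 9 7 = 0"
  proof -
    have h: "c 4 9 7 = c 3 9 6 - 0" using R[of 3 9 7] by (simp add: eval_nat_numeral)
    show ?thesis unfolding h unfolding r_3_9_6 by (simp add: algebra_simps)
  qed
  have r_4_9_8: "c 4 9 8 = 0"
  proof -
    have h: "c 4 9 8 = c 3 9 7 - 0" using R[of 3 9 8] by (simp add: eval_nat_numeral)
    show ?thesis unfolding h unfolding r_3_9_7 by (simp add: algebra_simps)
  qed
  have r_4_9_9: "c 4 9 9 = 0"
  proof -
    have h: "c 4 9 9 = c 3 9 8 - 0" using R[of 3 9 9] by (simp add: eval_nat_numeral)
    show ?thesis unfolding h unfolding r_3_9_8 by (simp add: algebra_simps)
  qed
  have r_5_6_0: "c 5 6 0 = 0"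
  proof -
    have h: "c 5 6 0 = 0 - c 4 7 0" using R[of 4 6 0] by (simp add: eval_nat_numeral)
    show ?thesis unfolding h unfolding r_4_7_0 by (simp add: algebra_simps)
  qed
  have r_5_6_1: "c 5 6 1 = 0"
  proof -
    have h: "c 5 6 1 = 0 - c 4 7 1" using R[of 4 6 1] by (simp add: eval_nat_numeral)
    show ?thesis unfolding h unfolding r_4_7_1 by (simp add: algebra_simps)
  qed
  have r_5_6_2: "c 5 6 2 = 0"
  proof -
    have h: "c 5 6 2 = c 4 6 1 - c 4 7 2" using R[of 4 6 2] by (simp add: eval_nat_numeral)
    show ?thesis unfolding h unfolding r_4_6_1 r_4_7_2 by (simp add: algebra_simps)
  qed
  have r_5_6_3: "c 5 6 3 = 0"
  proof -
    have h: "c 5 6 3 = c 4 6 2 - c 4 7 3" using R[of 4 6 3] by (simp add: eval_nat_numeral)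
    show ?thesis unfolding h unfolding r_4_6_2 r_4_7_3 by (simp add: algebra_simps)
  qed
  have r_5_6_4: "c 5 6 4 = 0"
  proof -
    have h: "c 5 6 4 = c 4 6 3 - c 4 7 4" using R[of 4 6 4] by (simp add: eval_nat_numeral)
    show ?thesis unfolding h unfolding r_4_6_3 r_4_7_4 by (simp add: algebra_simps)
  qed
  have r_5_6_5: "c 5 6 5 = 0"
  proof -
    have h: "c 5 6 5 = c 4 6 4 - c 4 7 5" using R[of 4 6 5] by (simp add: eval_nat_numeral)
    show ?thesis unfolding h unfolding r_4_6_4 r_4_7_5 by (simp add: algebra_simps)
  qed
  have r_5_6_6: "c 5 6 6 = 0"
  proof -
    have h: "c 5 6 6 = c 4 6 5 - c 4 7 6" using R[of 4 6 6] by (simp add: eval_nat_numeral)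
    show ?thesis unfolding h unfolding r_4_6_5 r_4_7_6 by (simp add: algebra_simps)
  qed
  have r_5_6_7: "c 5 6 7 = 0"
  proof -
    have h: "c 5 6 7 = c 4 6 6 - c 4 7 7" using R[of 4 6 7] by (simp add: eval_nat_numeral)
    show ?thesis unfolding h unfolding r_4_6_6 r_4_7_7 by (simp add: algebra_simps)
  qed
  have r_5_6_8: "c 5 6 8 = 0"
  proof -
    have h: "c 5 6 8 = c 4 6 7 - c 4 7 8" using R[of 4 6 8] by (simp add: eval_nat_numeral)
    show ?thesis unfolding h unfolding r_4_6_7 r_4_7_8 by (simp add: algebra_simps)
  qed
  have r_5_6_9: "c 5 6 9 = 0"
  proof -
    have h: "c 5 6 9 = c 4 6 8 - c 4 7 9" using R[of 4 6 9] by (simp add: eval_nat_numeral)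
    show ?thesis unfolding h unfolding r_4_6_8 r_4_7_9 by (simp add: algebra_simps)
  qed
  have r_5_7_0: "c 5 7 0 = 0"
  proof -
    have h: "c 5 7 0 = 0 - c 4 8 0" using R[of 4 7 0] by (simp add: eval_nat_numeral)
    show ?thesis unfolding h unfolding r_4_8_0 by (simp add: algebra_simps)
  qed
  have r_5_7_1: "c 5 7 1 = 0"
  proof -
    have h: "c 5 7 1 = 0 - c 4 8 1" using R[of 4 7 1] by (simp add: eval_nat_numeral)
    show ?thesis unfolding h unfolding r_4_8_1 by (simp add: algebra_simps)
  qed
  have r_5_7_2: "c 5 7 2 = 0"
  proof -
    have h: "c 5 7 2 = c 4 7 1 - c 4 8 2" using R[of 4 7 2] by (simp add: eval_nat_numeral)
    show ?thesis unfolding h unfolding r_4_7_1 r_4_8_2 by (simp add: algebra_simps)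
  qed
  have r_5_7_3: "c 5 7 3 = 0"
  proof -
    have h: "c 5 7 3 = c 4 7 2 - c 4 8 3" using R[of 4 7 3] by (simp add: eval_nat_numeral)
    show ?thesis unfolding h unfolding r_4_7_2 r_4_8_3 by (simp add: algebra_simps)
  qed
  have r_5_7_4: "c 5 7 4 = 0"
  proof -
    have h: "c 5 7 4 = c 4 7 3 - c 4 8 4" using R[of 4 7 4] by (simp add: eval_nat_numeral)
    show ?thesis unfolding h unfolding r_4_7_3 r_4_8_4 by (simp add: algebra_simps)
  qed
  have r_5_7_5: "c 5 7 5 = 0"
  proof -
    have h: "c 5 7 5 = c 4 7 4 - c 4 8 5" using R[of 4 7 5] by (simp add: eval_nat_numeral)
    show ?thesis unfolding h unfolding r_4_7_4 r_4_8_5 by (simp add: algebra_simps)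
  qed
  have r_5_7_6: "c 5 7 6 = 0"
  proof -
    have h: "c 5 7 6 = c 4 7 5 - c 4 8 6" using R[of 4 7 6] by (simp add: eval_nat_numeral)
    show ?thesis unfolding h unfolding r_4_7_5 r_4_8_6 by (simp add: algebra_simps)
  qed
  have r_5_7_7: "c 5 7 7 = 0"
  proof -
    have h: "c 5 7 7 = c 4 7 6 - c 4 8 7" using R[of 4 7 7] by (simp add: eval_nat_numeral)
    show ?thesis unfolding h unfolding r_4_7_6 r_4_8_7 by (simp add: algebra_simps)
  qed
  have r_5_7_8: "c 5 7 8 = 0"
  proof -
    have h: "c 5 7 8 = c 4 7 7 - c 4 8 8" using R[of 4 7 8] by (simp add: eval_nat_numeral)
    show ?thesis unfolding h unfolding r_4_7_7 r_4_8_8 by (simp add: algebra_simps)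
  qed
  have r_5_7_9: "c 5 7 9 = 0"
  proof -
    have h: "c 5 7 9 = c 4 7 8 - c 4 8 9" using R[of 4 7 9] by (simp add: eval_nat_numeral)
    show ?thesis unfolding h unfolding r_4_7_8 r_4_8_9 by (simp add: algebra_simps)
  qed
  have r_5_8_0: "c 5 8 0 = 0"
  proof -
    have h: "c 5 8 0 = 0 - c 4 9 0" using R[of 4 8 0] by (simp add: eval_nat_numeral)
    show ?thesis unfolding h unfolding r_4_9_0 by (simp add: algebra_simps)
  qed
  have r_5_8_1: "c 5 8 1 = 0"
  proof -
    have h: "c 5 8 1 = 0 - c 4 9 1" using R[of 4 8 1] by (simp add: eval_nat_numeral)
    show ?thesis unfolding h unfolding r_4_9_1 by (simp add: algebra_simps)
  qed
  have r_5_8_2: "c 5 8 2 = 0"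
  proof -
    have h: "c 5 8 2 = c 4 8 1 - c 4 9 2" using R[of 4 8 2] by (simp add: eval_nat_numeral)
    show ?thesis unfolding h unfolding r_4_8_1 r_4_9_2 by (simp add: algebra_simps)
  qed
  have r_5_8_3: "c 5 8 3 = 0"
  proof -
    have h: "c 5 8 3 = c 4 8 2 - c 4 9 3" using R[of 4 8 3] by (simp add: eval_nat_numeral)
    show ?thesis unfolding h unfolding r_4_8_2 r_4_9_3 by (simp add: algebra_simps)
  qed
  have r_5_8_4: "c 5 8 4 = 0"
  proof -
    have h: "c 5 8 4 = c 4 8 3 - c 4 9 4" using R[of 4 8 4] by (simp add: eval_nat_numeral)
    show ?thesis unfolding h unfolding r_4_8_3 r_4_9_4 by (simp add: algebra_simps)
  qed
  have r_5_8_5: "c 5 8 5 = 0"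
  proof -
    have h: "c 5 8 5 = c 4 8 4 - c 4 9 5" using R[of 4 8 5] by (simp add: eval_nat_numeral)
    show ?thesis unfolding h unfolding r_4_8_4 r_4_9_5 by (simp add: algebra_simps)
  qed
  have r_5_8_6: "c 5 8 6 = 0"
  proof -
    have h: "c 5 8 6 = c 4 8 5 - c 4 9 6" using R[of 4 8 6] by (simp add: eval_nat_numeral)
    show ?thesis unfolding h unfolding r_4_8_5 r_4_9_6 by (simp add: algebra_simps)
  qed
  have r_5_8_7: "c 5 8 7 = 0"
  proof -
    have h: "c 5 8 7 = c 4 8 6 - c 4 9 7" using R[of 4 8 7] by (simp add: eval_nat_numeral)
    show ?thesis unfolding h unfolding r_4_8_6 r_4_9_7 by (simp add: algebra_simps)
  qed
  have r_5_8_8: "c 5 8 8 = 0"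
  proof -
    have h: "c 5 8 8 = c 4 8 7 - c 4 9 8" using R[of 4 8 8] by (simp add: eval_nat_numeral)
    show ?thesis unfolding h unfolding r_4_8_7 r_4_9_8 by (simp add: algebra_simps)
  qed
  have r_5_8_9: "c 5 8 9 = 0"
  proof -
    have h: "c 5 8 9 = c 4 8 8 - c 4 9 9" using R[of 4 8 9] by (simp add: eval_nat_numeral)
    show ?thesis unfolding h unfolding r_4_8_8 r_4_9_9 by (simp add: algebra_simps)
  qed
  have r_5_9_0: "c 5 9 0 = 0"
  proof -
    have h: "c 5 9 0 = 0 - 0" using R[of 4 9 0] by (simp add: eval_nat_numeral)
    show ?thesis unfolding h by (simp add: algebra_simps)
  qed
  have r_5_9_1: "c 5 9 1 = 0"
  proof -
    have h: "c 5 9 1 = 0 - 0" using R[of 4 9 1] by (simp add: eval_nat_numeral)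
    show ?thesis unfolding h by (simp add: algebra_simps)
  qed
  have r_5_9_2: "c 5 9 2 = 0"
  proof -
    have h: "c 5 9 2 = c 4 9 1 - 0" using R[of 4 9 2] by (simp add: eval_nat_numeral)
    show ?thesis unfolding h unfolding r_4_9_1 by (simp add: algebra_simps)
  qed
  have r_5_9_3: "c 5 9 3 = 0"
  proof -
    have h: "c 5 9 3 = c 4 9 2 - 0" using R[of 4 9 3] by (simp add: eval_nat_numeral)
    show ?thesis unfolding h unfolding r_4_9_2 by (simp add: algebra_simps)
  qed
  have r_5_9_4: "c 5 9 4 = 0"
  proof -
    have h: "c 5 9 4 = c 4 9 3 - 0" using R[of 4 9 4] by (simp add: eval_nat_numeral)
    show ?thesis unfolding h unfolding r_4_9_3 by (simp add: algebra_simps)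
  qed
  have r_5_9_5: "c 5 9 5 = 0"
  proof -
    have h: "c 5 9 5 = c 4 9 4 - 0" using R[of 4 9 5] by (simp add: eval_nat_numeral)
    show ?thesis unfolding h unfolding r_4_9_4 by (simp add: algebra_simps)
  qed
  have r_5_9_6: "c 5 9 6 = 0"
  proof -
    have h: "c 5 9 6 = c 4 9 5 - 0" using R[of 4 9 6] by (simp add: eval_nat_numeral)
    show ?thesis unfolding h unfolding r_4_9_5 by (simp add: algebra_simps)
  qed
  have r_5_9_7: "c 5 9 7 = 0"
  proof -
    have h: "c 5 9 7 = c 4 9 6 - 0" using R[of 4 9 7] by (simp add: eval_nat_numeral)
    show ?thesis unfolding h unfolding r_4_9_6 by (simp add: algebra_simps)
  qed
  have r_5_9_8: "c 5 9 8 = 0"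
  proof -
    have h: "c 5 9 8 = c 4 9 7 - 0" using R[of 4 9 8] by (simp add: eval_nat_numeral)
    show ?thesis unfolding h unfolding r_4_9_7 by (simp add: algebra_simps)
  qed
  have r_5_9_9: "c 5 9 9 = 0"
  proof -
    have h: "c 5 9 9 = c 4 9 8 - 0" using R[of 4 9 9] by (simp add: eval_nat_numeral)
    show ?thesis unfolding h unfolding r_4_9_8 by (simp add: algebra_simps)
  qed
  have r_6_7_0: "c 6 7 0 = 0"
  proof -
    have h: "c 6 7 0 = 0 - c 5 8 0" using R[of 5 7 0] by (simp add: eval_nat_numeral)
    show ?thesis unfolding h unfolding r_5_8_0 by (simp add: algebra_simps)
  qed
  have r_6_7_1: "c 6 7 1 = 0"
  proof -
    have h: "c 6 7 1 = 0 - c 5 8 1" using R[of 5 7 1] by (simp add: eval_nat_numeral)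
    show ?thesis unfolding h unfolding r_5_8_1 by (simp add: algebra_simps)
  qed
  have r_6_7_2: "c 6 7 2 = 0"
  proof -
    have h: "c 6 7 2 = c 5 7 1 - c 5 8 2" using R[of 5 7 2] by (simp add: eval_nat_numeral)
    show ?thesis unfolding h unfolding r_5_7_1 r_5_8_2 by (simp add: algebra_simps)
  qed
  have r_6_7_3: "c 6 7 3 = 0"
  proof -
    have h: "c 6 7 3 = c 5 7 2 - c 5 8 3" using R[of 5 7 3] by (simp add: eval_nat_numeral)
    show ?thesis unfolding h unfolding r_5_7_2 r_5_8_3 by (simp add: algebra_simps)
  qed
  have r_6_7_4: "c 6 7 4 = 0"
  proof -
    have h: "c 6 7 4 = c 5 7 3 - c 5 8 4" using R[of 5 7 4] by (simp add: eval_nat_numeral)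
    show ?thesis unfolding h unfolding r_5_7_3 r_5_8_4 by (simp add: algebra_simps)
  qed
  have r_6_7_5: "c 6 7 5 = 0"
  proof -
    have h: "c 6 7 5 = c 5 7 4 - c 5 8 5" using R[of 5 7 5] by (simp add: eval_nat_numeral)
    show ?thesis unfolding h unfolding r_5_7_4 r_5_8_5 by (simp add: algebra_simps)
  qed
  have r_6_7_6: "c 6 7 6 = 0"
  proof -
    have h: "c 6 7 6 = c 5 7 5 - c 5 8 6" using R[of 5 7 6] by (simp add: eval_nat_numeral)
    show ?thesis unfolding h unfolding r_5_7_5 r_5_8_6 by (simp add: algebra_simps)
  qed
  have r_6_7_7: "c 6 7 7 = 0"
  proof -
    have h: "c 6 7 7 = c 5 7 6 - c 5 8 7" using R[of 5 7 7] by (simp add: eval_nat_numeral)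
    show ?thesis unfolding h unfolding r_5_7_6 r_5_8_7 by (simp add: algebra_simps)
  qed
  have r_6_7_8: "c 6 7 8 = 0"
  proof -
    have h: "c 6 7 8 = c 5 7 7 - c 5 8 8" using R[of 5 7 8] by (simp add: eval_nat_numeral)
    show ?thesis unfolding h unfolding r_5_7_7 r_5_8_8 by (simp add: algebra_simps)
  qed
  have r_6_7_9: "c 6 7 9 = 0"
  proof -
    have h: "c 6 7 9 = c 5 7 8 - c 5 8 9" using R[of 5 7 9] by (simp add: eval_nat_numeral)
    show ?thesis unfolding h unfolding r_5_7_8 r_5_8_9 by (simp add: algebra_simps)
  qed
  have r_6_8_0: "c 6 8 0 = 0"
  proof -
    have h: "c 6 8 0 = 0 - c 5 9 0" using R[of 5 8 0] by (simp add: eval_nat_numeral)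
    show ?thesis unfolding h unfolding r_5_9_0 by (simp add: algebra_simps)
  qed
  have r_6_8_1: "c 6 8 1 = 0"
  proof -
    have h: "c 6 8 1 = 0 - c 5 9 1" using R[of 5 8 1] by (simp add: eval_nat_numeral)
    show ?thesis unfolding h unfolding r_5_9_1 by (simp add: algebra_simps)
  qed
  have r_6_8_2: "c 6 8 2 = 0"
  proof -
    have h: "c 6 8 2 = c 5 8 1 - c 5 9 2" using R[of 5 8 2] by (simp add: eval_nat_numeral)
    show ?thesis unfolding h unfolding r_5_8_1 r_5_9_2 by (simp add: algebra_simps)
  qed
  have r_6_8_3: "c 6 8 3 = 0"
  proof -
    have h: "c 6 8 3 = c 5 8 2 - c 5 9 3" using R[of 5 8 3] by (simp add: eval_nat_numeral)
    show ?thesis unfolding h unfolding r_5_8_2 r_5_9_3 by (simp add: algebra_simps)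
  qed
  have r_6_8_4: "c 6 8 4 = 0"
  proof -
    have h: "c 6 8 4 = c 5 8 3 - c 5 9 4" using R[of 5 8 4] by (simp add: eval_nat_numeral)
    show ?thesis unfolding h unfolding r_5_8_3 r_5_9_4 by (simp add: algebra_simps)
  qed
  have r_6_8_5: "c 6 8 5 = 0"
  proof -
    have h: "c 6 8 5 = c 5 8 4 - c 5 9 5" using R[of 5 8 5] by (simp add: eval_nat_numeral)
    show ?thesis unfolding h unfolding r_5_8_4 r_5_9_5 by (simp add: algebra_simps)
  qed
  have r_6_8_6: "c 6 8 6 = 0"
  proof -
    have h: "c 6 8 6 = c 5 8 5 - c 5 9 6" using R[of 5 8 6] by (simp add: eval_nat_numeral)
    show ?thesis unfolding h unfolding r_5_8_5 r_5_9_6 by (simp add: algebra_simps)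
  qed
  have r_6_8_7: "c 6 8 7 = 0"
  proof -
    have h: "c 6 8 7 = c 5 8 6 - c 5 9 7" using R[of 5 8 7] by (simp add: eval_nat_numeral)
    show ?thesis unfolding h unfolding r_5_8_6 r_5_9_7 by (simp add: algebra_simps)
  qed
  have r_6_8_8: "c 6 8 8 = 0"
  proof -
    have h: "c 6 8 8 = c 5 8 7 - c 5 9 8" using R[of 5 8 8] by (simp add: eval_nat_numeral)
    show ?thesis unfolding h unfolding r_5_8_7 r_5_9_8 by (simp add: algebra_simps)
  qed
  have r_6_8_9: "c 6 8 9 = 0"
  proof -
    have h: "c 6 8 9 = c 5 8 8 - c 5 9 9" using R[of 5 8 9] by (simp add: eval_nat_numeral)
    show ?thesis unfolding h unfolding r_5_8_8 r_5_9_9 by (simp add: algebra_simps)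
  qed
  have r_6_9_0: "c 6 9 0 = 0"
  proof -
    have h: "c 6 9 0 = 0 - 0" using R[of 5 9 0] by (simp add: eval_nat_numeral)
    show ?thesis unfolding h by (simp add: algebra_simps)
  qed
  have r_6_9_1: "c 6 9 1 = 0"
  proof -
    have h: "c 6 9 1 = 0 - 0" using R[of 5 9 1] by (simp add: eval_nat_numeral)
    show ?thesis unfolding h by (simp add: algebra_simps)
  qed
  have r_6_9_2: "c 6 9 2 = 0"
  proof -
    have h: "c 6 9 2 = c 5 9 1 - 0" using R[of 5 9 2] by (simp add: eval_nat_numeral)
    show ?thesis unfolding h unfolding r_5_9_1 by (simp add: algebra_simps)
  qed
  have r_6_9_3: "c 6 9 3 = 0"
  proof -
    have h: "c 6 9 3 = c 5 9 2 - 0" using R[of 5 9 3] by (simp add: eval_nat_numeral)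
    show ?thesis unfolding h unfolding r_5_9_2 by (simp add: algebra_simps)
  qed
  have r_6_9_4: "c 6 9 4 = 0"
  proof -
    have h: "c 6 9 4 = c 5 9 3 - 0" using R[of 5 9 4] by (simp add: eval_nat_numeral)
    show ?thesis unfolding h unfolding r_5_9_3 by (simp add: algebra_simps)
  qed
  have r_6_9_5: "c 6 9 5 = 0"
  proof -
    have h: "c 6 9 5 = c 5 9 4 - 0" using R[of 5 9 5] by (simp add: eval_nat_numeral)
    show ?thesis unfolding h unfolding r_5_9_4 by (simp add: algebra_simps)
  qed
  have r_6_9_6: "c 6 9 6 = 0"
  proof -
    have h: "c 6 9 6 = c 5 9 5 - 0" using R[of 5 9 6] by (simp add: eval_nat_numeral)
    show ?thesis unfolding h unfolding r_5_9_5 by (simp add: algebra_simps)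
  qed
  have r_6_9_7: "c 6 9 7 = 0"
  proof -
    have h: "c 6 9 7 = c 5 9 6 - 0" using R[of 5 9 7] by (simp add: eval_nat_numeral)
    show ?thesis unfolding h unfolding r_5_9_6 by (simp add: algebra_simps)
  qed
  have r_6_9_8: "c 6 9 8 = 0"
  proof -
    have h: "c 6 9 8 = c 5 9 7 - 0" using R[of 5 9 8] by (simp add: eval_nat_numeral)
    show ?thesis unfolding h unfolding r_5_9_7 by (simp add: algebra_simps)
  qed
  have r_6_9_9: "c 6 9 9 = 0"
  proof -
    have h: "c 6 9 9 = c 5 9 8 - 0" using R[of 5 9 9] by (simp add: eval_nat_numeral)
    show ?thesis unfolding h unfolding r_5_9_8 by (simp add: algebra_simps)
  qed
  have r_7_8_0: "c 7 8 0 = 0"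
  proof -
    have h: "c 7 8 0 = 0 - c 6 9 0" using R[of 6 8 0] by (simp add: eval_nat_numeral)
    show ?thesis unfolding h unfolding r_6_9_0 by (simp add: algebra_simps)
  qed
  have r_7_8_1: "c 7 8 1 = 0"
  proof -
    have h: "c 7 8 1 = 0 - c 6 9 1" using R[of 6 8 1] by (simp add: eval_nat_numeral)
    show ?thesis unfolding h unfolding r_6_9_1 by (simp add: algebra_simps)
  qed
  have r_7_8_2: "c 7 8 2 = 0"
  proof -
    have h: "c 7 8 2 = c 6 8 1 - c 6 9 2" using R[of 6 8 2] by (simp add: eval_nat_numeral)
    show ?thesis unfolding h unfolding r_6_8_1 r_6_9_2 by (simp add: algebra_simps)
  qed
  have r_7_8_3: "c 7 8 3 = 0"
  proof -
    have h: "c 7 8 3 = c 6 8 2 - c 6 9 3" using R[of 6 8 3] by (simp add: eval_nat_numeral)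
    show ?thesis unfolding h unfolding r_6_8_2 r_6_9_3 by (simp add: algebra_simps)
  qed
  have r_7_8_4: "c 7 8 4 = 0"
  proof -
    have h: "c 7 8 4 = c 6 8 3 - c 6 9 4" using R[of 6 8 4] by (simp add: eval_nat_numeral)
    show ?thesis unfolding h unfolding r_6_8_3 r_6_9_4 by (simp add: algebra_simps)
  qed
  have r_7_8_5: "c 7 8 5 = 0"
  proof -
    have h: "c 7 8 5 = c 6 8 4 - c 6 9 5" using R[of 6 8 5] by (simp add: eval_nat_numeral)
    show ?thesis unfolding h unfolding r_6_8_4 r_6_9_5 by (simp add: algebra_simps)
  qed
  have r_7_8_6: "c 7 8 6 = 0"
  proof -
    have h: "c 7 8 6 = c 6 8 5 - c 6 9 6" using R[of 6 8 6] by (simp add: eval_nat_numeral)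
    show ?thesis unfolding h unfolding r_6_8_5 r_6_9_6 by (simp add: algebra_simps)
  qed
  have r_7_8_7: "c 7 8 7 = 0"
  proof -
    have h: "c 7 8 7 = c 6 8 6 - c 6 9 7" using R[of 6 8 7] by (simp add: eval_nat_numeral)
    show ?thesis unfolding h unfolding r_6_8_6 r_6_9_7 by (simp add: algebra_simps)
  qed
  have r_7_8_8: "c 7 8 8 = 0"
  proof -
    have h: "c 7 8 8 = c 6 8 7 - c 6 9 8" using R[of 6 8 8] by (simp add: eval_nat_numeral)
    show ?thesis unfolding h unfolding r_6_8_7 r_6_9_8 by (simp add: algebra_simps)
  qed
  have r_7_8_9: "c 7 8 9 = 0"
  proof -
    have h: "c 7 8 9 = c 6 8 8 - c 6 9 9" using R[of 6 8 9] by (simp add: eval_nat_numeral)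
    show ?thesis unfolding h unfolding r_6_8_8 r_6_9_9 by (simp add: algebra_simps)
  qed
  have r_7_9_0: "c 7 9 0 = 0"
  proof -
    have h: "c 7 9 0 = 0 - 0" using R[of 6 9 0] by (simp add: eval_nat_numeral)
    show ?thesis unfolding h by (simp add: algebra_simps)
  qed
  have r_7_9_1: "c 7 9 1 = 0"
  proof -
    have h: "c 7 9 1 = 0 - 0" using R[of 6 9 1] by (simp add: eval_nat_numeral)
    show ?thesis unfolding h by (simp add: algebra_simps)
  qed
  have r_7_9_2: "c 7 9 2 = 0"
  proof -
    have h: "c 7 9 2 = c 6 9 1 - 0" using R[of 6 9 2] by (simp add: eval_nat_numeral)
    show ?thesis unfolding h unfolding r_6_9_1 by (simp add: algebra_simps)
  qed
  have r_7_9_3: "c 7 9 3 = 0"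
  proof -
    have h: "c 7 9 3 = c 6 9 2 - 0" using R[of 6 9 3] by (simp add: eval_nat_numeral)
    show ?thesis unfolding h unfolding r_6_9_2 by (simp add: algebra_simps)
  qed
  have r_7_9_4: "c 7 9 4 = 0"
  proof -
    have h: "c 7 9 4 = c 6 9 3 - 0" using R[of 6 9 4] by (simp add: eval_nat_numeral)
    show ?thesis unfolding h unfolding r_6_9_3 by (simp add: algebra_simps)
  qed
  have r_7_9_5: "c 7 9 5 = 0"
  proof -
    have h: "c 7 9 5 = c 6 9 4 - 0" using R[of 6 9 5] by (simp add: eval_nat_numeral)
    show ?thesis unfolding h unfolding r_6_9_4 by (simp add: algebra_simps)
  qed
  have r_7_9_6: "c 7 9 6 = 0"
  proof -
    have h: "c 7 9 6 = c 6 9 5 - 0" using R[of 6 9 6] by (simp add: eval_nat_numeral)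
    show ?thesis unfolding h unfolding r_6_9_5 by (simp add: algebra_simps)
  qed
  have r_7_9_7: "c 7 9 7 = 0"
  proof -
    have h: "c 7 9 7 = c 6 9 6 - 0" using R[of 6 9 7] by (simp add: eval_nat_numeral)
    show ?thesis unfolding h unfolding r_6_9_6 by (simp add: algebra_simps)
  qed
  have r_7_9_8: "c 7 9 8 = 0"
  proof -
    have h: "c 7 9 8 = c 6 9 7 - 0" using R[of 6 9 8] by (simp add: eval_nat_numeral)
    show ?thesis unfolding h unfolding r_6_9_7 by (simp add: algebra_simps)
  qed
  have r_7_9_9: "c 7 9 9 = 0"
  proof -
    have h: "c 7 9 9 = c 6 9 8 - 0" using R[of 6 9 9] by (simp add: eval_nat_numeral)
    show ?thesis unfolding h unfolding r_6_9_8 by (simp add: algebra_simps)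
  qed
  have r_8_9_0: "c 8 9 0 = 0"
  proof -
    have h: "c 8 9 0 = 0 - 0" using R[of 7 9 0] by (simp add: eval_nat_numeral)
    show ?thesis unfolding h by (simp add: algebra_simps)
  qed
  have r_8_9_1: "c 8 9 1 = 0"
  proof -
    have h: "c 8 9 1 = 0 - 0" using R[of 7 9 1] by (simp add: eval_nat_numeral)
    show ?thesis unfolding h by (simp add: algebra_simps)
  qed
  have r_8_9_2: "c 8 9 2 = 0"
  proof -
    have h: "c 8 9 2 = c 7 9 1 - 0" using R[of 7 9 2] by (simp add: eval_nat_numeral)
    show ?thesis unfolding h unfolding r_7_9_1 by (simp add: algebra_simps)
  qed
  have r_8_9_3: "c 8 9 3 = 0"
  proof -
    have h: "c 8 9 3 = c 7 9 2 - 0" using R[of 7 9 3] by (simp add: eval_nat_numeral)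
    show ?thesis unfolding h unfolding r_7_9_2 by (simp add: algebra_simps)
  qed
  have r_8_9_4: "c 8 9 4 = 0"
  proof -
    have h: "c 8 9 4 = c 7 9 3 - 0" using R[of 7 9 4] by (simp add: eval_nat_numeral)
    show ?thesis unfolding h unfolding r_7_9_3 by (simp add: algebra_simps)
  qed
  have r_8_9_5: "c 8 9 5 = 0"
  proof -
    have h: "c 8 9 5 = c 7 9 4 - 0" using R[of 7 9 5] by (simp add: eval_nat_numeral)
    show ?thesis unfolding h unfolding r_7_9_4 by (simp add: algebra_simps)
  qed
  have r_8_9_6: "c 8 9 6 = 0"
  proof -
    have h: "c 8 9 6 = c 7 9 5 - 0" using R[of 7 9 6] by (simp add: eval_nat_numeral)
    show ?thesis unfolding h unfolding r_7_9_5 by (simp add: algebra_simps)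
  qed
  have r_8_9_7: "c 8 9 7 = 0"
  proof -
    have h: "c 8 9 7 = c 7 9 6 - 0" using R[of 7 9 7] by (simp add: eval_nat_numeral)
    show ?thesis unfolding h unfolding r_7_9_6 by (simp add: algebra_simps)
  qed
  have r_8_9_8: "c 8 9 8 = 0"
  proof -
    have h: "c 8 9 8 = c 7 9 7 - 0" using R[of 7 9 8] by (simp add: eval_nat_numeral)
    show ?thesis unfolding h unfolding r_7_9_7 by (simp add: algebra_simps)
  qed
  have r_8_9_9: "c 8 9 9 = 0"
  proof -
    have h: "c 8 9 9 = c 7 9 8 - 0" using R[of 7 9 9] by (simp add: eval_nat_numeral)
    show ?thesis unfolding h unfolding r_7_9_8 by (simp add: algebra_simps)
  qed
  have rel_1_4: "c 1 2 3 - c 1 3 4 = 0" using R[of 1 2 4] Z[of 2 4] by (simp add: eval_nat_numeral)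
  have p_3_4: "c 1 3 4 = c 1 2 3"
  proof -
    have "c 1 3 4 = c 1 2 3 + (-1) * (c 1 2 3 - c 1 3 4)" by (simp add: algebra_simps)
    with rel_1_4 show ?thesis by simp
  qed
  have rel_1_5: "c 1 2 4 - c 1 3 5 = 0" using R[of 1 2 5] Z[of 2 5] by (simp add: eval_nat_numeral)
  have p_3_5: "c 1 3 5 = c 1 2 4"
  proof -
    have "c 1 3 5 = c 1 2 4 + (-1) * (c 1 2 4 - c 1 3 5)" unfolding p_3_4 by (simp add: algebra_simps)
    with rel_1_5 show ?thesis by simp
  qed
  have rel_1_6: "c 1 2 5 - c 1 3 6 = 0" using R[of 1 2 6] Z[of 2 6] by (simp add: eval_nat_numeral)
  have p_3_6: "c 1 3 6 = c 1 2 5"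
  proof -
    have "c 1 3 6 = c 1 2 5 + (-1) * (c 1 2 5 - c 1 3 6)" unfolding p_3_4 p_3_5 by (simp add: algebra_simps)
    with rel_1_6 show ?thesis by simp
  qed
  have rel_1_7: "c 1 2 6 - c 1 3 7 = 0" using R[of 1 2 7] Z[of 2 7] by (simp add: eval_nat_numeral)
  have p_3_7: "c 1 3 7 = c 1 2 6"
  proof -
    have "c 1 3 7 = c 1 2 6 + (-1) * (c 1 2 6 - c 1 3 7)" unfolding p_3_4 p_3_5 p_3_6 by (simp add: algebra_simps)
    with rel_1_7 show ?thesis by simp
  qed
  have rel_1_8: "c 1 2 7 - c 1 3 8 = 0" using R[of 1 2 8] Z[of 2 8] by (simp add: eval_nat_numeral)
  have p_3_8: "c 1 3 8 = c 1 2 7"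
  proof -
    have "c 1 3 8 = c 1 2 7 + (-1) * (c 1 2 7 - c 1 3 8)" unfolding p_3_4 p_3_5 p_3_6 p_3_7 by (simp add: algebra_simps)
    with rel_1_8 show ?thesis by simp
  qed
  have rel_1_9: "c 1 2 8 - c 1 3 9 = 0" using R[of 1 2 9] Z[of 2 9] by (simp add: eval_nat_numeral)
  have p_3_9: "c 1 3 9 = c 1 2 8"
  proof -
    have "c 1 3 9 = c 1 2 8 + (-1) * (c 1 2 8 - c 1 3 9)" unfolding p_3_4 p_3_5 p_3_6 p_3_7 p_3_8 by (simp add: algebra_simps)
    with rel_1_9 show ?thesis by simp
  qed
  have rel_2_6: "c 2 3 5 - c 2 4 6 = 0" using R[of 2 3 6] Z[of 3 6] by (simp add: eval_nat_numeral)
  have p_5_6: "c 1 5 6 = - c 1 2 3 + 2 * c 1 4 5"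
  proof -
    have "c 1 5 6 = - c 1 2 3 + 2 * c 1 4 5 + (1) * (c 2 3 5 - c 2 4 6)" unfolding r_2_4_6 r_2_3_5 p_3_4 p_3_5 p_3_6 p_3_7 p_3_8 p_3_9 by (simp add: algebra_simps)
    with rel_2_6 show ?thesis by simp
  qed
  have rel_2_7: "c 2 3 6 - c 2 4 7 = 0" using R[of 2 3 7] Z[of 3 7] by (simp add: eval_nat_numeral)
  have p_5_7: "c 1 5 7 = - c 1 2 4 + 2 * c 1 4 6"
  proof -
    have "c 1 5 7 = - c 1 2 4 + 2 * c 1 4 6 + (1) * (c 2 3 6 - c 2 4 7)" unfolding r_2_4_7 r_2_3_6 p_3_4 p_3_5 p_3_6 p_3_7 p_3_8 p_3_9 p_5_6 by (simp add: algebra_simps)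
    with rel_2_7 show ?thesis by simp
  qed
  have rel_2_8: "c 2 3 7 - c 2 4 8 = 0" using R[of 2 3 8] Z[of 3 8] by (simp add: eval_nat_numeral)
  have p_5_8: "c 1 5 8 = - c 1 2 5 + 2 * c 1 4 7"
  proof -
    have "c 1 5 8 = - c 1 2 5 + 2 * c 1 4 7 + (1) * (c 2 3 7 - c 2 4 8)" unfolding r_2_4_8 r_2_3_7 p_3_4 p_3_5 p_3_6 p_3_7 p_3_8 p_3_9 p_5_6 p_5_7 by (simp add: algebra_simps)
    with rel_2_8 show ?thesis by simp
  qed
  have rel_2_9: "c 2 3 8 - c 2 4 9 = 0" using R[of 2 3 9] Z[of 3 9] by (simp add: eval_nat_numeral)
  have p_5_9: "c 1 5 9 = - c 1 2 6 + 2 * c 1 4 8"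
  proof -
    have "c 1 5 9 = - c 1 2 6 + 2 * c 1 4 8 + (1) * (c 2 3 8 - c 2 4 9)" unfolding r_2_4_9 r_2_3_8 p_3_4 p_3_5 p_3_6 p_3_7 p_3_8 p_3_9 p_5_6 p_5_7 p_5_8 by (simp add: algebra_simps)
    with rel_2_9 show ?thesis by simp
  qed
  have rel_3_8: "c 3 4 7 - c 3 5 8 = 0" using R[of 3 4 8] Z[of 4 8] by (simp add: eval_nat_numeral)
  have p_7_8: "c 1 7 8 = 3 * c 1 2 3 - 5 * c 1 4 5 + 3 * c 1 6 7"
  proof -
    have "c 1 7 8 = 3 * c 1 2 3 - 5 * c 1 4 5 + 3 * c 1 6 7 + (-1) * (c 3 4 7 - c 3 5 8)" unfolding r_3_5_8 r_3_4_7 p_3_4 p_3_5 p_3_6 p_3_7 p_3_8 p_3_9 p_5_6 p_5_7 p_5_8 p_5_9 by (simp add: algebra_simps)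
    with rel_3_8 show ?thesis by simp
  qed
  have rel_3_9: "c 3 4 8 - c 3 5 9 = 0" using R[of 3 4 9] Z[of 4 9] by (simp add: eval_nat_numeral)
  have p_7_9: "c 1 7 9 = 3 * c 1 2 4 - 5 * c 1 4 6 + 3 * c 1 6 8"
  proof -
    have "c 1 7 9 = 3 * c 1 2 4 - 5 * c 1 4 6 + 3 * c 1 6 8 + (-1) * (c 3 4 8 - c 3 5 9)" unfolding r_3_5_9 r_3_4_8 p_3_4 p_3_5 p_3_6 p_3_7 p_3_8 p_3_9 p_5_6 p_5_7 p_5_8 p_5_9 p_7_8 by (simp add: algebra_simps)
    with rel_3_9 show ?thesis by simp
  qed
  have j1: "(\<Sum>m<10. c 2 3 m * c 1 m 6) + (\<Sum>m<10. c 3 1 m * c 2 m 6) + (\<Sum>m<10. c 1 2 m * c 3 m 6) = -2 * (c 1 2 3 - c 1 4 5)^2" unfolding sum10 r_2_3_0 CA[where i=0 and j=1 and k=6] c0_1_6 CA[where i=1 and j=3 and k=0] z_3_0 CA[where i=0 and j=2 and k=6] c0_2_6 z_2_0 CA[where i=0 and j=3 and k=6] c0_3_6 r_2_3_1 Z[of 1 6] CA[where i=1 and j=3 and k=1] z_3_1 CA[where i=1 and j=2 and k=6] z_2_1 CA[where i=1 and j=3 and k=6] p_3_6 r_2_3_2 CA[where i=1 and j=3 and k=2] z_3_2 Z[of 2 6] z_2_2 CA[where i=2 and j=3 and k=6] r_2_3_6 p_3_5 r_2_3_3 CA[where i=1 and j=3 and k=3] z_3_3 Z[of 3 6] r_2_3_4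 CA[where i=1 and j=3 and k=4] p_3_4 r_2_4_6 p_5_6 r_3_4_6 r_2_3_5 CA[where i=1 and j=3 and k=5] r_2_5_6 r_3_5_6 z_6_6 r_2_6_6 r_3_6_6 r_2_3_7 z_7_6 CA[where i=1 and j=3 and k=7] p_3_7 r_2_7_6 r_3_7_6 r_2_3_8 z_8_6 CA[where i=1 and j=3 and k=8] p_3_8 r_2_8_6 r_3_8_6 r_2_3_9 z_9_6 CA[where i=1 and j=3 and k=9] p_3_9 r_2_9_6 r_3_9_6 by (simp add: algebra_simps power2_eq_square)
  have e45: "c 1 4 5 = c 1 2 3" using j1 J[where t=6 and i=1 and j=2 and l=3] by simp
  have j2: "(\<Sum>m<10. c 2 5 m * c 1 m 8) + (\<Sum>m<10. c 5 1 m * c 2 m 8) + (\<Sum>m<10. c 1 2 m * c 5 m 8) = -3 * (c 1 2 3 - c 1 6 7)^2" unfolding sum10 r_2_5_0 e45 CA[where i=0 and j=1 and k=8] c0_1_8 CA[where i=1 and j=5 and k=0] z_5_0 CA[where i=0 and j=2 and k=8] c0_2_8 z_2_0 CA[where i=0 and j=5 and k=8] c0_5_8 r_2_5_1 Z[of 1 8] CA[where i=1 and j=5 and k=1] z_5_1 CA[where i=1 and j=2 and k=8] z_2_1 CA[where i=1 and j=5 and k=8] p_5_8 r_2_5_2 CA[where i=1 and j=5 and k=2] z_5_2 Z[of 2 8] z_2_2 CA[where i=2 and j=5 and k=8] r_2_5_8 p_5_7 r_2_5_3 p_3_8 CA[where i=1 and j=5 and k=3] z_5_3 r_2_3_8 p_3_7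 CA[where i=3 and j=5 and k=8] r_3_5_8 p_5_6 p_7_8 r_2_5_4 CA[where i=1 and j=5 and k=4] z_5_4 r_2_4_8 CA[where i=4 and j=5 and k=8] r_4_5_8 r_2_5_5 CA[where i=1 and j=5 and k=5] z_5_5 Z[of 5 8] r_2_5_6 CA[where i=1 and j=5 and k=6] r_2_6_8 r_5_6_8 r_2_5_7 CA[where i=1 and j=5 and k=7] r_2_7_8 r_5_7_8 z_8_8 r_2_8_8 r_5_8_8 r_2_5_9 z_9_8 CA[where i=1 and j=5 and k=9] p_5_9 r_2_9_8 r_5_9_8 by (simp add: algebra_simps power2_eq_square)
  have e67: "c 1 6 7 = c 1 2 3" using j2 J[where t=8 and i=1 and j=2 and l=5] by simp
  define a :: "nat \<Rightarrow> 'k" where "a = (\<lambda>n. if n = 1 then c 1 2 3 else if n = 2 then 3 * c 1 2 4 - 5 * c 1 4 6 + 3 * c 1 6 8 else if n = 4 then - 3 * c 1 2 4 + 5 * c 1 4 6 - 2 * c 1 6 8 else if n = 5 then c 1 6 9 else if n = 7 then 2 * c 1 2 4 - 3 * c 1 4 6 + c 1 6 8 else if n = 8 then - c 1 2 5 + 2 * c 1 4 7 - c 1 6 9 else if n = 9 then - c 1 2 6 + 2 * c 1 4 8 else if n = 10 then 2 * c 1 2 5 - 3 * c 1 4 7 + c 1 6 9 else if n = 11 then c 1 2 6 - c 1 4 8 else if n = 12 then c 1 4 9 else if n = 13 then c 1 2 7 - c 1 4 9 else if n = 14 then c 1 2 8 else if n = 15 then c 1 2 9 else 0)"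
  have a_1: "a 1 = c 1 2 3" by (simp add: a_def)
  have a_2: "a 2 = 3 * c 1 2 4 - 5 * c 1 4 6 + 3 * c 1 6 8" by (simp add: a_def)
  have a_4: "a 4 = - 3 * c 1 2 4 + 5 * c 1 4 6 - 2 * c 1 6 8" by (simp add: a_def)
  have a_5: "a 5 = c 1 6 9" by (simp add: a_def)
  have a_7: "a 7 = 2 * c 1 2 4 - 3 * c 1 4 6 + c 1 6 8" by (simp add: a_def)
  have a_8: "a 8 = - c 1 2 5 + 2 * c 1 4 7 - c 1 6 9" by (simp add: a_def)
  have a_9: "a 9 = - c 1 2 6 + 2 * c 1 4 8" by (simp add: a_def)
  have a_10: "a 10 = 2 * c 1 2 5 - 3 * c 1 4 7 + c 1 6 9" by (simp add: a_def)
  have a_11: "a 11 = c 1 2 6 - c 1 4 8" by (simp add: a_def)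
  have a_12: "a 12 = c 1 4 9" by (simp add: a_def)
  have a_13: "a 13 = c 1 2 7 - c 1 4 9" by (simp add: a_def)
  have a_14: "a 14 = c 1 2 8" by (simp add: a_def)
  have a_15: "a 15 = c 1 2 9" by (simp add: a_def)
  have pr_0_1: "F10 a 0 1 = map (c 0 1) [0..<10]" unfolding F10_0_1 map10 c0_1_0 c0_1_1 c0_1_2 c0_1_3 c0_1_4 c0_1_5 c0_1_6 c0_1_7 c0_1_8 c0_1_9 a_1 a_2 a_4 a_5 a_7 a_8 a_9 a_10 a_11 a_12 a_13 a_14 a_15 by (simp add: algebra_simps)
  have pr_0_2: "F10 a 0 2 = map (c 0 2) [0..<10]" unfolding F10_0_2 map10 c0_2_0 c0_2_1 c0_2_2 c0_2_3 c0_2_4 c0_2_5 c0_2_6 c0_2_7 c0_2_8 c0_2_9 a_1 a_2 a_4 a_5 a_7 a_8 a_9 a_10 a_11 a_12 a_13 a_14 a_15 by (simp add: algebra_simps)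
  have pr_0_3: "F10 a 0 3 = map (c 0 3) [0..<10]" unfolding F10_0_3 map10 c0_3_0 c0_3_1 c0_3_2 c0_3_3 c0_3_4 c0_3_5 c0_3_6 c0_3_7 c0_3_8 c0_3_9 a_1 a_2 a_4 a_5 a_7 a_8 a_9 a_10 a_11 a_12 a_13 a_14 a_15 by (simp add: algebra_simps)
  have pr_0_4: "F10 a 0 4 = map (c 0 4) [0..<10]" unfolding F10_0_4 map10 c0_4_0 c0_4_1 c0_4_2 c0_4_3 c0_4_4 c0_4_5 c0_4_6 c0_4_7 c0_4_8 c0_4_9 a_1 a_2 a_4 a_5 a_7 a_8 a_9 a_10 a_11 a_12 a_13 a_14 a_15 by (simp add: algebra_simps)
  have pr_0_5: "F10 a 0 5 = map (c 0 5) [0..<10]" unfolding F10_0_5 map10 c0_5_0 c0_5_1 c0_5_2 c0_5_3 c0_5_4 c0_5_5 c0_5_6 c0_5_7 c0_5_8 c0_5_9 a_1 a_2 a_4 a_5 a_7 a_8 a_9 a_10 a_11 a_12 a_13 a_14 a_15 by (simp add: algebra_simps)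
  have pr_0_6: "F10 a 0 6 = map (c 0 6) [0..<10]" unfolding F10_0_6 map10 c0_6_0 c0_6_1 c0_6_2 c0_6_3 c0_6_4 c0_6_5 c0_6_6 c0_6_7 c0_6_8 c0_6_9 a_1 a_2 a_4 a_5 a_7 a_8 a_9 a_10 a_11 a_12 a_13 a_14 a_15 by (simp add: algebra_simps)
  have pr_0_7: "F10 a 0 7 = map (c 0 7) [0..<10]" unfolding F10_0_7 map10 c0_7_0 c0_7_1 c0_7_2 c0_7_3 c0_7_4 c0_7_5 c0_7_6 c0_7_7 c0_7_8 c0_7_9 a_1 a_2 a_4 a_5 a_7 a_8 a_9 a_10 a_11 a_12 a_13 a_14 a_15 by (simp add: algebra_simps)
  have pr_0_8: "F10 a 0 8 = map (c 0 8) [0..<10]" unfolding F10_0_8 map10 c0_8_0 c0_8_1 c0_8_2 c0_8_3 c0_8_4 c0_8_5 c0_8_6 c0_8_7 c0_8_8 c0_8_9 a_1 a_2 a_4 a_5 a_7 a_8 a_9 a_10 a_11 a_12 a_13 a_14 a_15 by (simp add: algebra_simps)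
  have pr_0_9: "F10 a 0 9 = map (c 0 9) [0..<10]" unfolding F10_0_9 map10 c0_9_0 c0_9_1 c0_9_2 c0_9_3 c0_9_4 c0_9_5 c0_9_6 c0_9_7 c0_9_8 c0_9_9 a_1 a_2 a_4 a_5 a_7 a_8 a_9 a_10 a_11 a_12 a_13 a_14 a_15 by (simp add: algebra_simps)
  have pr_1_2: "F10 a 1 2 = map (c 1 2) [0..<10]" unfolding F10_1_2 map10 z_2_0 z_2_1 z_2_2 e45 e67 a_1 a_2 a_4 a_5 a_7 a_8 a_9 a_10 a_11 a_12 a_13 a_14 a_15 by (simp add: algebra_simps)
  have pr_1_3: "F10 a 1 3 = map (c 1 3) [0..<10]" unfolding F10_1_3 map10 z_3_0 z_3_1 z_3_2 z_3_3 p_3_4 e45 e67 p_3_5 p_3_6 p_3_7 p_3_8 p_3_9 a_1 a_2 a_4 a_5 a_7 a_8 a_9 a_10 a_11 a_12 a_13 a_14 a_15 by (simp add: algebra_simps)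
  have pr_1_4: "F10 a 1 4 = map (c 1 4) [0..<10]" unfolding F10_1_4 map10 z_4_0 z_4_1 z_4_2 z_4_3 z_4_4 e45 e67 a_1 a_2 a_4 a_5 a_7 a_8 a_9 a_10 a_11 a_12 a_13 a_14 a_15 by (simp add: algebra_simps)
  have pr_1_5: "F10 a 1 5 = map (c 1 5) [0..<10]" unfolding F10_1_5 map10 z_5_0 z_5_1 z_5_2 z_5_3 z_5_4 z_5_5 p_5_6 e45 e67 p_5_7 p_5_8 p_5_9 a_1 a_2 a_4 a_5 a_7 a_8 a_9 a_10 a_11 a_12 a_13 a_14 a_15 by (simp add: algebra_simps)
  have pr_1_6: "F10 a 1 6 = map (c 1 6) [0..<10]" unfolding F10_1_6 map10 z_6_0 z_6_1 z_6_2 z_6_3 z_6_4 z_6_5 z_6_6 e45 e67 a_1 a_2 a_4 a_5 a_7 a_8 a_9 a_10 a_11 a_12 a_13 a_14 a_15 by (simp add: algebra_simps)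
  have pr_1_7: "F10 a 1 7 = map (c 1 7) [0..<10]" unfolding F10_1_7 map10 z_7_0 z_7_1 z_7_2 z_7_3 z_7_4 z_7_5 z_7_6 z_7_7 p_7_8 e45 e67 p_7_9 a_1 a_2 a_4 a_5 a_7 a_8 a_9 a_10 a_11 a_12 a_13 a_14 a_15 by (simp add: algebra_simps)
  have pr_1_8: "F10 a 1 8 = map (c 1 8) [0..<10]" unfolding F10_1_8 map10 z_8_0 z_8_1 z_8_2 z_8_3 z_8_4 z_8_5 z_8_6 z_8_7 z_8_8 z_8_9 a_1 a_2 a_4 a_5 a_7 a_8 a_9 a_10 a_11 a_12 a_13 a_14 a_15 by (simp add: algebra_simps)
  have pr_1_9: "F10 a 1 9 = map (c 1 9) [0..<10]" unfolding F10_1_9 map10 z_9_0 z_9_1 z_9_2 z_9_3 z_9_4 z_9_5 z_9_6 z_9_7 z_9_8 z_9_9 a_1 a_2 a_4 a_5 a_7 a_8 a_9 a_10 a_11 a_12 a_13 a_14 a_15 by (simp add: algebra_simps)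
  have pr_2_3: "F10 a 2 3 = map (c 2 3) [0..<10]" unfolding F10_2_3 map10 r_2_3_0 e45 e67 r_2_3_1 r_2_3_2 r_2_3_3 r_2_3_4 r_2_3_5 p_3_4 r_2_3_6 p_3_5 r_2_3_7 p_3_6 r_2_3_8 p_3_7 r_2_3_9 p_3_8 a_1 a_2 a_4 a_5 a_7 a_8 a_9 a_10 a_11 a_12 a_13 a_14 a_15 by (simp add: algebra_simps)
  have pr_2_4: "F10 a 2 4 = map (c 2 4) [0..<10]" unfolding F10_2_4 map10 r_2_4_0 e45 e67 r_2_4_1 r_2_4_2 r_2_4_3 r_2_4_4 r_2_4_5 r_2_4_6 p_5_6 r_2_4_7 p_5_7 r_2_4_8 p_5_8 r_2_4_9 p_5_9 a_1 a_2 a_4 a_5 a_7 a_8 a_9 a_10 a_11 a_12 a_13 a_14 a_15 by (simp add: algebra_simps)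
  have pr_2_5: "F10 a 2 5 = map (c 2 5) [0..<10]" unfolding F10_2_5 map10 r_2_5_0 e45 e67 r_2_5_1 r_2_5_2 r_2_5_3 r_2_5_4 r_2_5_5 r_2_5_6 r_2_5_7 p_5_6 r_2_5_8 p_5_7 r_2_5_9 p_5_8 a_1 a_2 a_4 a_5 a_7 a_8 a_9 a_10 a_11 a_12 a_13 a_14 a_15 by (simp add: algebra_simps)
  have pr_2_6: "F10 a 2 6 = map (c 2 6) [0..<10]" unfolding F10_2_6 map10 r_2_6_0 e45 e67 r_2_6_1 r_2_6_2 r_2_6_3 r_2_6_4 r_2_6_5 r_2_6_6 r_2_6_7 r_2_6_8 p_7_8 r_2_6_9 p_7_9 a_1 a_2 a_4 a_5 a_7 a_8 a_9 a_10 a_11 a_12 a_13 a_14 a_15 by (simp add: algebra_simps)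
  have pr_2_7: "F10 a 2 7 = map (c 2 7) [0..<10]" unfolding F10_2_7 map10 r_2_7_0 e45 e67 r_2_7_1 r_2_7_2 r_2_7_3 r_2_7_4 r_2_7_5 r_2_7_6 r_2_7_7 r_2_7_8 r_2_7_9 p_7_8 a_1 a_2 a_4 a_5 a_7 a_8 a_9 a_10 a_11 a_12 a_13 a_14 a_15 by (simp add: algebra_simps)
  have pr_2_8: "F10 a 2 8 = map (c 2 8) [0..<10]" unfolding F10_2_8 map10 r_2_8_0 e45 e67 r_2_8_1 r_2_8_2 r_2_8_3 r_2_8_4 r_2_8_5 r_2_8_6 r_2_8_7 r_2_8_8 r_2_8_9 a_1 a_2 a_4 a_5 a_7 a_8 a_9 a_10 a_11 a_12 a_13 a_14 a_15 by (simp add: algebra_simps)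
  have pr_2_9: "F10 a 2 9 = map (c 2 9) [0..<10]" unfolding F10_2_9 map10 r_2_9_0 e45 e67 r_2_9_1 r_2_9_2 r_2_9_3 r_2_9_4 r_2_9_5 r_2_9_6 r_2_9_7 r_2_9_8 r_2_9_9 a_1 a_2 a_4 a_5 a_7 a_8 a_9 a_10 a_11 a_12 a_13 a_14 a_15 by (simp add: algebra_simps)
  have pr_3_4: "F10 a 3 4 = map (c 3 4) [0..<10]" unfolding F10_3_4 map10 r_3_4_0 e45 e67 r_3_4_1 r_3_4_2 r_3_4_3 r_3_4_4 r_3_4_5 r_3_4_6 r_3_4_7 p_5_6 r_3_4_8 p_5_7 r_3_4_9 p_5_8 a_1 a_2 a_4 a_5 a_7 a_8 a_9 a_10 a_11 a_12 a_13 a_14 a_15 by (simp add: algebra_simps)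
  have pr_3_5: "F10 a 3 5 = map (c 3 5) [0..<10]" unfolding F10_3_5 map10 r_3_5_0 e45 e67 r_3_5_1 r_3_5_2 r_3_5_3 r_3_5_4 r_3_5_5 r_3_5_6 r_3_5_7 r_3_5_8 p_5_6 p_7_8 r_3_5_9 p_5_7 p_7_9 a_1 a_2 a_4 a_5 a_7 a_8 a_9 a_10 a_11 a_12 a_13 a_14 a_15 by (simp add: algebra_simps)
  have pr_3_6: "F10 a 3 6 = map (c 3 6) [0..<10]" unfolding F10_3_6 map10 r_3_6_0 e45 e67 r_3_6_1 r_3_6_2 r_3_6_3 r_3_6_4 r_3_6_5 r_3_6_6 r_3_6_7 r_3_6_8 r_3_6_9 p_7_8 a_1 a_2 a_4 a_5 a_7 a_8 a_9 a_10 a_11 a_12 a_13 a_14 a_15 by (simp add: algebra_simps)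
  have pr_3_7: "F10 a 3 7 = map (c 3 7) [0..<10]" unfolding F10_3_7 map10 r_3_7_0 e45 e67 r_3_7_1 r_3_7_2 r_3_7_3 r_3_7_4 r_3_7_5 r_3_7_6 r_3_7_7 r_3_7_8 r_3_7_9 a_1 a_2 a_4 a_5 a_7 a_8 a_9 a_10 a_11 a_12 a_13 a_14 a_15 by (simp add: algebra_simps)
  have pr_3_8: "F10 a 3 8 = map (c 3 8) [0..<10]" unfolding F10_3_8 map10 r_3_8_0 e45 e67 r_3_8_1 r_3_8_2 r_3_8_3 r_3_8_4 r_3_8_5 r_3_8_6 r_3_8_7 r_3_8_8 r_3_8_9 a_1 a_2 a_4 a_5 a_7 a_8 a_9 a_10 a_11 a_12 a_13 a_14 a_15 by (simp add: algebra_simps)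
  have pr_3_9: "F10 a 3 9 = map (c 3 9) [0..<10]" unfolding F10_3_9 map10 r_3_9_0 e45 e67 r_3_9_1 r_3_9_2 r_3_9_3 r_3_9_4 r_3_9_5 r_3_9_6 r_3_9_7 r_3_9_8 r_3_9_9 a_1 a_2 a_4 a_5 a_7 a_8 a_9 a_10 a_11 a_12 a_13 a_14 a_15 by (simp add: algebra_simps)
  have pr_4_5: "F10 a 4 5 = map (c 4 5) [0..<10]" unfolding F10_4_5 map10 r_4_5_0 e45 e67 r_4_5_1 r_4_5_2 r_4_5_3 r_4_5_4 r_4_5_5 r_4_5_6 r_4_5_7 r_4_5_8 r_4_5_9 p_5_6 p_7_8 a_1 a_2 a_4 a_5 a_7 a_8 a_9 a_10 a_11 a_12 a_13 a_14 a_15 by (simp add: algebra_simps)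
  have pr_4_6: "F10 a 4 6 = map (c 4 6) [0..<10]" unfolding F10_4_6 map10 r_4_6_0 e45 e67 r_4_6_1 r_4_6_2 r_4_6_3 r_4_6_4 r_4_6_5 r_4_6_6 r_4_6_7 r_4_6_8 r_4_6_9 a_1 a_2 a_4 a_5 a_7 a_8 a_9 a_10 a_11 a_12 a_13 a_14 a_15 by (simp add: algebra_simps)
  have pr_4_7: "F10 a 4 7 = map (c 4 7) [0..<10]" unfolding F10_4_7 map10 r_4_7_0 e45 e67 r_4_7_1 r_4_7_2 r_4_7_3 r_4_7_4 r_4_7_5 r_4_7_6 r_4_7_7 r_4_7_8 r_4_7_9 a_1 a_2 a_4 a_5 a_7 a_8 a_9 a_10 a_11 a_12 a_13 a_14 a_15 by (simp add: algebra_simps)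
  have pr_4_8: "F10 a 4 8 = map (c 4 8) [0..<10]" unfolding F10_4_8 map10 r_4_8_0 e45 e67 r_4_8_1 r_4_8_2 r_4_8_3 r_4_8_4 r_4_8_5 r_4_8_6 r_4_8_7 r_4_8_8 r_4_8_9 a_1 a_2 a_4 a_5 a_7 a_8 a_9 a_10 a_11 a_12 a_13 a_14 a_15 by (simp add: algebra_simps)
  have pr_4_9: "F10 a 4 9 = map (c 4 9) [0..<10]" unfolding F10_4_9 map10 r_4_9_0 e45 e67 r_4_9_1 r_4_9_2 r_4_9_3 r_4_9_4 r_4_9_5 r_4_9_6 r_4_9_7 r_4_9_8 r_4_9_9 a_1 a_2 a_4 a_5 a_7 a_8 a_9 a_10 a_11 a_12 a_13 a_14 a_15 by (simp add: algebra_simps)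
  have pr_5_6: "F10 a 5 6 = map (c 5 6) [0..<10]" unfolding F10_5_6 map10 r_5_6_0 e45 e67 r_5_6_1 r_5_6_2 r_5_6_3 r_5_6_4 r_5_6_5 r_5_6_6 r_5_6_7 r_5_6_8 r_5_6_9 a_1 a_2 a_4 a_5 a_7 a_8 a_9 a_10 a_11 a_12 a_13 a_14 a_15 by (simp add: algebra_simps)
  have pr_5_7: "F10 a 5 7 = map (c 5 7) [0..<10]" unfolding F10_5_7 map10 r_5_7_0 e45 e67 r_5_7_1 r_5_7_2 r_5_7_3 r_5_7_4 r_5_7_5 r_5_7_6 r_5_7_7 r_5_7_8 r_5_7_9 a_1 a_2 a_4 a_5 a_7 a_8 a_9 a_10 a_11 a_12 a_13 a_14 a_15 by (simp add: algebra_simps)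
  have pr_5_8: "F10 a 5 8 = map (c 5 8) [0..<10]" unfolding F10_5_8 map10 r_5_8_0 e45 e67 r_5_8_1 r_5_8_2 r_5_8_3 r_5_8_4 r_5_8_5 r_5_8_6 r_5_8_7 r_5_8_8 r_5_8_9 a_1 a_2 a_4 a_5 a_7 a_8 a_9 a_10 a_11 a_12 a_13 a_14 a_15 by (simp add: algebra_simps)
  have pr_5_9: "F10 a 5 9 = map (c 5 9) [0..<10]" unfolding F10_5_9 map10 r_5_9_0 e45 e67 r_5_9_1 r_5_9_2 r_5_9_3 r_5_9_4 r_5_9_5 r_5_9_6 r_5_9_7 r_5_9_8 r_5_9_9 a_1 a_2 a_4 a_5 a_7 a_8 a_9 a_10 a_11 a_12 a_13 a_14 a_15 by (simp add: algebra_simps)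
  have pr_6_7: "F10 a 6 7 = map (c 6 7) [0..<10]" unfolding F10_6_7 map10 r_6_7_0 e45 e67 r_6_7_1 r_6_7_2 r_6_7_3 r_6_7_4 r_6_7_5 r_6_7_6 r_6_7_7 r_6_7_8 r_6_7_9 a_1 a_2 a_4 a_5 a_7 a_8 a_9 a_10 a_11 a_12 a_13 a_14 a_15 by (simp add: algebra_simps)
  have pr_6_8: "F10 a 6 8 = map (c 6 8) [0..<10]" unfolding F10_6_8 map10 r_6_8_0 e45 e67 r_6_8_1 r_6_8_2 r_6_8_3 r_6_8_4 r_6_8_5 r_6_8_6 r_6_8_7 r_6_8_8 r_6_8_9 a_1 a_2 a_4 a_5 a_7 a_8 a_9 a_10 a_11 a_12 a_13 a_14 a_15 by (simp add: algebra_simps)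
  have pr_6_9: "F10 a 6 9 = map (c 6 9) [0..<10]" unfolding F10_6_9 map10 r_6_9_0 e45 e67 r_6_9_1 r_6_9_2 r_6_9_3 r_6_9_4 r_6_9_5 r_6_9_6 r_6_9_7 r_6_9_8 r_6_9_9 a_1 a_2 a_4 a_5 a_7 a_8 a_9 a_10 a_11 a_12 a_13 a_14 a_15 by (simp add: algebra_simps)
  have pr_7_8: "F10 a 7 8 = map (c 7 8) [0..<10]" unfolding F10_7_8 map10 r_7_8_0 e45 e67 r_7_8_1 r_7_8_2 r_7_8_3 r_7_8_4 r_7_8_5 r_7_8_6 r_7_8_7 r_7_8_8 r_7_8_9 a_1 a_2 a_4 a_5 a_7 a_8 a_9 a_10 a_11 a_12 a_13 a_14 a_15 by (simp add: algebra_simps)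
  have pr_7_9: "F10 a 7 9 = map (c 7 9) [0..<10]" unfolding F10_7_9 map10 r_7_9_0 e45 e67 r_7_9_1 r_7_9_2 r_7_9_3 r_7_9_4 r_7_9_5 r_7_9_6 r_7_9_7 r_7_9_8 r_7_9_9 a_1 a_2 a_4 a_5 a_7 a_8 a_9 a_10 a_11 a_12 a_13 a_14 a_15 by (simp add: algebra_simps)
  have pr_8_9: "F10 a 8 9 = map (c 8 9) [0..<10]" unfolding F10_8_9 map10 r_8_9_0 e45 e67 r_8_9_1 r_8_9_2 r_8_9_3 r_8_9_4 r_8_9_5 r_8_9_6 r_8_9_7 r_8_9_8 r_8_9_9 a_1 a_2 a_4 a_5 a_7 a_8 a_9 a_10 a_11 a_12 a_13 a_14 a_15 by (simp add: algebra_simps)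
  have k0: "(\<Sum>m<10. c 2 5 m * c 1 m 9) + (\<Sum>m<10. c 5 1 m * c 2 m 9) + (\<Sum>m<10. c 1 2 m * c 5 m 9) = - (a 1 * (2 * a 2 + 7 * a 4 + 7 * a 7))" unfolding sum10 r_2_5_0 e45 e67 CA[where i=0 and j=1 and k=9] c0_1_9 CA[where i=1 and j=5 and k=0] z_5_0 CA[where i=0 and j=2 and k=9] c0_2_9 z_2_0 CA[where i=0 and j=5 and k=9] c0_5_9 r_2_5_1 Z[of 1 9] CA[where i=1 and j=5 and k=1] z_5_1 CA[where i=1 and j=2 and k=9] z_2_1 CA[where i=1 and j=5 and k=9] p_5_9 r_2_5_2 CA[where i=1 and j=5 and k=2] z_5_2 Z[of 2 9] z_2_2 CA[where i=2 and j=5 and k=9] r_2_5_9 p_5_8 r_2_5_3 p_3_9 CA[where i=1 and j=5 and k=3] z_5_3 r_2_3_9 p_3_8 CA[where i=3 and j=5 and k=9] r_3_5_9 p_5_7 p_7_9 r_2_5_4 CA[where i=1 and j=5 and k=4] z_5_4 r_2_4_9 CA[where i=4 and j=5 and k=9] r_4_5_9 p_5_6 p_7_8 r_2_5_5 CA[where i=1 and j=5 and k=5] z_5_5 Z[of 5 9] r_2_5_6 CA[where i=1 and j=5 and k=6] r_2_6_9 r_5_6_9 r_2_5_7 CA[where i=1 and j=5 and k=7] r_2_7_9 r_5_7_9 r_2_5_8 z_8_9 CA[where i=1 and j=5 and k=8] r_2_8_9 r_5_8_9 z_9_9 r_2_9_9 r_5_9_9 a_1 a_2 a_4 a_5 a_7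 a_8 a_9 a_10 a_11 a_12 a_13 a_14 a_15 by (simp add: algebra_simps power2_eq_square)
  have kk0: "a 1 * (2 * a 2 + 7 * a 4 + 7 * a 7) = 0"
  proof -
    have tt: "(9::nat) < 10" by simp
    from J[where t=9 and i=1 and j=2 and l=5, OF tt] have "- (a 1 * (2 * a 2 + 7 * a 4 + 7 * a 7)) = 0" unfolding k0 .
    thus ?thesis by (rule neg_equal_0_iff_equal[THEN iffD1])
  qed
  have k1: "(\<Sum>m<10. c 2 3 m * c 1 m 8) + (\<Sum>m<10. c 3 1 m * c 2 m 8) + (\<Sum>m<10. c 1 2 m * c 3 m 8) = - (3 * a 4 ^ 2 + 3 * a 4 * a 7 - 2 * a 2 * a 7)" unfolding sum10 r_2_3_0 e45 e67 CA[where i=0 and j=1 and k=8] c0_1_8 CA[where i=1 and j=3 and k=0] z_3_0 CA[where i=0 and j=2 and k=8] c0_2_8 z_2_0 CA[where i=0 and j=3 and k=8] c0_3_8 r_2_3_1 Z[of 1 8] CA[where i=1 and j=3 and k=1] z_3_1 CA[where i=1 and j=2 and k=8] z_2_1 CA[where i=1 and j=3 and k=8] p_3_8 r_2_3_2 CA[where i=1 and j=3 and k=2] z_3_2 Z[of 2 8] z_2_2 CA[where i=2 and j=3 and k=8] r_2_3_8 p_3_7 r_2_3_3 CA[where i=1 and j=3 and k=3] z_3_3 Z[of 3 8] r_2_3_4 CA[where i=1 and j=3 and k=4] p_3_4 r_2_4_8 p_5_8 r_3_4_8 p_5_7 r_2_3_5 CA[where i=1 and j=3 and k=5] p_3_5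 r_2_5_8 r_3_5_8 p_5_6 p_7_8 r_2_3_6 CA[where i=1 and j=3 and k=6] p_3_6 r_2_6_8 r_3_6_8 r_2_3_7 CA[where i=1 and j=3 and k=7] r_2_7_8 r_3_7_8 z_8_8 r_2_8_8 r_3_8_8 r_2_3_9 z_9_8 CA[where i=1 and j=3 and k=9] p_3_9 r_2_9_8 r_3_9_8 a_1 a_2 a_4 a_5 a_7 a_8 a_9 a_10 a_11 a_12 a_13 a_14 a_15 by (simp add: algebra_simps power2_eq_square)
  have kk1: "3 * a 4 ^ 2 + 3 * a 4 * a 7 - 2 * a 2 * a 7 = 0"
  proof -
    have tt: "(8::nat) < 10" by simp
    from J[where t=8 and i=1 and j=2 and l=3, OF tt] have "- (3 * a 4 ^ 2 + 3 * a 4 * a 7 - 2 * a 2 * a 7) = 0" unfolding k1 .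
    thus ?thesis by (rule neg_equal_0_iff_equal[THEN iffD1])
  qed
  have k2: "(\<Sum>m<10. c 2 3 m * c 1 m 9) + (\<Sum>m<10. c 3 1 m * c 2 m 9) + (\<Sum>m<10. c 1 2 m * c 3 m 9) = - (a 1 * (2 * a 9 + 5 * a 11) - 2 * a 2 * a 10 + a 4 * (7 * a 8 - 2 * a 10) + a 7 * (- 3 * a 5 + 2 * a 8 - 7 * a 10))" unfolding sum10 r_2_3_0 e45 e67 CA[where i=0 and j=1 and k=9] c0_1_9 CA[where i=1 and j=3 and k=0] z_3_0 CA[where i=0 and j=2 and k=9] c0_2_9 z_2_0 CA[where i=0 and j=3 and k=9] c0_3_9 r_2_3_1 Z[of 1 9] CA[where i=1 and j=3 and k=1] z_3_1 CA[where i=1 and j=2 and k=9] z_2_1 CA[where i=1 and j=3 and k=9] p_3_9 r_2_3_2 CA[where i=1 and j=3 and k=2] z_3_2 Z[of 2 9] z_2_2 CA[where i=2 and j=3 and k=9] r_2_3_9 p_3_8 r_2_3_3 CA[where i=1 and j=3 and k=3] z_3_3 Z[of 3 9] r_2_3_4 CA[where i=1 and j=3 and k=4] p_3_4 r_2_4_9 p_5_9 r_3_4_9 p_5_8 r_2_3_5 CA[where i=1 and j=3 and k=5] p_3_5 r_2_5_9 r_3_5_9 p_5_7 p_7_9 r_2_3_6 CA[where i=1 and j=3 and k=6] p_3_6 r_2_6_9 r_3_6_9 p_7_8 r_2_3_7 CA[where i=1 and j=3 and k=7] p_3_7 r_2_7_9 r_3_7_9 r_2_3_8 z_8_9 CA[where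 i=1 and j=3 and k=8] r_2_8_9 r_3_8_9 z_9_9 r_2_9_9 r_3_9_9 a_1 a_2 a_4 a_5 a_7 a_8 a_9 a_10 a_11 a_12 a_13 a_14 a_15 by (simp add: algebra_simps power2_eq_square)
  have kk2: "a 1 * (2 * a 9 + 5 * a 11) - 2 * a 2 * a 10 + a 4 * (7 * a 8 - 2 * a 10) + a 7 * (- 3 * a 5 + 2 * a 8 - 7 * a 10) = 0"
  proof -
    have tt: "(9::nat) < 10" by simp
    from J[where t=9 and i=1 and j=2 and l=3, OF tt] have "- (a 1 * (2 * a 9 + 5 * a 11) - 2 * a 2 * a 10 + a 4 * (7 * a 8 - 2 * a 10) + a 7 * (- 3 * a 5 + 2 * a 8 - 7 * a 10)) = 0" unfolding k2 .
    thus ?thesis by (rule neg_equal_0_iff_equal[THEN iffD1])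
  qed
  have allp: "\<forall>i j. i < j \<and> j < 10 \<longrightarrow> F10 a i j = map (c i j) [0..<10]"
  proof (intro allI impI)
    fix i j :: nat assume h: "i < j \<and> j < 10"
    hence "i \<in> {0,1,2,3,4,5,6,7,8,9}" "j \<in> {0,1,2,3,4,5,6,7,8,9}" by auto
    with h show "F10 a i j = map (c i j) [0..<10]" using pr_0_1 pr_0_2 pr_0_3 pr_0_4 pr_0_5 pr_0_6 pr_0_7 pr_0_8 pr_0_9 pr_1_2 pr_1_3 pr_1_4 pr_1_5 pr_1_6 pr_1_7 pr_1_8 pr_1_9 pr_2_3 pr_2_4 pr_2_5 pr_2_6 pr_2_7 pr_2_8 pr_2_9 pr_3_4 pr_3_5 pr_3_6 pr_3_7 pr_3_8 pr_3_9 pr_4_5 pr_4_6 pr_4_7 pr_4_8 pr_4_9 pr_5_6 pr_5_7 pr_5_8 pr_5_9 pr_6_7 pr_6_8 pr_6_9 pr_7_8 pr_7_9 pr_8_9 by auto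
  qed
  show ?thesis using allp kk0 kk1 kk2 by blast
qed
lemma grp: "(a::'a::ab_group_add) + - b + - c = 0 \<Longrightarrow> c = a - b"
proof -
  assume h: "a + - b + - c = 0"
  have "c = c + (a + - b + - c)" using h by simp
  also have "\<dots> = a - b" by (simp add: algebra_simps)
  finally show ?thesis .
qed

locale fil =
  fixes scale :: "'k::field_char_0 \<Rightarrow> 'v::ab_group_add \<Rightarrow> 'v" (infixr \<open>*s\<close> 75)
    and br :: "'v \<Rightarrow> 'v \<Rightarrow> 'v"
  assumes lie: "lie_algebra scale br"
    and dim10: "vector_space.dim scale (UNIV :: 'v set) = 10"
    and filf: "filiform scale br"
begin

sublocale vector_space scale
  using lie unfolding lie_algebra_def by blast

lemma br_addL: "br (x + y) z = br x z + br y z"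
  and br_addR: "br x (y + z) = br x y + br x z"
  and br_scaleL: "br (c *s x) y = c *s br x y"
  and br_scaleR: "br x (c *s y) = c *s br x y"
  and br_self[simp]: "br x x = 0"
  and jacobi: "br x (br y z) + br y (br z x) + br z (br x y) = 0"
  using lie unfolding lie_algebra_def by blast+

lemma br_0L[simp]: "br 0 x = 0"
  using br_addL[of 0 0 x] by simp
lemma br_0R[simp]: "br x 0 = 0"
  using br_addR[of x 0 0] by simp
lemma br_anti: "br y x = - br x y"
proof -
  have "br (x+y) (x+y) = br x x + br y x + (br x y + br y y)" by (simp only: br_addL br_addR)
  hence "br y x + br x y = 0" by simp
  thus ?thesis by (metis eq_neg_iff_add_eq_0)
qed
lemma br_negL: "br (- x) y = - br x y"
  using br_scaleL[of "-1" x y] by simp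
lemma br_negR: "br x (- y) = - br x y"
  using br_scaleR[of x "-1" y] by simp
lemma br_diffL: "br (x - y) z = br x z - br y z"
  by (metis diff_conv_add_uminus br_addL br_negL)
lemma br_diffR: "br x (y - z) = br x y - br x z"
  by (metis diff_conv_add_uminus br_addR br_negR)
lemma br_sumR: "br x (sum f A) = (\<Sum>a\<in>A. br x (f a))"
  by (induction A rule: infinite_finite_induct) (auto simp: br_addR)

abbreviation L where "L k \<equiv> lcs scale br k"

lemma L0: "L 0 = UNIV" by simp
lemma LS: "L (Suc k) = span {br x y | x y. y \<in> L k}" by simp
declare lcs.simps(2)[simp del]

lemma subspace_L: "subspace (L k)"
  by (cases k) (auto simp: LS)

lemma br_in_L: "y \<in> L k \<Longrightarrow> br x y \<in> L (Suc k)"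
  unfolding LS by (auto intro: span_base)
lemma br_in_L': "y \<in> L k \<Longrightarrow> br y x \<in> L (Suc k)"
proof -
  assume "y \<in> L k"
  hence "- br x y \<in> L (Suc k)" by (rule subspace_neg[OF subspace_L br_in_L])
  thus ?thesis by (simp only: br_anti[of y x])
qed

lemma L_Suc_sub: "L (Suc k) \<subseteq> L k"
proof (induction k)
  case 0 show ?case by simp
next
  case (Suc k)
  have "{br x y | x y. y \<in> L (Suc k)} \<subseteq> {br x y | x y. y \<in> L k}" using Suc by blast
  then show ?case by (simp only: LS) (rule span_mono)
qed

lemma L_anti: "i \<le> j \<Longrightarrow> L j \<subseteq> L i"
proof (induction j rule: dec_induct)
  case base then show ?case by simp
next
  case (step n) then show ?case using L_Suc_sub[of n] by blast
qed

lemma L_bracket: "x \<in> L i \<Longrightarrow> y \<in> L j \<Longrightarrow> br x y \<in> L (i + j + 1)"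
proof (induction i arbitrary: x j y)
  case 0 then show ?case using br_in_L by simp
next
  case (Suc i)
  have xs: "x \<in> span {br u v | u v. v \<in> L i}" using Suc.prems(1) by (simp add: LS)
  have "x \<in> {x. \<forall>j y. y \<in> L j \<longrightarrow> br x y \<in> L (Suc i + j + 1)}"
  proof (rule span_subspace_induct[OF xs])
    show "subspace {x. \<forall>j y. y \<in> L j \<longrightarrow> br x y \<in> L (Suc i + j + 1)}"
      by (rule subspaceI) (auto intro!: subspace_add[OF subspace_L] subspace_scale[OF subspace_L] subspace_0[OF subspace_L] simp: br_addL br_scaleL)
  next
    fix w assume "w \<in> {br u v | u v. v \<in> L i}"
    then obtain u v where w: "w = br u v" and v: "v \<in> L i" by blast
    show "w \<in> {x. \<forall>j y. y \<in> L j \<longrightarrow> br x y \<in> L (Suc i + j + 1)}"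
    proof (intro CollectI allI impI)
      fix j y assume y: "y \<in> L j"
      have j: "br u (br v y) + br v (br y u) + br y (br u v) = 0" by (rule jacobi)
      have e: "br (br u v) y = br u (br v y) + br v (br y u)"
        using j br_anti[of y "br u v"] by (metis add.commute add_eq_0_iff2 minus_minus)
      have 1: "br u (br v y) \<in> L (Suc i + j + 1)"
        using br_in_L[OF Suc.IH[OF v y]] by simp
      have 2: "br v (br y u) \<in> L (Suc i + j + 1)"
        using Suc.IH[OF v br_in_L'[OF y, of u]] by simp
      show "br w y \<in> L (Suc i + j + 1)"
        unfolding w e by (rule subspace_add[OF subspace_L 1 2])
    qed
  qed
  then show ?case using Suc.prems(2) by blast
qed


lemma L9: "L 9 = {0}" and L8: "L 8 \<noteq> {0}"
  using filf dim10 unfolding filiform_def nilpotent_nilindex_def by auto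

lemma span_L[simp]: "span (L k) = L k"
  using subspace_L span_eq_iff by blast

lemma L_eq_prop: "k \<le> m \<Longrightarrow> L (Suc k) = L k \<Longrightarrow> L (Suc m) = L m"
proof (induction m rule: dec_induct)
  case base then show ?case by simp
next
  case (step n)
  have "L (Suc (Suc n)) = span {br x y | x y. y \<in> L (Suc n)}" by (rule LS)
  also have "\<dots> = span {br x y | x y. y \<in> L n}" using step by simp
  also have "\<dots> = L (Suc n)" by (rule LS[symmetric])
  finally show ?case .
qed

lemma L_strict: "k \<le> 8 \<Longrightarrow> L (Suc k) \<noteq> L k"
proof
  assume k: "k \<le> 8" and e: "L (Suc k) = L k"
  have "L (Suc 8) = L 8" by (rule L_eq_prop[OF k e])
  thus False using L8 L9 by (simp add: numeral_eq_Suc)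
qed

lemma L_psub: "k \<le> 8 \<Longrightarrow> L (Suc k) \<subset> L k"
  using L_strict L_Suc_sub by blast

definition Bas where "Bas = (SOME b. independent b \<and> span b = span UNIV)"

lemma Bas_props: "independent Bas" "span Bas = UNIV" "card Bas = 10" "finite Bas"
proof -
  have ex: "\<exists>b. independent b \<and> span b = span UNIV"
    using dim10 unfolding dim_def by (metis zero_neq_numeral)
  have d: "dim UNIV = card (SOME b. independent b \<and> span b = span UNIV)"
    using ex unfolding dim_def by simp
  have "independent Bas \<and> span Bas = span UNIV" unfolding Bas_def using someI_ex[OF ex] .
  thus "independent Bas" "span Bas = UNIV" by auto
  show "card Bas = 10" using d dim10 unfolding Bas_def by simp
  thus "finite Bas" by (metis card.infinite zero_neq_numeral)
qed

sublocale fd: finite_dimensional_vector_space scale Bas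
  by unfold_locales (use Bas_props in auto)

lemma dimension10: "fd.dimension = 10"
  unfolding fd.dimension_def using Bas_props by simp

lemma dim_span_full: "dim S = 10 \<Longrightarrow> span S = UNIV"
  using fd.dim_eq_full dimension10 by simp

lemma dim_L_dec: "k \<le> 8 \<Longrightarrow> dim (L (Suc k)) < dim (L k)"
  using fd.dim_psubset[of "L (Suc k)" "L k"] L_psub[of k] subspace_L span_eq_iff by metis

lemma dim_L0: "dim (L 0) = 10" using dim10 by simp
lemma dim_L9: "dim (L 9) = 0" using L9 by simp

lemma two_gen:
  assumes sp: "span (insert a (insert b (L 1))) = UNIV" and ab: "br a b \<in> L 2"
  shows "L 1 \<subseteq> L 2"
proof -
  have s2: "subspace (L 2)" by (rule subspace_L)
  have L12: "\<And>u v. u \<in> L 1 \<Longrightarrow> br v u \<in> L 2"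
    using br_in_L[of _ 1] by (simp add: numeral_2_eq_2)
  have L12': "\<And>u v. u \<in> L 1 \<Longrightarrow> br u v \<in> L 2"
    using br_in_L'[of _ 1] by (simp add: numeral_2_eq_2)
  have subR: "\<And>w. subspace {v. br w v \<in> L 2}"
    by (rule subspaceI) (auto simp: br_addR br_scaleR intro: subspace_add[OF s2] subspace_scale[OF s2] subspace_0[OF s2])
  have subL: "subspace {u. \<forall>v. br u v \<in> L 2}"
    by (rule subspaceI) (auto simp: br_addL br_scaleL intro: subspace_add[OF s2] subspace_scale[OF s2] subspace_0[OF s2])
  have ba: "br b a \<in> L 2" using subspace_neg[OF s2 ab] by (simp add: br_anti[of b a])
  have "UNIV \<subseteq> {v. br a v \<in> L 2}"
    unfolding sp[symmetric] by (rule span_minimal[OF _ subR]) (auto simp: ab subspace_0[OF s2] L12)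
  hence A: "\<forall>v. br a v \<in> L 2" by blast
  have "UNIV \<subseteq> {v. br b v \<in> L 2}"
    unfolding sp[symmetric] by (rule span_minimal[OF _ subR]) (auto simp: ba subspace_0[OF s2] L12)
  hence B: "\<forall>v. br b v \<in> L 2" by blast
  have "UNIV \<subseteq> {u. \<forall>v. br u v \<in> L 2}"
    unfolding sp[symmetric] by (rule span_minimal[OF _ subL]) (auto simp: A B L12')
  hence all: "\<And>u v. br u v \<in> L 2" by blast
  have "L 1 = span {br x y | x y. y \<in> L 0}" using LS[of 0] by simp
  also have "\<dots> \<subseteq> L 2" by (rule span_minimal[OF _ s2]) (auto simp: all)
  finally show ?thesis .
qed

lemma dim_L1: "dim (L 1) \<le> 8"
proof (rule ccontr)
  assume "\<not> dim (L 1) \<le> 8"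
  moreover have "dim (L 1) < 10" using dim_L_dec[of 0] dim_L0 by simp
  ultimately have d9: "dim (L 1) = 9" by simp
  have "L 1 \<noteq> UNIV" using L_strict[of 0] by simp
  then obtain x where x: "x \<notin> L 1" by blast
  have "dim (insert x (L 1)) = 10"
    using fd.dim_insert[of x "L 1"] x d9 subspace_L[of 1] by simp
  hence sp: "span (insert x (insert x (L 1))) = UNIV" using dim_span_full by simp
  have "L 1 \<subseteq> L 2" by (rule two_gen[OF sp]) (simp add: subspace_0[OF subspace_L])
  moreover have "L 2 \<subseteq> L 1" using L_Suc_sub[of 1] by (simp add: numeral_2_eq_2)
  ultimately have "L (Suc 1) = L 1" by (simp add: numeral_2_eq_2)
  thus False using L_strict[of 1] by simp
qed

lemma dim_L: "1 \<le> k \<Longrightarrow> k \<le> 9 \<Longrightarrow> dim (L k) = 9 - k"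
proof -
  assume k: "1 \<le> k" "k \<le> 9"
  have d: "\<And>k. k \<le> 8 \<Longrightarrow> dim (L (Suc k)) < dim (L k)" by (rule dim_L_dec)
  have lo: "\<And>n. n \<le> 9 \<Longrightarrow> dim (L (9 - n)) \<ge> n"
  proof -
    fix n :: nat assume "n \<le> 9"
    thus "dim (L (9 - n)) \<ge> n"
    proof (induction n)
      case 0 show ?case by simp
    next
      case (Suc n)
      have "9 - Suc n \<le> 8" by simp
      from d[OF this] have "dim (L (Suc (9 - Suc n))) < dim (L (9 - Suc n))" .
      moreover have "Suc (9 - Suc n) = 9 - n" using Suc.prems by simp
      ultimately show ?case using Suc by simp
    qed
  qed
  have hi: "\<And>n. 1 \<le> n \<Longrightarrow> n \<le> 9 \<Longrightarrow> dim (L n) \<le> 9 - n"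
  proof -
    fix n :: nat assume "1 \<le> n" "n \<le> 9"
    thus "dim (L n) \<le> 9 - n"
    proof (induction n rule: dec_induct)
      case base show ?case using dim_L1 by simp
    next
      case (step n)
      from d[of n] step show ?case by simp
    qed
  qed
  show ?thesis using lo[of "9 - k"] hi[OF k] k by simp
qed

lemma span_insert_span: "span (insert a (span S)) = span (insert a S)"
proof
  show "span (insert a (span S)) \<subseteq> span (insert a S)"
    by (rule span_minimal) (auto intro: span_base span_mono[of S "insert a S", THEN subsetD])
  show "span (insert a S) \<subseteq> span (insert a (span S))"
    by (rule span_mono) (auto intro: span_base)
qed

lemma exists_pq: "\<exists>p q. span (insert q (insert p (L 1))) = UNIV"
proof -
  have "L 1 \<noteq> UNIV" using L_strict[of 0] by simp
  then obtain p where p: "p \<notin> L 1" by blast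
  have d1: "dim (L 1) = 8" using dim_L[of 1] by simp
  have d2: "dim (insert p (L 1)) = 9" using fd.dim_insert[of p "L 1"] p d1 by simp
  have "span (insert p (L 1)) \<noteq> UNIV"
  proof
    assume "span (insert p (L 1)) = UNIV"
    hence "dim (span (insert p (L 1))) = 10" using dim10 by simp
    thus False using d2 by simp
  qed
  then obtain q where q: "q \<notin> span (insert p (L 1))" by blast
  have "dim (insert q (insert p (L 1))) = 10" using fd.dim_insert[of q "insert p (L 1)"] q d2 by simp
  thus ?thesis using dim_span_full by blast
qed

definition K where "K k = {x. \<forall>y\<in>L k. br x y \<in> L (k + 2)}"

lemma subspace_K: "subspace (K k)"
  unfolding K_def
  by (rule subspaceI) (auto simp: br_addL br_scaleL intro: subspace_add[OF subspace_L] subspace_scale[OF subspace_L] subspace_0[OF subspace_L])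

lemma L1_K: "L 1 \<subseteq> K k"
  unfolding K_def using L_bracket[of _ 1 _ k] by (auto simp: add.commute)

lemma K_proper: "k \<le> 7 \<Longrightarrow> K k \<noteq> UNIV"
proof
  assume k: "k \<le> 7" and KU: "K k = UNIV"
  have "L (Suc k) = span {br x y | x y. y \<in> L k}" by (rule LS)
  also have "\<dots> \<subseteq> L (Suc (Suc k))"
    by (rule span_minimal[OF _ subspace_L]) (use KU in \<open>auto simp: K_def set_eq_iff\<close>)
  finally have "L (Suc k) \<subseteq> L (Suc (Suc k))" .
  hence "L (Suc (Suc k)) = L (Suc k)" using L_Suc_sub[of "Suc k"] by blast
  thus False using L_strict[of "Suc k"] k by simp
qed

lemma finite_subsing: "(\<And>a b. a \<in> S \<Longrightarrow> b \<in> S \<Longrightarrow> a = b) \<Longrightarrow> finite S"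
  by (metis finite.emptyI finite_insert insert_absorb insert_not_empty singletonI subsetI subset_antisym
        ex_in_conv finite_subset)

lemma exists_X0:
  obtains X0 q where "span (insert q (insert X0 (L 1))) = UNIV"
    and "\<And>k. 1 \<le> k \<Longrightarrow> k \<le> 7 \<Longrightarrow> X0 \<notin> K k"
proof -
  obtain p q where pq: "span (insert q (insert p (L 1))) = UNIV" using exists_pq by blast
  define S where "S k = {t::nat. p + of_nat t *s q \<in> K k}" for k
  have fin: "finite (S k)" if k: "1 \<le> k" "k \<le> 7" for k
  proof (rule finite_subsing)
    fix t1 t2 assume t1: "t1 \<in> S k" and t2: "t2 \<in> S k"
    show "t1 = t2"
    proof (rule ccontr)
      assume ne: "t1 \<noteq> t2"
      have sK: "subspace (K k)" by (rule subspace_K)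
      have "(p + of_nat t1 *s q) - (p + of_nat t2 *s q) \<in> K k"
        by (rule subspace_diff[OF sK]) (use t1 t2 in \<open>auto simp: S_def\<close>)
      hence "(of_nat t1 - of_nat t2) *s q \<in> K k" by (simp add: scale_left_diff_distrib)
      hence "inverse (of_nat t1 - of_nat t2) *s ((of_nat t1 - of_nat t2) *s q) \<in> K k"
        by (rule subspace_scale[OF sK])
      moreover have "(of_nat t1 - of_nat t2 :: 'k) \<noteq> 0" using ne by simp
      ultimately have qK: "q \<in> K k" by simp
      have "(p + of_nat t1 *s q) - of_nat t1 *s q \<in> K k"
        by (rule subspace_diff[OF sK], use t1 in \<open>simp add: S_def\<close>, rule subspace_scale[OF sK qK])
      hence pK: "p \<in> K k" by simp
      have "UNIV \<subseteq> K k" unfolding pq[symmetric]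
        by (rule span_minimal[OF _ sK]) (use qK pK L1_K in auto)
      thus False using K_proper[of k] k by blast
    qed
  qed
  have "finite (\<Union>k\<in>{1..7}. S k)" using fin by auto
  then obtain t where t: "t \<notin> (\<Union>k\<in>{1..7}. S k)" using ex_new_if_finite[OF infinite_UNIV_nat] by blast
  define X0 where "X0 = p + of_nat t *s q"
  have "\<And>k. 1 \<le> k \<Longrightarrow> k \<le> 7 \<Longrightarrow> X0 \<notin> K k" using t unfolding X0_def S_def by auto
  moreover have "span (insert q (insert X0 (L 1))) = UNIV"
  proof -
    have "p \<in> span (insert q (insert X0 (L 1)))"
    proof -
      have "X0 - of_nat t *s q \<in> span (insert q (insert X0 (L 1)))"
        by (intro span_diff span_scale span_base) auto
      thus ?thesis unfolding X0_def by simp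
    qed
    hence "UNIV \<subseteq> span (insert q (insert X0 (L 1)))"
      unfolding pq[symmetric] by (intro span_minimal) (auto intro: span_base)
    thus ?thesis by blast
  qed
  ultimately show ?thesis using that by blast
qed

end

locale fil2 = fil +
  fixes X0 q
  assumes spq: "span (insert q (insert X0 (L 1))) = UNIV"
    and notK: "\<And>k. 1 \<le> k \<Longrightarrow> k \<le> 7 \<Longrightarrow> X0 \<notin> K k"
begin

definition Y where "Y i = (br X0 ^^ i) q"

lemma Y0: "Y 0 = q" and Y_Suc: "Y (Suc i) = br X0 (Y i)"
  by (simp_all add: Y_def)

lemma LY: "i \<le> 8 \<Longrightarrow> 1 \<le> i \<Longrightarrow> y \<in> L i \<Longrightarrow> y \<notin> L (Suc i) \<Longrightarrow> L i = span (insert y (L (Suc i)))"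
proof -
  assume i: "i \<le> 8" "1 \<le> i" and y: "y \<in> L i" "y \<notin> L (Suc i)"
  have sub: "span (insert y (L (Suc i))) \<subseteq> L i"
    by (rule span_minimal[OF _ subspace_L]) (use y L_Suc_sub in auto)
  have "dim (span (insert y (L (Suc i)))) = dim (L (Suc i)) + 1"
    using fd.dim_insert[of y "L (Suc i)"] y by simp
  also have "\<dots> = dim (L i)" using dim_L[of i] dim_L[of "Suc i"] i by simp
  finally have "dim (span (insert y (L (Suc i)))) = dim (L i)" .
  hence "span (insert y (L (Suc i))) = L i"
    using fd.subspace_dim_equal[OF subspace_span subspace_L sub] by simp
  thus ?thesis by simp
qed

lemma Y_props: "1 \<le> i \<Longrightarrow> i \<le> 8 \<Longrightarrow> Y i \<in> L i \<and> Y i \<notin> L (Suc i)"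
proof (induction i rule: dec_induct)
  case base
  have in1: "Y 1 \<in> L 1" using br_in_L[of q 0 X0] by (simp add: Y_def)
  have "Y 1 \<notin> L 2"
  proof
    assume "Y 1 \<in> L 2"
    hence a: "br X0 q \<in> L 2" by (simp add: Y_def)
    have "br q X0 \<in> L 2" using subspace_neg[OF subspace_L a] by (simp add: br_anti[of q X0])
    hence "L 1 \<subseteq> L 2" by (rule two_gen[OF spq])
    moreover have "L 2 \<subseteq> L 1" using L_Suc_sub[of 1] by (simp add: numeral_2_eq_2)
    ultimately have "L (Suc 1) = L 1" by (simp add: numeral_2_eq_2)
    thus False using L_strict[of 1] by simp
  qed
  thus ?case using in1 by (simp add: numeral_2_eq_2)
next
  case (step n)
  hence n: "1 \<le> n" "n \<le> 7" and Yn: "Y n \<in> L n" "Y n \<notin> L (Suc n)" by auto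
  have inS: "Y (Suc n) \<in> L (Suc n)" using br_in_L[OF Yn(1)] by (simp add: Y_Suc)
  have "Y (Suc n) \<notin> L (Suc (Suc n))"
  proof
    assume a: "Y (Suc n) \<in> L (Suc (Suc n))"
    have sS: "subspace {y. br X0 y \<in> L (Suc (Suc n))}"
      by (rule subspaceI) (auto simp: br_addR br_scaleR intro: subspace_add[OF subspace_L] subspace_scale[OF subspace_L] subspace_0[OF subspace_L])
    have "L n = span (insert (Y n) (L (Suc n)))" using LY[of n "Y n"] n Yn by simp
    also have "\<dots> \<subseteq> {y. br X0 y \<in> L (Suc (Suc n))}"
      by (rule span_minimal[OF _ sS]) (use a br_in_L in \<open>auto simp: Y_Suc\<close>)
    finally have "X0 \<in> K n" unfolding K_def by auto
    thus False using notK[OF n] by blast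
  qed
  thus ?case using inS by simp
qed

lemma Y9: "Y 9 = 0"
proof -
  have "Y 8 \<in> L 8" using Y_props[of 8] by simp
  hence "Y 9 \<in> L 9" using br_in_L[of "Y 8" 8 X0] by (simp add: Y_Suc[of 8, simplified])
  thus ?thesis using L9 by simp
qed

lemma L_span_Y: "n \<le> 8 \<Longrightarrow> L (9 - n) = span (Y ` {9 - n..8})"
proof (induction n)
  case 0 show ?case using L9 by simp
next
  case (Suc n)
  let ?i = "9 - Suc n"
  have i: "?i \<le> 8" "1 \<le> ?i" using Suc.prems by auto
  have e: "Suc ?i = 9 - n" using Suc.prems by simp
  have "L ?i = span (insert (Y ?i) (L (Suc ?i)))" using LY[OF i] Y_props[of ?i] i by simp
  also have "\<dots> = span (insert (Y ?i) (span (Y ` {Suc ?i..8})))" using Suc e by simp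
  also have "\<dots> = span (insert (Y ?i) (Y ` {Suc ?i..8}))" by (rule span_insert_span)
  also have "insert (Y ?i) (Y ` {Suc ?i..8}) = Y ` {?i..8}"
  proof -
    have "{?i..8} = insert ?i {Suc ?i..8}" using i by (simp add: Icc_eq_insert_lb_nat)
    thus ?thesis by simp
  qed
  finally show ?case .
qed

lemma L_span: "1 \<le> i \<Longrightarrow> i \<le> 9 \<Longrightarrow> L i = span (Y ` {i..8})"
  using L_span_Y[of "9 - i"] by simp

lemma exists_s: "\<exists>s. br q (Y 7) = s *s Y 8"
proof -
  have "Y 7 \<in> L 7" using Y_props[of 7] by simp
  hence "br q (Y 7) \<in> L 8" using br_in_L[of "Y 7" 7 q] by simp
  also have "L 8 = span {Y 8}" using L_span[of 8] by simp
  finally show ?thesis by (auto simp: span_singleton)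
qed

definition sX where "sX = (SOME s. br q (Y 7) = s *s Y 8)"
definition X1 where "X1 = q - sX *s X0"
definition X where "X i = (if i = 0 then X0 else if i = 1 then X1 else Y (i - 1))"

lemma sX: "br q (Y 7) = sX *s Y 8"
  unfolding sX_def using someI_ex[OF exists_s] .

lemma X_0: "X 0 = X0" and X_1: "X 1 = X1" and X_ge2: "2 \<le> i \<Longrightarrow> X i = Y (i - 1)"
  by (auto simp: X_def)

lemma X0_br: "i < 10 \<Longrightarrow> br X0 (X i) = (if 1 \<le> i \<and> i \<le> 8 then X (Suc i) else 0)"
proof -
  assume i: "i < 10"
  consider "i = 0" | "i = 1" | "2 \<le> i" "i \<le> 8" | "i = 9" using i by linarith
  thus ?thesis
  proof cases
    case 1 thus ?thesis by (simp add: X_def)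
  next
    case 2 thus ?thesis
      by (simp add: X_def X1_def br_diffR br_scaleR Y_Suc Y0 numeral_2_eq_2 del: One_nat_def)
  next
    case 3
    hence e: "Suc (i - 1) = i" by simp
    have "br X0 (Y (i - 1)) = Y i" by (metis Y_Suc e)
    thus ?thesis using 3 by (simp add: X_def)
  next
    case 4 thus ?thesis using Y9 Y_Suc[of 8] by (simp add: X_def)
  qed
qed

lemma X1_8: "br X1 (X 8) = 0"
proof -
  have "br X1 (X 8) = br q (Y 7) - sX *s br X0 (Y 7)"
    by (simp add: X_def X1_def br_diffL br_scaleL)
  also have "\<dots> = 0" using sX Y_Suc[of 7] by simp
  finally show ?thesis .
qed

lemma imgXY: "1 \<le> j \<Longrightarrow> X ` {Suc j..9} = Y ` {j..8}"
proof -
  assume j: "1 \<le> j"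
  have "X ` {Suc j..9} = X ` (Suc ` {j..8})" by (simp add: image_Suc_atLeastAtMost)
  also have "\<dots> = Y ` {j..8}" unfolding image_image
    by (rule image_cong) (use j in \<open>auto simp: X_def\<close>)
  finally show ?thesis .
qed

lemma X1_filt: "2 \<le> j \<Longrightarrow> j \<le> 9 \<Longrightarrow> br X1 (X j) \<in> span (X ` {Suc j..9})"
proof -
  assume j: "2 \<le> j" "j \<le> 9"
  have "X j \<in> L (j - 1)" using Y_props[of "j - 1"] j by (simp add: X_def)
  hence "br X1 (X j) \<in> L (Suc (j - 1))" by (rule br_in_L)
  also have "Suc (j - 1) = j" using j by simp
  also have "L j = span (Y ` {j..8})" using L_span[of j] j by simp
  also have "Y ` {j..8} = X ` {Suc j..9}" using imgXY[of j] j by simp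
  finally show ?thesis .
qed

lemma X_span: "span (X ` {..<10}) = UNIV"
proof -
  have sub: "X ` {..<10} \<subseteq> span (X ` {..<10})" by (rule span_superset)
  have "X0 \<in> X ` {..<10}" by (rule image_eqI[of _ _ 0]) (simp_all add: X_0)
  hence x0: "X0 \<in> span (X ` {..<10})" by (rule span_base)
  have "X1 \<in> X ` {..<10}" by (rule image_eqI[of _ _ 1]) (simp_all add: X_def)
  hence x1: "X1 \<in> span (X ` {..<10})" by (rule span_base)
  have qs: "q \<in> span (X ` {..<10})"
  proof -
    have "X1 + sX *s X0 \<in> span (X ` {..<10})" by (intro span_add span_scale x0 x1)
    thus ?thesis by (simp add: X1_def)
  qed
  have "L 1 = span (X ` {2..9})" using L_span[of 1] imgXY[of 1] by (simp add: numeral_2_eq_2)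
  also have "\<dots> \<subseteq> span (X ` {..<10})" by (rule span_mono) auto
  finally have l1: "L 1 \<subseteq> span (X ` {..<10})" .
  have "UNIV \<subseteq> span (X ` {..<10})"
    unfolding spq[symmetric] by (rule span_minimal) (use qs x0 l1 in auto)
  thus ?thesis by blast
qed

lemma X_card: "card (X ` {..<10}) = 10" and X_inj: "inj_on X {..<10}"
  and X_indep: "independent (X ` {..<10})"
proof -
  have "dim UNIV \<le> card (X ` {..<10})"
    using span_card_ge_dim[of "X ` {..<10}" UNIV] X_span by simp
  moreover have "card (X ` {..<10}) \<le> 10" using card_image_le[of "{..<10::nat}" X] by simp
  ultimately show c: "card (X ` {..<10}) = 10" using dim10 by simp
  thus "inj_on X {..<10}" using inj_on_iff_eq_card[of "{..<10::nat}" X] by simp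
  show "independent (X ` {..<10})"
    using fd.card_le_dim_spanning[of "X ` {..<10}" UNIV] X_span c dim10 by simp
qed

definition coord where "coord k v = representation (X ` {..<10}) v (X k)"

lemma expand: "(\<Sum>k<10. coord k v *s X k) = v"
proof -
  have "(\<Sum>b\<in>X ` {..<10}. representation (X ` {..<10}) v b *s b) = v"
    by (rule sum_representation_eq) (use X_indep X_span in auto)
  thus ?thesis unfolding coord_def sum.reindex[OF X_inj] by simp
qed

lemma unique: "(\<Sum>k<10. f k *s X k) = (\<Sum>k<10. g k *s X k) \<Longrightarrow> k < 10 \<Longrightarrow> f k = g k"
proof -
  assume e: "(\<Sum>k<10. f k *s X k) = (\<Sum>k<10. g k *s X k)" and k: "k < 10"
  define h where "h b = f (inv_into {..<10} X b) - g (inv_into {..<10} X b)" for b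
  have hX: "\<And>m. m < 10 \<Longrightarrow> h (X m) = f m - g m"
    unfolding h_def using inv_into_f_f[OF X_inj] by simp
  have "(\<Sum>b\<in>X ` {..<10}. h b *s b) = (\<Sum>m<10. h (X m) *s X m)"
    by (simp add: sum.reindex[OF X_inj])
  also have "\<dots> = (\<Sum>m<10. (f m - g m) *s X m)" by (rule sum.cong) (auto simp: hX)
  also have "\<dots> = (\<Sum>k<10. f k *s X k) - (\<Sum>k<10. g k *s X k)"
    by (simp add: scale_left_diff_distrib sum_subtractf)
  also have "\<dots> = 0" using e by simp
  finally have "h (X k) = 0"
    by (intro independentD[OF X_indep, of "X ` {..<10}"]) (use k in auto)
  thus ?thesis using hX[OF k] by simp
qed

lemma coord_sum: "k < 10 \<Longrightarrow> coord k (\<Sum>m<10. f m *s X m) = f k"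
  using unique[of "\<lambda>m. coord m (\<Sum>m<10. f m *s X m)" f k] expand by simp

lemma coord_add: "k < 10 \<Longrightarrow> coord k (u + v) = coord k u + coord k v"
proof -
  assume k: "k < 10"
  have "u + v = (\<Sum>m<10. (coord m u + coord m v) *s X m)"
    by (simp add: scale_left_distrib sum.distrib expand)
  thus ?thesis using coord_sum[OF k] by simp
qed

lemma coord_scale: "k < 10 \<Longrightarrow> coord k (a *s v) = a * coord k v"
proof -
  assume k: "k < 10"
  have "a *s v = a *s (\<Sum>m<10. coord m v *s X m)" by (simp only: expand)
  also have "\<dots> = (\<Sum>m<10. (a * coord m v) *s X m)" by (simp add: scale_sum_right)
  finally have "a *s v = (\<Sum>m<10. (a * coord m v) *s X m)" .
  thus ?thesis using coord_sum[OF k] by simp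
qed

lemma coord_neg: "k < 10 \<Longrightarrow> coord k (- v) = - coord k v"
  using coord_scale[of k "-1" v] by simp

lemma coord_zero: "k < 10 \<Longrightarrow> coord k 0 = 0"
  using coord_scale[of k 0 0] by simp

lemma coord_X: "k < 10 \<Longrightarrow> m < 10 \<Longrightarrow> coord k (X m) = (if k = m then 1 else 0)"
proof -
  assume k: "k < 10" and m: "m < 10"
  have "(\<Sum>j<10. (if j = m then 1 else 0) *s X j) = (\<Sum>j<10. if j = m then X j else 0)"
    by (rule sum.cong) auto
  also have "\<dots> = X m" using m by (simp add: sum.delta)
  finally have "X m = (\<Sum>j<10. (if j = m then 1 else 0) *s X j)" by simp
  thus ?thesis using coord_sum[OF k] by simp
qed

lemma coord_span0:
  assumes k: "k < 10" "k \<notin> S" and S: "S \<subseteq> {..<10}" and v: "v \<in> span (X ` S)"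
  shows "coord k v = 0"
proof -
  have sub: "subspace {v. coord k v = 0}"
    by (rule subspaceI) (auto simp: coord_add coord_scale coord_zero k)
  have "X ` S \<subseteq> {v. coord k v = 0}" using k S by (auto simp: coord_X)
  hence "span (X ` S) \<subseteq> {v. coord k v = 0}" by (rule span_minimal[OF _ sub])
  thus ?thesis using v by blast
qed

definition cc where "cc i j k = coord k (br (X i) (X j))"

lemma br_coord: "t < 10 \<Longrightarrow> coord t (br (X i) v) = (\<Sum>m<10. coord m v * cc i m t)"
proof -
  assume t: "t < 10"
  have "br (X i) v = br (X i) (\<Sum>m<10. coord m v *s X m)" by (simp add: expand)
  also have "\<dots> = (\<Sum>m<10. coord m v *s br (X i) (X m))" by (simp add: br_sumR br_scaleR)
  also have "\<dots> = (\<Sum>m<10. coord m v *s (\<Sum>t<10. cc i m t *s X t))"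
    by (simp add: expand cc_def)
  also have "\<dots> = (\<Sum>m<10. \<Sum>t<10. (coord m v * cc i m t) *s X t)"
    by (simp add: scale_sum_right)
  also have "\<dots> = (\<Sum>t<10. \<Sum>m<10. (coord m v * cc i m t) *s X t)" by (rule sum.swap)
  also have "\<dots> = (\<Sum>t<10. (\<Sum>m<10. coord m v * cc i m t) *s X t)" by (simp add: scale_sum_left)
  finally show ?thesis using coord_sum[OF t] by simp
qed

lemma Y_big: "9 \<le> n \<Longrightarrow> Y n = 0"
proof (induction n rule: dec_induct)
  case base show ?case by (rule Y9)
next
  case (step n) thus ?case by (simp add: Y_Suc)
qed

lemma coord_big: "10 \<le> k \<Longrightarrow> coord k v = 0"
proof -
  assume k: "10 \<le> k"
  have "X k = 0" using k Y_big[of "k - 1"] by (simp add: X_def)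
  moreover have "0 \<notin> X ` {..<10}"
  proof
    assume "0 \<in> X ` {..<10}"
    hence "dependent (X ` {..<10})" by (rule dependent_zero)
    thus False using X_indep by simp
  qed
  ultimately have "X k \<notin> X ` {..<10}" by simp
  thus ?thesis unfolding coord_def using representation_ne_zero[of "X ` {..<10}" v "X k"] by blast
qed

lemma coord_diff: "k < 10 \<Longrightarrow> coord k (u - v) = coord k u - coord k v"
proof -
  assume k: "k < 10"
  have "coord k (u - v) = coord k (u + - v)" by (simp only: diff_conv_add_uminus)
  also have "\<dots> = coord k u + - coord k v" by (simp only: coord_add[OF k] coord_neg[OF k])
  finally show ?thesis by simp
qed

lemma cc_CA: "cc j i k = - cc i j k"
proof (cases "k < 10")
  case True thus ?thesis unfolding cc_def by (simp add: br_anti[of "X j"] coord_neg)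
next
  case False thus ?thesis unfolding cc_def by (simp add: coord_big)
qed

lemma cc_Z: "cc i i k = 0"
  unfolding cc_def by (cases "k < 10") (simp_all add: coord_zero coord_big)

lemma cc_C0: "j < 10 \<Longrightarrow> k < 10 \<Longrightarrow> cc 0 j k = (if 1 \<le> j \<and> j \<le> 8 \<and> k = Suc j then 1 else 0)"
  unfolding cc_def by (auto simp: X_0 X0_br coord_X coord_zero)

lemma shift: "k < 10 \<Longrightarrow> (\<Sum>m<10. f m * cc 0 m k) = (if 2 \<le> k then f (k - 1) else 0)"
proof -
  assume k: "k < 10"
  have "(\<Sum>m<10. f m * cc 0 m k) = (\<Sum>m<10. f m * (if 1 \<le> m \<and> m \<le> 8 \<and> k = Suc m then 1 else 0))"
    by (rule sum.cong) (auto simp: cc_C0 k)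
  also have "\<dots> = (\<Sum>m<10. if m = k - 1 \<and> 2 \<le> k then f m else 0)"
    by (rule sum.cong) (use k in auto)
  also have "\<dots> = (if 2 \<le> k then f (k - 1) else 0)"
    using k by (cases "2 \<le> k") (simp_all add: sum.delta)
  finally show ?thesis .
qed

lemma coord_brX0: "k < 10 \<Longrightarrow> coord k (br X0 w) = (if 2 \<le> k then coord (k - 1) w else 0)"
  using br_coord[of k 0 w] shift[of k "\<lambda>m. coord m w"] by (simp add: X_0)

lemma cc_R: "1 \<le> i \<Longrightarrow> i \<le> 8 \<Longrightarrow> 1 \<le> j \<Longrightarrow> j \<le> 9 \<Longrightarrow> k < 10 \<Longrightarrow>
   cc (i + 1) j k = (if 2 \<le> k then cc i j (k - 1) else 0) - (if j \<le> 8 then cc i (j + 1) k else 0)"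
proof -
  assume i: "1 \<le> i" "i \<le> 8" and j: "1 \<le> j" "j \<le> 9" and k: "k < 10"
  have Xi: "X (Suc i) = br X0 (X i)" using X0_br[of i] i by simp
  have jac: "br X0 (br (X i) (X j)) + br (X i) (br (X j) X0) + br (X j) (br X0 (X i)) = 0" by (rule jacobi)
  have e1: "br (X j) (br X0 (X i)) = - br (X (Suc i)) (X j)" using Xi br_anti by metis
  have e2: "br (X i) (br (X j) X0) = - br (X i) (br X0 (X j))" using br_anti br_negR by metis
  have v: "br (X (Suc i)) (X j) = br X0 (br (X i) (X j)) - br (X i) (br X0 (X j))"
    using jac unfolding e1 e2 by (rule grp)
  have w: "coord k (br (X i) (br X0 (X j))) = (if j \<le> 8 then cc i (j + 1) k else 0)"
    using j X0_br[of j] by (auto simp: cc_def coord_zero k)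
  have "coord k (br X0 (br (X i) (X j)) - br (X i) (br X0 (X j)))
        = coord k (br X0 (br (X i) (X j))) - coord k (br (X i) (br X0 (X j)))"
    by (rule coord_diff[OF k])
  thus ?thesis unfolding cc_def using v w coord_brX0[OF k] by (simp add: cc_def)
qed

lemma cc_F: "2 \<le> j \<Longrightarrow> j \<le> 9 \<Longrightarrow> k \<le> j \<Longrightarrow> cc 1 j k = 0"
  unfolding cc_def X_1 by (rule coord_span0[OF _ _ _ X1_filt]) auto

lemma cc_B89: "cc 1 8 9 = 0"
  unfolding cc_def X_1 by (simp add: X1_8 coord_zero)

lemma cc_J: "t < 10 \<Longrightarrow> (\<Sum>m<10. cc j l m * cc i m t) + (\<Sum>m<10. cc l i m * cc j m t) + (\<Sum>m<10. cc i j m * cc l m t) = 0"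
proof -
  assume t: "t < 10"
  have "coord t (br (X i) (br (X j) (X l)) + br (X j) (br (X l) (X i)) + br (X l) (br (X i) (X j))) = 0"
    by (simp add: jacobi coord_zero t)
  thus ?thesis by (simp add: coord_add t br_coord cc_def)
qed
end

context fil2
begin

lemma main:
  "\<exists>(X :: nat \<Rightarrow> 'b) (a :: nat \<Rightarrow> 'a).
           inj_on X {..<10} \<and>
           \<not> dependent (X ` {..<10}) \<and>
           span (X ` {..<10}) = UNIV \<and>
           (\<forall>i j. i < j \<and> j < 10 \<longrightarrow>
              br (X i) (X j) = (\<Sum>k<10. (F10 a i j ! k) *s (X k))) \<and>
           a 1 * (2 * a 2 + 7 * a 4 + 7 * a 7) = 0 \<and>
           3 * a 4 ^ 2 + 3 * a 4 * a 7 - 2 * a 2 * a 7 = 0 \<and>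
           a 1 * (2 * a 9 + 5 * a 11) - 2 * a 2 * a 10 + a 4 * (7 * a 8 - 2 * a 10)
             + a 7 * (- 3 * a 5 + 2 * a 8 - 7 * a 10) = 0"
proof -
  obtain a where a: "\<forall>i j. i < j \<and> j < 10 \<longrightarrow> F10 a i j = map (cc i j) [0..<10]"
    and k1: "a 1 * (2 * a 2 + 7 * a 4 + 7 * a 7) = 0"
    and k2: "3 * a 4 ^ 2 + 3 * a 4 * a 7 - 2 * a 2 * a 7 = 0"
    and k3: "a 1 * (2 * a 9 + 5 * a 11) - 2 * a 2 * a 10 + a 4 * (7 * a 8 - 2 * a 10)
             + a 7 * (- 3 * a 5 + 2 * a 8 - 7 * a 10) = 0"
    using scalar_part[of cc, OF cc_C0 cc_CA cc_Z cc_R cc_F cc_B89 cc_J] by blast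
  have brs: "br (X i) (X j) = (\<Sum>k<10. (F10 a i j ! k) *s (X k))" if ij: "i < j" "j < 10" for i j
  proof -
    have "br (X i) (X j) = (\<Sum>k<10. cc i j k *s X k)" unfolding cc_def by (rule expand[symmetric])
    also have "\<dots> = (\<Sum>k<10. (F10 a i j ! k) *s (X k))"
    proof (rule sum.cong)
      fix k assume "k \<in> {..<10::nat}"
      hence k: "k < 10" by simp
      have "F10 a i j = map (cc i j) [0..<10]" using a ij by blast
      hence "F10 a i j ! k = cc i j k" using k by simp
      thus "cc i j k *s X k = (F10 a i j ! k) *s (X k)" by simp
    qed simp
    finally show ?thesis .
  qed
  have brs': "\<forall>i j. i < j \<and> j < 10 \<longrightarrow> br (X i) (X j) = (\<Sum>k<10. (F10 a i j ! k) *s (X k))"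
    using brs by blast
  show ?thesis
    by (rule exI[of _ X], rule exI[of _ a], intro conjI) (fact X_inj X_indep X_span brs' k1 k2 k3)+
qed

end

theorem proposition28:
  fixes scale :: "'k::field_char_0 \<Rightarrow> 'v::ab_group_add \<Rightarrow> 'v"
    and br :: "'v \<Rightarrow> 'v \<Rightarrow> 'v"
  assumes "alg_closed TYPE('k)"
    and "lie_algebra scale br"
    and "vector_space.dim scale (UNIV :: 'v set) = 10"
    and "filiform scale br"
  shows "\<exists>(X :: nat \<Rightarrow> 'v) (a :: nat \<Rightarrow> 'k).
           inj_on X {..<10} \<and>
           \<not> module.dependent scale (X ` {..<10}) \<and>
           module.span scale (X ` {..<10}) = UNIV \<and>
           (\<forall>i j. i < j \<and> j < 10 \<longrightarrow>
              br (X i) (X j) = (\<Sum>k<10. scale (F10 a i j ! k) (X k))) \<and>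
           a 1 * (2 * a 2 + 7 * a 4 + 7 * a 7) = 0 \<and>
           3 * a 4 ^ 2 + 3 * a 4 * a 7 - 2 * a 2 * a 7 = 0 \<and>
           a 1 * (2 * a 9 + 5 * a 11) - 2 * a 2 * a 10 + a 4 * (7 * a 8 - 2 * a 10)
             + a 7 * (- 3 * a 5 + 2 * a 8 - 7 * a 10) = 0"
proof -
  interpret F: fil scale br
    by (rule fil.intro[OF assms(2) assms(3) assms(4)])
  obtain q X0 where h1: "F.span (insert q (insert X0 (F.L 1))) = UNIV"
    and h2: "\<And>k. 1 \<le> k \<Longrightarrow> k \<le> 7 \<Longrightarrow> X0 \<notin> F.K k"
    by (rule F.exists_X0) (rule that, assumption, assumption)
  interpret G: fil2 scale br X0 q
    by (rule fil2.intro[OF F.fil_axioms fil2_axioms.intro[OF h1 h2]])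
  show ?thesis by (rule G.main)
qed

end
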